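(* In the setting of the context, $A$ and $B$ are separable $k$-algebras.
   Context: $k$ is a field; $C_R(S)=\{r\in R:rs=sr\ \forall s\in S\}$. $N\subseteq M$ is a strongly separable, irreducible extension of $k$-algebras: $C_M(N)=k1$ and there are an $N$-bimodule map $E:M\to N$ and $x_1,\dots,x_n,y_1,\dots,y_n\in M$ with $\sum_iE(mx_i)y_i=m=\sum_ix_iE(y_im)$ for all $m\in M$, $E(1)\neq0$, $\sum_ix_iy_i\neq0$; normalized so that $E(1)=1$, whence $\sum_ix_iy_i=\lambda^{-1}1$ with $0\neq\lambda\in k$. Basic construction: given $S\subseteq R$, an $S$-bimodule map $E_S:R\to S$ with $E_S(1)=1$ and $r_i,s_i\in R$ with $\sum_iE_S(rr_i)s_i=r=\sum_ir_iE_S(s_ir)$ and $\sum_ir_is_i=\lambda^{-1}1$, set $R_1=R\otimes_SR$ with product $(a\otimes b)(c\otimes d)=aE_S(bc)\otimes d$, unit $\sum_ir_i\otimes s_i$, $R\subseteq R_1$ via $r\mapsto\sum_irr_i\otimes s_i$, $e=1\otimes1$, $E_R:R_1\to R$, $a\otimes b\mapsto\lambda ab$; then $E_R$, $\lambda^{-1}r_i\otimes1$, $1\otimes s_i$ satisfy the same conditions with the same $\lambda$. From $(N\subseteq M,E)$ get $M_1,e_1,E_M$; from $(M\subseteq M_1,E_M)$ get $M_2,e_2,E_{M_1}$. Let $A=C_{M_1}(N)$, $B=C_{M_2}(M)$. Depth 2 is assumed: $M_1$ is free as right $M$-module with basis in $A$, $M_2$ free as right $M_1$-module with basis in $B$.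 A $k$-algebra $D$ is separable if the multiplication $D\otimes_kD\to D$ has a right inverse as a $D$-$D$-bimodule map. *)

theory Defs
  imports "HOL-Algebra.Module" "HOL-Algebra.Subrings"
begin

definition k_algebra :: "'k ring \<Rightarrow> ('k,'a) module \<Rightarrow> bool" where
  "k_algebra K D \<longleftrightarrow> field K \<and> ring D \<and> module K D \<and>
     (\<forall>c\<in>carrier K. \<forall>x\<in>carrier D. \<forall>y\<in>carrier D.
        c \<odot>\<^bsub>D\<^esub> (x \<otimes>\<^bsub>D\<^esub> y) = (c \<odot>\<^bsub>D\<^esub> x) \<otimes>\<^bsub>D\<^esub> y \<and>
        c \<odot>\<^bsub>D\<^esub> (x \<otimes>\<^bsub>D\<^esub> y) = x \<otimes>\<^bsub>D\<^esub> (c \<odot>\<^bsub>D\<^esub> y))"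

definition k_subalgebra :: "'k ring \<Rightarrow> 'a set \<Rightarrow> ('k,'a) module \<Rightarrow> bool" where
  "k_subalgebra K S D \<longleftrightarrow> subring S D \<and>
     (\<forall>c\<in>carrier K. \<forall>x\<in>S. c \<odot>\<^bsub>D\<^esub> x \<in> S)"

definition scalars :: "'k ring \<Rightarrow> ('k,'a) module \<Rightarrow> 'a set" where
  "scalars K D = {c \<odot>\<^bsub>D\<^esub> \<one>\<^bsub>D\<^esub> | c. c \<in> carrier K}"

definition centralizer :: "('a,'m) ring_scheme \<Rightarrow> 'a set \<Rightarrow> 'a set" where
  "centralizer R S = {r \<in> carrier R. \<forall>s\<in>S. r \<otimes>\<^bsub>R\<^esub> s = s \<otimes>\<^bsub>R\<^esub> r}"

text \<open>Elements are classes of finite formal sums (lists) of pairs modulo the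
  congruence generated by biadditivity and S-balancedness.\<close>

inductive tens_eq :: "('a,'m) ring_scheme \<Rightarrow> 'a set \<Rightarrow> ('a \<times> 'a) list \<Rightarrow> ('a \<times> 'a) list \<Rightarrow> bool"
  for R S where
  refl: "set xs \<subseteq> carrier R \<times> carrier R \<Longrightarrow> tens_eq R S xs xs"
| sym: "tens_eq R S xs ys \<Longrightarrow> tens_eq R S ys xs"
| trans: "tens_eq R S xs ys \<Longrightarrow> tens_eq R S ys zs \<Longrightarrow> tens_eq R S xs zs"
| app: "tens_eq R S xs ys \<Longrightarrow> tens_eq R S us vs \<Longrightarrow> tens_eq R S (xs @ us) (ys @ vs)"
| swap: "\<lbrakk>a \<in> carrier R; b \<in> carrier R; c \<in> carrier R; d \<in> carrier R\<rbrakk> \<Longrightarrow>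
           tens_eq R S [(a,b),(c,d)] [(c,d),(a,b)]"
| addl: "\<lbrakk>a \<in> carrier R; a' \<in> carrier R; b \<in> carrier R\<rbrakk> \<Longrightarrow>
           tens_eq R S [(a \<oplus>\<^bsub>R\<^esub> a', b)] [(a,b),(a',b)]"
| addr: "\<lbrakk>a \<in> carrier R; b \<in> carrier R; b' \<in> carrier R\<rbrakk> \<Longrightarrow>
           tens_eq R S [(a, b \<oplus>\<^bsub>R\<^esub> b')] [(a,b),(a,b')]"
| zerol: "b \<in> carrier R \<Longrightarrow> tens_eq R S [(\<zero>\<^bsub>R\<^esub>, b)] []"
| zeror: "a \<in> carrier R \<Longrightarrow> tens_eq R S [(a, \<zero>\<^bsub>R\<^esub>)] []"
| bal: "\<lbrakk>a \<in> carrier R; b \<in> carrier R; s \<in> S\<rbrakk> \<Longrightarrow>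
           tens_eq R S [(a \<otimes>\<^bsub>R\<^esub> s, b)] [(a, s \<otimes>\<^bsub>R\<^esub> b)]"

definition tcls :: "('a,'m) ring_scheme \<Rightarrow> 'a set \<Rightarrow> ('a \<times> 'a) list \<Rightarrow> ('a \<times> 'a) list set" where
  "tcls R S xs = {ys. tens_eq R S xs ys}"

definition tens_carrier :: "('a,'m) ring_scheme \<Rightarrow> 'a set \<Rightarrow> ('a \<times> 'a) list set set" where
  "tens_carrier R S = tcls R S ` {xs. set xs \<subseteq> carrier R \<times> carrier R}"

definition trep :: "('a \<times> 'a) list set \<Rightarrow> ('a \<times> 'a) list" where
  "trep X = (SOME xs. xs \<in> X)"

definition tadd :: "('a,'m) ring_scheme \<Rightarrow> 'a set \<Rightarrow> ('a \<times> 'a) list set \<Rightarrow> ('a \<times> 'a) list set \<Rightarrow> ('a \<times> 'a) list set" where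
  "tadd R S X Y = tcls R S (trep X @ trep Y)"

definition tlact :: "('a,'m) ring_scheme \<Rightarrow> 'a set \<Rightarrow> 'a \<Rightarrow> ('a \<times> 'a) list set \<Rightarrow> ('a \<times> 'a) list set" where
  "tlact R S d X = tcls R S (map (\<lambda>(a,b). (d \<otimes>\<^bsub>R\<^esub> a, b)) (trep X))"

definition tract :: "('a,'m) ring_scheme \<Rightarrow> 'a set \<Rightarrow> ('a \<times> 'a) list set \<Rightarrow> 'a \<Rightarrow> ('a \<times> 'a) list set" where
  "tract R S X d = tcls R S (map (\<lambda>(a,b). (a, b \<otimes>\<^bsub>R\<^esub> d)) (trep X))"

definition lmultsum :: "('a,'m) ring_scheme \<Rightarrow> ('a \<times> 'a) list \<Rightarrow> 'a" where
  "lmultsum R xs = foldr (\<lambda>(a,b) acc. (a \<otimes>\<^bsub>R\<^esub> b) \<oplus>\<^bsub>R\<^esub> acc) xs \<zero>\<^bsub>R\<^esub>"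

definition tmultmap :: "('a,'m) ring_scheme \<Rightarrow> ('a \<times> 'a) list set \<Rightarrow> 'a" where
  "tmultmap R X = lmultsum R (trep X)"

definition separable_algebra :: "'k ring \<Rightarrow> ('k,'a) module \<Rightarrow> bool" where
  "separable_algebra K D \<longleftrightarrow> k_algebra K D \<and>
     (\<exists>\<sigma>. (\<forall>d\<in>carrier D. \<sigma> d \<in> tens_carrier D (scalars K D)) \<and>
          (\<forall>d\<in>carrier D. tmultmap D (\<sigma> d) = d) \<and>
          (\<forall>d\<in>carrier D. \<forall>x\<in>carrier D.
              \<sigma> (d \<oplus>\<^bsub>D\<^esub> x) = tadd D (scalars K D) (\<sigma> d) (\<sigma> x) \<and>
              \<sigma> (d \<otimes>\<^bsub>D\<^esub> x) = tlact D (scalars K D) d (\<sigma> x) \<and>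
              \<sigma> (x \<otimes>\<^bsub>D\<^esub> d) = tract D (scalars K D) (\<sigma> x) d))"

definition bimodule_map :: "('k,'a) module \<Rightarrow> 'a set \<Rightarrow> ('a \<Rightarrow> 'a) \<Rightarrow> bool" where
  "bimodule_map D S E \<longleftrightarrow> (\<forall>m\<in>carrier D. E m \<in> S) \<and>
     (\<forall>m\<in>carrier D. \<forall>m'\<in>carrier D. E (m \<oplus>\<^bsub>D\<^esub> m') = E m \<oplus>\<^bsub>D\<^esub> E m') \<and>
     (\<forall>s\<in>S. \<forall>m\<in>carrier D. E (s \<otimes>\<^bsub>D\<^esub> m) = s \<otimes>\<^bsub>D\<^esub> E m \<and> E (m \<otimes>\<^bsub>D\<^esub> s) = E m \<otimes>\<^bsub>D\<^esub> s)"

definition quasi_basis :: "('k,'a) module \<Rightarrow> ('a \<Rightarrow> 'a) \<Rightarrow> (nat \<Rightarrow> 'a) \<Rightarrow> (nat \<Rightarrow> 'a) \<Rightarrow> nat \<Rightarrow> bool" where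
  "quasi_basis D E x y n \<longleftrightarrow> (\<forall>i<n. x i \<in> carrier D \<and> y i \<in> carrier D) \<and>
     (\<forall>m\<in>carrier D.
        (\<Oplus>\<^bsub>D\<^esub>i\<in>{..<n}. E (m \<otimes>\<^bsub>D\<^esub> x i) \<otimes>\<^bsub>D\<^esub> y i) = m \<and>
        (\<Oplus>\<^bsub>D\<^esub>i\<in>{..<n}. x i \<otimes>\<^bsub>D\<^esub> E (y i \<otimes>\<^bsub>D\<^esub> m)) = m)"

definition bc_mult_list :: "('k,'a) module \<Rightarrow> ('a \<Rightarrow> 'a) \<Rightarrow> ('a \<times> 'a) list \<Rightarrow> ('a \<times> 'a) list \<Rightarrow> ('a \<times> 'a) list" where
  "bc_mult_list R ES xs ys =
     concat (map (\<lambda>(a,b). map (\<lambda>(c,d). (a \<otimes>\<^bsub>R\<^esub> ES (b \<otimes>\<^bsub>R\<^esub> c), d)) ys) xs)"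

definition bc :: "('k,'a) module \<Rightarrow> 'a set \<Rightarrow> ('a \<Rightarrow> 'a) \<Rightarrow> (nat \<Rightarrow> 'a) \<Rightarrow> (nat \<Rightarrow> 'a) \<Rightarrow> nat
                  \<Rightarrow> ('k, ('a \<times> 'a) list set) module" where
  "bc R S ES r s n =
     \<lparr> carrier = tens_carrier R S,
       mult = (\<lambda>X Y. tcls R S (bc_mult_list R ES (trep X) (trep Y))),
       one = tcls R S (map (\<lambda>i. (r i, s i)) [0..<n]),
       zero = tcls R S [],
       add = (\<lambda>X Y. tadd R S X Y),
       smult = (\<lambda>c X. tcls R S (map (\<lambda>(a,b). (c \<odot>\<^bsub>R\<^esub> a, b)) (trep X))) \<rparr>"

definition bc_incl :: "('k,'a) module \<Rightarrow> 'a set \<Rightarrow> (nat \<Rightarrow> 'a) \<Rightarrow> (nat \<Rightarrow> 'a) \<Rightarrow> nat \<Rightarrow> 'a \<Rightarrow> ('a \<times> 'a) list set" where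
  "bc_incl R S r s n a = tcls R S (map (\<lambda>i. (a \<otimes>\<^bsub>R\<^esub> r i, s i)) [0..<n])"

definition bc_E :: "('k,'a) module \<Rightarrow> 'k \<Rightarrow> ('a \<times> 'a) list set \<Rightarrow> 'a" where
  "bc_E R lam X = lam \<odot>\<^bsub>R\<^esub> lmultsum R (trep X)"

text \<open>new quasi-basis \<lambda>^{-1} r_i \<otimes> 1 and 1 \<otimes> s_i\<close>
definition bc_x :: "'k ring \<Rightarrow> ('k,'a) module \<Rightarrow> 'a set \<Rightarrow> (nat \<Rightarrow> 'a) \<Rightarrow> 'k \<Rightarrow> nat \<Rightarrow> ('a \<times> 'a) list set" where
  "bc_x K R S r lam i = tcls R S [((inv\<^bsub>K\<^esub> lam) \<odot>\<^bsub>R\<^esub> r i, \<one>\<^bsub>R\<^esub>)]"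

definition bc_y :: "('k,'a) module \<Rightarrow> 'a set \<Rightarrow> (nat \<Rightarrow> 'a) \<Rightarrow> nat \<Rightarrow> ('a \<times> 'a) list set" where
  "bc_y R S s i = tcls R S [(\<one>\<^bsub>R\<^esub>, s i)]"

definition free_right_with_basis_in :: "('k,'a) module \<Rightarrow> 'a set \<Rightarrow> 'a set \<Rightarrow> bool" where
  "free_right_with_basis_in D Sub C \<longleftrightarrow>
     (\<exists>Bs. Bs \<subseteq> C \<and>
        (\<forall>X\<in>carrier D. \<exists>!f. f \<in> Bs \<rightarrow>\<^sub>E Sub \<and> finite {b\<in>Bs. f b \<noteq> \<zero>\<^bsub>D\<^esub>} \<and>
            X = (\<Oplus>\<^bsub>D\<^esub>b\<in>{b\<in>Bs. f b \<noteq> \<zero>\<^bsub>D\<^esub>}. b \<otimes>\<^bsub>D\<^esub> f b)))"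

end

theory Submission
  imports Defs
begin

lemma count_dconcat: "count_list (concat (map (\<lambda>x. map (g x) ys) xs)) z = count_list (concat (map (\<lambda>y. map (\<lambda>x. g x y) xs) ys)) z"
proof (induction xs)
  case Nil then show ?case by (induction ys) auto
next
  case (Cons x xs)
  have "count_list (concat (map (\<lambda>y. map (\<lambda>x'. g x' y) (x # xs)) ys)) z =
        count_list (map (g x) ys) z + count_list (concat (map (\<lambda>y. map (\<lambda>x. g x y) xs) ys)) z"
    by (induction ys) auto
  then show ?case using Cons by simp
qed

locale tns = ring R for R (structure) +
  fixes S assumes S_sub: "S \<subseteq> carrier R"
begin

definition carr :: "('a \<times> 'a) list \<Rightarrow> bool" where
  "carr xs \<longleftrightarrow> set xs \<subseteq> carrier R \<times> carrier R"

lemma carr_simps[simp]: "carr [] " "carr (p # xs) \<longleftrightarrow> fst p \<in> carrier R \<and> snd p \<in> carrier R \<and> carr xs"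
  "carr (xs @ ys) \<longleftrightarrow> carr xs \<and> carr ys"
  by (auto simp: carr_def mem_Times_iff)

lemma carr_concat[simp]: "carr (concat xss) \<longleftrightarrow> (\<forall>xs\<in>set xss. carr xs)"
  by (auto simp: carr_def)

lemma carr_map[simp]: "carr (map f xs) \<longleftrightarrow> (\<forall>x\<in>set xs. fst (f x) \<in> carrier R \<and> snd (f x) \<in> carrier R)"
  by (simp add: carr_def image_subset_iff mem_Times_iff)

abbreviation TE where "TE \<equiv> tens_eq R S"

lemma TE_carr: "TE xs ys \<Longrightarrow> carr xs \<and> carr ys"
  by (induction rule: tens_eq.induct) (use S_sub in \<open>auto simp: carr_def\<close>)

lemma TE_refl: "carr xs \<Longrightarrow> TE xs xs"
  by (rule tens_eq.refl) (simp add: carr_def)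

lemma TE_sym: "TE xs ys \<Longrightarrow> TE ys xs" by (rule tens_eq.sym)
lemma TE_trans: "TE xs ys \<Longrightarrow> TE ys zs \<Longrightarrow> TE xs zs" by (rule tens_eq.trans)
lemma TE_app: "TE xs ys \<Longrightarrow> TE us vs \<Longrightarrow> TE (xs @ us) (ys @ vs)" by (rule tens_eq.app)

lemma TE_cons: "TE [p] [q] \<Longrightarrow> TE xs ys \<Longrightarrow> TE (p # xs) (q # ys)"
  using TE_app[of "[p]" "[q]" xs ys] by simp

lemma TE_move: "carr [x] \<Longrightarrow> carr ys \<Longrightarrow> TE ([x] @ ys) (ys @ [x])"
proof (induction ys)
  case Nil then show ?case by (simp add: TE_refl)
next
  case (Cons y ys)
  have sw: "TE [x, y] [y, x]"
    using tens_eq.swap[of "fst x" R "snd x" "fst y" "snd y" S] Cons.prems by simp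
  have cy: "carr ys" using Cons.prems by simp
  have 1: "TE ([x, y] @ ys) ([y, x] @ ys)" by (rule TE_app[OF sw TE_refl[OF cy]])
  have 2: "TE ([y, x] @ ys) ([y] @ (ys @ [x]))"
    using TE_app[OF TE_refl[of "[y]"] Cons.IH] Cons.prems by simp
  show ?case using TE_trans[OF 1 2] by simp
qed

lemma count_pos_in: "count_list xs x > 0 \<Longrightarrow> x \<in> set xs"
  by (induction xs) (auto split: if_splits)

lemma count_in_pos: "x \<in> set xs \<Longrightarrow> count_list xs x > 0"
  by (induction xs) auto

lemma TE_perm: "carr xs \<Longrightarrow> (\<And>z. count_list xs z = count_list ys z) \<Longrightarrow> TE xs ys"
proof (induction xs arbitrary: ys)
  case Nil
  have "ys = []"
  proof (rule ccontr)
    assume "ys \<noteq> []" then obtain y where "y \<in> set ys" by (cases ys) auto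
    then have "count_list ys y > 0" by (rule count_in_pos)
    then show False using Nil.prems(2)[of y] by simp
  qed
  then show ?case by (simp add: TE_refl)
next
  case (Cons x xs)
  have "count_list ys x > 0" using Cons.prems(2)[of x] by simp
  then have "x \<in> set ys" by (rule count_pos_in)
  then obtain ys1 ys2 where ys: "ys = ys1 @ x # ys2" by (meson split_list)
  have m: "\<And>z. count_list xs z = count_list (ys1 @ ys2) z"
  proof -
    fix z show "count_list xs z = count_list (ys1 @ ys2) z"
      using Cons.prems(2)[of z] unfolding ys by (simp split: if_splits)
  qed
  have c: "carr ys"
  proof -
    have "set ys \<subseteq> set (x # xs)"
    proof
      fix z assume "z \<in> set ys"
      then have "count_list ys z > 0" by (rule count_in_pos)
      then have "count_list (x # xs) z > 0" using Cons.prems(2)[of z] by linarith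
      then show "z \<in> set (x # xs)" by (rule count_pos_in)
    qed
    then show ?thesis using Cons.prems(1) by (auto simp: carr_def)
  qed
  have cx: "carr [x]" "carr xs" using Cons.prems(1) by auto
  have 1: "TE xs (ys1 @ ys2)" by (rule Cons.IH[OF cx(2) m])
  have 2: "TE ([x] @ xs) ([x] @ ys1 @ ys2)" by (rule TE_app[OF TE_refl[OF cx(1)] 1])
  have c2: "carr ys1" "carr ys2" using c unfolding ys by auto
  have 3: "TE ([x] @ ys1 @ ys2) (ys1 @ [x] @ ys2)"
    using TE_app[OF TE_move[OF cx(1) c2(1)] TE_refl[OF c2(2)]] by simp
  have "TE ([x] @ xs) (ys1 @ [x] @ ys2)" by (rule TE_trans[OF 2 3])
  then show ?case unfolding ys by simp
qed

lemma TE_concat_pw: "(\<And>p. p \<in> set xs \<Longrightarrow> TE (F p) (G p)) \<Longrightarrow> TE (concat (map F xs)) (concat (map G xs))"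
proof (induction xs)
  case Nil then show ?case by (simp add: TE_refl)
next
  case (Cons a xs)
  have "TE (F a @ concat (map F xs)) (G a @ concat (map G xs))"
    by (rule TE_app) (use Cons in auto)
  then show ?case by simp
qed

lemma TE_map_pw: "(\<And>p. p \<in> set xs \<Longrightarrow> TE [f p] [g p]) \<Longrightarrow> TE (map f xs) (map g xs)"
  using TE_concat_pw[of xs "\<lambda>p. [f p]" "\<lambda>p. [g p]"] by simp

lemma TE_pw_split: assumes "\<And>p. p \<in> set xs \<Longrightarrow> TE [f p] [g p, h p]"
  shows "TE (map f xs) (map g xs @ map h xs)"
proof -
  have 1: "TE (map f xs) (concat (map (\<lambda>p. [g p, h p]) xs))"
    using TE_concat_pw[of xs "\<lambda>p. [f p]" "\<lambda>p. [g p, h p]"] assms by simp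
  have "carr (concat (map (\<lambda>p. [g p, h p]) xs))" using 1 TE_carr by blast
  moreover have "\<And>z. count_list (concat (map (\<lambda>p. [g p, h p]) xs)) z = count_list (map g xs @ map h xs) z"
    by (induction xs) auto
  ultimately have "TE (concat (map (\<lambda>p. [g p, h p]) xs)) (map g xs @ map h xs)"
    by (rule TE_perm)
  then show ?thesis by (rule TE_trans[OF 1])
qed

lemma TE_pw_zero: assumes "\<And>p. p \<in> set xs \<Longrightarrow> TE [f p] []"
  shows "TE (map f xs) []"
  using TE_concat_pw[of xs "\<lambda>p. [f p]" "\<lambda>p. []"] assms by (simp add: map_replicate_const)

lemma TE_dconcat: "carr (concat (map (\<lambda>x. map (g x) ys) xs)) \<Longrightarrow>
   TE (concat (map (\<lambda>x. map (g x) ys) xs)) (concat (map (\<lambda>y. map (\<lambda>x. g x y) xs) ys))"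
  by (erule TE_perm) (rule count_dconcat)

lemma TE_concat_map:
  assumes TE0: "TE xs ys"
    and cF: "\<And>a b. a \<in> carrier R \<Longrightarrow> b \<in> carrier R \<Longrightarrow> carr (F (a, b))"
    and hal: "\<And>a a' b. a \<in> carrier R \<Longrightarrow> a' \<in> carrier R \<Longrightarrow> b \<in> carrier R \<Longrightarrow> TE (F (a \<oplus> a', b)) (F (a, b) @ F (a', b))"
    and har: "\<And>a b b'. a \<in> carrier R \<Longrightarrow> b \<in> carrier R \<Longrightarrow> b' \<in> carrier R \<Longrightarrow> TE (F (a, b \<oplus> b')) (F (a, b) @ F (a, b'))"
    and hzl: "\<And>b. b \<in> carrier R \<Longrightarrow> TE (F (\<zero>, b)) []"
    and hzr: "\<And>a. a \<in> carrier R \<Longrightarrow> TE (F (a, \<zero>)) []"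
    and hbal: "\<And>a b s. a \<in> carrier R \<Longrightarrow> b \<in> carrier R \<Longrightarrow> s \<in> S \<Longrightarrow> TE (F (a \<otimes> s, b)) (F (a, s \<otimes> b))"
  shows "TE (concat (map F xs)) (concat (map F ys))"
  using TE0
proof (induction rule: tens_eq.induct)
  case (refl xs)
  have "\<forall>p\<in>set xs. carr (F p)"
  proof
    fix p assume "p \<in> set xs"
    then have "fst p \<in> carrier R" "snd p \<in> carrier R" using refl.hyps by auto
    then have "carr (F (fst p, snd p))" by (rule cF)
    then show "carr (F p)" by simp
  qed
  then show ?case by (intro TE_refl) simp
next
  case (sym xs ys) then show ?case using TE_sym by blast
next
  case (trans xs ys zs) then show ?case using TE_trans by blast
next
  case (app xs ys us vs) then show ?case using TE_app[OF app.IH] by simp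
next
  case (swap a b c d)
  have "TE (F (a, b) @ F (c, d)) (F (c, d) @ F (a, b))"
  proof (rule TE_perm)
    show "carr (F (a, b) @ F (c, d))" using swap cF by simp
    show "\<And>z. count_list (F (a, b) @ F (c, d)) z = count_list (F (c, d) @ F (a, b)) z" by simp
  qed
  then show ?case by simp
next
  case (addl a a' b) then show ?case using hal[of a a' b] by simp
next
  case (addr a b b') then show ?case using har[of a b b'] by simp
next
  case (zerol b) then show ?case using hzl[of b] by simp
next
  case (zeror a) then show ?case using hzr[of a] by simp
next
  case (bal a b s) then show ?case using hbal[of a b s] by simp
qed

end

context tns begin

lemma foldr_sum_closed: "(\<And>p. p \<in> set l \<Longrightarrow> f p \<in> carrier R) \<Longrightarrow> foldr (\<lambda>p acc. f p \<oplus> acc) l \<zero> \<in> carrier R"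
  by (induction l) auto

lemma finsum_foldr: "distinct l \<Longrightarrow> (\<And>p. p \<in> set l \<Longrightarrow> f p \<in> carrier R) \<Longrightarrow>
   finsum R f (set l) = foldr (\<lambda>p acc. f p \<oplus> acc) l \<zero>"
proof (induction l)
  case Nil then show ?case by simp
next
  case (Cons a l)
  then show ?case by (simp add: finsum_insert Pi_def)
qed

lemma TE_foldr_left: "(\<And>p. p \<in> set l \<Longrightarrow> f p \<in> carrier R) \<Longrightarrow> d \<in> carrier R \<Longrightarrow>
   TE [(foldr (\<lambda>p acc. f p \<oplus> acc) l \<zero>, d)] (map (\<lambda>p. (f p, d)) l)"
proof (induction l)
  case Nil then show ?case by (simp add: tens_eq.zerol)
next
  case (Cons a l)
  have c: "foldr (\<lambda>p acc. f p \<oplus> acc) l \<zero> \<in> carrier R" using Cons.prems by (intro foldr_sum_closed) auto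
  have 1: "TE [(f a \<oplus> foldr (\<lambda>p acc. f p \<oplus> acc) l \<zero>, d)] [(f a, d), (foldr (\<lambda>p acc. f p \<oplus> acc) l \<zero>, d)]"
    by (rule tens_eq.addl) (use Cons.prems c in auto)
  have 2: "TE ([(f a, d)] @ [(foldr (\<lambda>p acc. f p \<oplus> acc) l \<zero>, d)]) ([(f a, d)] @ map (\<lambda>p. (f p, d)) l)"
    by (rule TE_app[OF TE_refl Cons.IH]) (use Cons.prems in auto)
  show ?case using TE_trans[OF 1] 2 by simp
qed

lemma TE_foldr_right: "(\<And>p. p \<in> set l \<Longrightarrow> f p \<in> carrier R) \<Longrightarrow> d \<in> carrier R \<Longrightarrow>
   TE [(d, foldr (\<lambda>p acc. f p \<oplus> acc) l \<zero>)] (map (\<lambda>p. (d, f p)) l)"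
proof (induction l)
  case Nil then show ?case by (simp add: tens_eq.zeror)
next
  case (Cons a l)
  have c: "foldr (\<lambda>p acc. f p \<oplus> acc) l \<zero> \<in> carrier R" using Cons.prems by (intro foldr_sum_closed) auto
  have 1: "TE [(d, f a \<oplus> foldr (\<lambda>p acc. f p \<oplus> acc) l \<zero>)] [(d, f a), (d, foldr (\<lambda>p acc. f p \<oplus> acc) l \<zero>)]"
    by (rule tens_eq.addr) (use Cons.prems c in auto)
  have 2: "TE ([(d, f a)] @ [(d, foldr (\<lambda>p acc. f p \<oplus> acc) l \<zero>)]) ([(d, f a)] @ map (\<lambda>p. (d, f p)) l)"
    by (rule TE_app[OF TE_refl Cons.IH]) (use Cons.prems in auto)
  show ?case using TE_trans[OF 1] 2 by simp
qed

lemma TE_sum_left: "distinct l \<Longrightarrow> (\<And>p. p \<in> set l \<Longrightarrow> f p \<in> carrier R) \<Longrightarrow> d \<in> carrier R \<Longrightarrow>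
   TE [(finsum R f (set l), d)] (map (\<lambda>p. (f p, d)) l)"
proof -
  assume h: "distinct l" "\<And>p. p \<in> set l \<Longrightarrow> f p \<in> carrier R" "d \<in> carrier R"
  show ?thesis using TE_foldr_left[OF h(2,3)] finsum_foldr[OF h(1,2)] by simp
qed

lemma TE_sum_right: "distinct l \<Longrightarrow> (\<And>p. p \<in> set l \<Longrightarrow> f p \<in> carrier R) \<Longrightarrow> d \<in> carrier R \<Longrightarrow>
   TE [(d, finsum R f (set l))] (map (\<lambda>p. (d, f p)) l)"
proof -
  assume h: "distinct l" "\<And>p. p \<in> set l \<Longrightarrow> f p \<in> carrier R" "d \<in> carrier R"
  show ?thesis using TE_foldr_right[OF h(2,3)] finsum_foldr[OF h(1,2)] by simp
qed

lemma TE_sum_left_n: "(\<And>i. i < n \<Longrightarrow> f i \<in> carrier R) \<Longrightarrow> d \<in> carrier R \<Longrightarrow>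
   TE [(finsum R f {..<n}, d)] (map (\<lambda>i. (f i, d)) [0..<n])"
  using TE_sum_left[of "[0..<n]" f d] by (simp add: atLeast0LessThan)

lemma TE_sum_right_n: "(\<And>i. i < n \<Longrightarrow> f i \<in> carrier R) \<Longrightarrow> d \<in> carrier R \<Longrightarrow>
   TE [(d, finsum R f {..<n})] (map (\<lambda>i. (d, f i)) [0..<n])"
  using TE_sum_right[of "[0..<n]" f d] by (simp add: atLeast0LessThan)

lemma lms_Nil[simp]: "lmultsum R [] = \<zero>" by (simp add: lmultsum_def)
lemma lms_Cons[simp]: "lmultsum R ((a, b) # xs) = a \<otimes> b \<oplus> lmultsum R xs" by (simp add: lmultsum_def)

lemma lms_closed: "carr xs \<Longrightarrow> lmultsum R xs \<in> carrier R"
  by (induction xs) auto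

lemma lms_append: "carr xs \<Longrightarrow> carr ys \<Longrightarrow> lmultsum R (xs @ ys) = lmultsum R xs \<oplus> lmultsum R ys"
proof (induction xs)
  case Nil then show ?case by (simp add: lms_closed)
next
  case (Cons p xs)
  then show ?case by (cases p) (simp add: lms_closed a_assoc)
qed

lemma lms_TE: "TE xs ys \<Longrightarrow> lmultsum R xs = lmultsum R ys"
proof (induction rule: tens_eq.induct)
  case (app xs ys us vs)
  then show ?case using TE_carr lms_append by metis
next
  case (swap a b c d)
  then show ?case using a_comm[of "a \<otimes> b" "c \<otimes> d"] by simp
next
  case (addl a a' b)
  then show ?case by (simp add: l_distr a_assoc)
next
  case (addr a b b')
  then show ?case by (simp add: r_distr a_assoc)
next
  case (bal a b s)
  then show ?case using S_sub by (auto simp: m_assoc)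
qed auto

lemma lms_map: "(\<And>p. p \<in> set l \<Longrightarrow> f p \<in> carrier R \<and> g p \<in> carrier R) \<Longrightarrow>
  lmultsum R (map (\<lambda>p. (f p, g p)) l) = foldr (\<lambda>p acc. f p \<otimes> g p \<oplus> acc) l \<zero>"
  by (induction l) auto

lemma lms_map_finsum: "distinct l \<Longrightarrow> (\<And>p. p \<in> set l \<Longrightarrow> f p \<in> carrier R \<and> g p \<in> carrier R) \<Longrightarrow>
  lmultsum R (map (\<lambda>p. (f p, g p)) l) = finsum R (\<lambda>p. f p \<otimes> g p) (set l)"
proof -
  assume d: "distinct l" and h: "\<And>p. p \<in> set l \<Longrightarrow> f p \<in> carrier R \<and> g p \<in> carrier R"
  have "lmultsum R (map (\<lambda>p. (f p, g p)) l) = foldr (\<lambda>p acc. f p \<otimes> g p \<oplus> acc) l \<zero>"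
    by (rule lms_map) (use h in blast)
  also have "\<dots> = finsum R (\<lambda>p. f p \<otimes> g p) (set l)"
    by (rule finsum_foldr[symmetric]) (use d h in auto)
  finally show ?thesis .
qed

lemma lms_lmult: "carr xs \<Longrightarrow> d \<in> carrier R \<Longrightarrow> lmultsum R (map (\<lambda>(a, b). (d \<otimes> a, b)) xs) = d \<otimes> lmultsum R xs"
proof (induction xs)
  case Nil then show ?case by simp
next
  case (Cons p xs) then show ?case by (cases p) (simp add: lms_closed r_distr m_assoc)
qed

lemma lms_rmult: "carr xs \<Longrightarrow> d \<in> carrier R \<Longrightarrow> lmultsum R (map (\<lambda>(a, b). (a, b \<otimes> d)) xs) = lmultsum R xs \<otimes> d"
proof (induction xs)
  case Nil then show ?case by simp
next
  case (Cons p xs) then show ?case by (cases p) (simp add: lms_closed l_distr m_assoc)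
qed

abbreviation cls where "cls \<equiv> tcls R S"

lemma cls_eq: "TE xs ys \<Longrightarrow> cls xs = cls ys"
  unfolding tcls_def using TE_sym TE_trans by blast

lemma cls_eq_iff: "carr xs \<Longrightarrow> cls xs = cls ys \<longleftrightarrow> TE xs ys"
proof
  assume c: "carr xs" and e: "cls xs = cls ys"
  have "xs \<in> cls xs" using TE_refl[OF c] by (simp add: tcls_def)
  then have "xs \<in> cls ys" using e by simp
  then have "TE ys xs" by (simp add: tcls_def)
  then show "TE xs ys" by (rule TE_sym)
qed (rule cls_eq)

lemma trep_TE: "carr xs \<Longrightarrow> TE xs (trep (cls xs))"
proof -
  assume c: "carr xs"
  have "xs \<in> cls xs" using TE_refl[OF c] by (simp add: tcls_def)
  then have "trep (cls xs) \<in> cls xs" unfolding trep_def by (rule someI)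
  then show ?thesis by (simp add: tcls_def)
qed

lemma cls_trep: "carr xs \<Longrightarrow> cls (trep (cls xs)) = cls xs"
  using cls_eq[OF trep_TE] by simp

lemma carr_trep: "carr xs \<Longrightarrow> carr (trep (cls xs))"
  using trep_TE TE_carr by blast

lemma tens_carrier_iff: "X \<in> tens_carrier R S \<longleftrightarrow> (\<exists>xs. carr xs \<and> X = cls xs)"
  by (auto simp: tens_carrier_def carr_def)

lemma cls_in: "carr xs \<Longrightarrow> cls xs \<in> tens_carrier R S"
  using tens_carrier_iff by blast

lemma tadd_cls: "carr xs \<Longrightarrow> carr ys \<Longrightarrow> tadd R S (cls xs) (cls ys) = cls (xs @ ys)"
  unfolding tadd_def by (rule cls_eq[OF TE_app[OF TE_sym[OF trep_TE] TE_sym[OF trep_TE]]])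

lemma tmultmap_cls: "carr xs \<Longrightarrow> tmultmap R (cls xs) = lmultsum R xs"
  unfolding tmultmap_def by (rule lms_TE[OF trep_TE, symmetric])

lemma map_as_concat: "map f xs = concat (map (\<lambda>p. [f p]) xs)" by (induction xs) auto

lemma TE_map_gen:
  assumes TE0: "TE xs ys"
    and cf: "\<And>a b. a \<in> carrier R \<Longrightarrow> b \<in> carrier R \<Longrightarrow> fst (f (a, b)) \<in> carrier R \<and> snd (f (a, b)) \<in> carrier R"
    and hal: "\<And>a a' b. a \<in> carrier R \<Longrightarrow> a' \<in> carrier R \<Longrightarrow> b \<in> carrier R \<Longrightarrow> TE [f (a \<oplus> a', b)] [f (a, b), f (a', b)]"
    and har: "\<And>a b b'. a \<in> carrier R \<Longrightarrow> b \<in> carrier R \<Longrightarrow> b' \<in> carrier R \<Longrightarrow> TE [f (a, b \<oplus> b')] [f (a, b), f (a, b')]"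
    and hzl: "\<And>b. b \<in> carrier R \<Longrightarrow> TE [f (\<zero>, b)] []"
    and hzr: "\<And>a. a \<in> carrier R \<Longrightarrow> TE [f (a, \<zero>)] []"
    and hbal: "\<And>a b s. a \<in> carrier R \<Longrightarrow> b \<in> carrier R \<Longrightarrow> s \<in> S \<Longrightarrow> TE [f (a \<otimes> s, b)] [f (a, s \<otimes> b)]"
  shows "TE (map f xs) (map f ys)"
proof -
  have "TE (concat (map (\<lambda>p. [f p]) xs)) (concat (map (\<lambda>p. [f p]) ys))"
    by (rule TE_concat_map[where F="\<lambda>p. [f p]", OF TE0]) (use cf hal har hzl hzr hbal in simp_all)
  then show ?thesis by (simp flip: map_as_concat)
qed

lemma TE_lmult: assumes "TE xs ys" "d \<in> carrier R"
  shows "TE (map (\<lambda>(a, b). (d \<otimes> a, b)) xs) (map (\<lambda>(a, b). (d \<otimes> a, b)) ys)"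
proof (rule TE_map_gen[OF assms(1)])
  fix a a' b assume h: "a \<in> carrier R" "a' \<in> carrier R" "b \<in> carrier R"
  show "TE [case (a \<oplus> a', b) of (a, b) \<Rightarrow> (d \<otimes> a, b)] [case (a, b) of (a, b) \<Rightarrow> (d \<otimes> a, b), case (a', b) of (a, b) \<Rightarrow> (d \<otimes> a, b)]"
    using tens_eq.addl[of "d \<otimes> a" R "d \<otimes> a'" b S] h assms(2) by (simp add: r_distr)
next
  fix a b b' assume h: "a \<in> carrier R" "b \<in> carrier R" "b' \<in> carrier R"
  show "TE [case (a, b \<oplus> b') of (a, b) \<Rightarrow> (d \<otimes> a, b)] [case (a, b) of (a, b) \<Rightarrow> (d \<otimes> a, b), case (a, b') of (a, b) \<Rightarrow> (d \<otimes> a, b)]"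
    using tens_eq.addr[of "d \<otimes> a" R b b' S] h assms(2) by simp
next
  fix b assume "b \<in> carrier R" then show "TE [case (\<zero>, b) of (a, b) \<Rightarrow> (d \<otimes> a, b)] []"
    using tens_eq.zerol[of b R S] assms(2) by simp
next
  fix a assume "a \<in> carrier R" then show "TE [case (a, \<zero>) of (a, b) \<Rightarrow> (d \<otimes> a, b)] []"
    using tens_eq.zeror[of "d \<otimes> a" R S] assms(2) by simp
next
  fix a b s assume h: "a \<in> carrier R" "b \<in> carrier R" "s \<in> S"
  then show "TE [case (a \<otimes> s, b) of (a, b) \<Rightarrow> (d \<otimes> a, b)] [case (a, s \<otimes> b) of (a, b) \<Rightarrow> (d \<otimes> a, b)]"
    using tens_eq.bal[of "d \<otimes> a" R b s S] assms(2) S_sub by (auto simp: m_assoc)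
qed (use assms(2) in auto)

lemma TE_rmult: assumes "TE xs ys" "d \<in> carrier R"
  shows "TE (map (\<lambda>(a, b). (a, b \<otimes> d)) xs) (map (\<lambda>(a, b). (a, b \<otimes> d)) ys)"
proof (rule TE_map_gen[OF assms(1)])
  fix a a' b assume h: "a \<in> carrier R" "a' \<in> carrier R" "b \<in> carrier R"
  show "TE [case (a \<oplus> a', b) of (a, b) \<Rightarrow> (a, b \<otimes> d)] [case (a, b) of (a, b) \<Rightarrow> (a, b \<otimes> d), case (a', b) of (a, b) \<Rightarrow> (a, b \<otimes> d)]"
    using tens_eq.addl[of a R a' "b \<otimes> d" S] h assms(2) by simp
next
  fix a b b' assume h: "a \<in> carrier R" "b \<in> carrier R" "b' \<in> carrier R"
  show "TE [case (a, b \<oplus> b') of (a, b) \<Rightarrow> (a, b \<otimes> d)] [case (a, b) of (a, b) \<Rightarrow> (a, b \<otimes> d), case (a, b') of (a, b) \<Rightarrow> (a, b \<otimes> d)]"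
    using tens_eq.addr[of a R "b \<otimes> d" "b' \<otimes> d" S] h assms(2) by (simp add: l_distr)
next
  fix b assume "b \<in> carrier R" then show "TE [case (\<zero>, b) of (a, b) \<Rightarrow> (a, b \<otimes> d)] []"
    using tens_eq.zerol[of "b \<otimes> d" R S] assms(2) by simp
next
  fix a assume "a \<in> carrier R" then show "TE [case (a, \<zero>) of (a, b) \<Rightarrow> (a, b \<otimes> d)] []"
    using tens_eq.zeror[of a R S] assms(2) by simp
next
  fix a b s assume h: "a \<in> carrier R" "b \<in> carrier R" "s \<in> S"
  then show "TE [case (a \<otimes> s, b) of (a, b) \<Rightarrow> (a, b \<otimes> d)] [case (a, s \<otimes> b) of (a, b) \<Rightarrow> (a, b \<otimes> d)]"
    using tens_eq.bal[of a R "b \<otimes> d" s S] assms(2) S_sub by (auto simp: m_assoc)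
qed (use assms(2) in auto)

lemma tlact_cls: "carr xs \<Longrightarrow> d \<in> carrier R \<Longrightarrow> tlact R S d (cls xs) = cls (map (\<lambda>(a, b). (d \<otimes> a, b)) xs)"
  unfolding tlact_def by (rule cls_eq[OF TE_lmult[OF TE_sym[OF trep_TE]]])

lemma tract_cls: "carr xs \<Longrightarrow> d \<in> carrier R \<Longrightarrow> tract R S (cls xs) d = cls (map (\<lambda>(a, b). (a, b \<otimes> d)) xs)"
  unfolding tract_def by (rule cls_eq[OF TE_rmult[OF TE_sym[OF trep_TE]]])

lemma TE_neg: "carr xs \<Longrightarrow> TE (map (\<lambda>(a, b). (\<ominus> a, b)) xs @ xs) []"
proof -
  assume c: "carr xs"
  have 1: "TE (map (\<lambda>(a, b). (\<ominus> a, b)) xs @ map id xs) (map (\<lambda>p. (\<ominus> fst p \<oplus> fst p, snd p)) xs)"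
  proof (rule TE_sym, rule TE_pw_split)
    fix p assume "p \<in> set xs"
    then have "fst p \<in> carrier R" "snd p \<in> carrier R" using c by (auto simp: carr_def)
    then show "TE [(\<ominus> fst p \<oplus> fst p, snd p)] [case p of (a, b) \<Rightarrow> (\<ominus> a, b), id p]"
      using tens_eq.addl[of "\<ominus> fst p" R "fst p" "snd p" S] by (cases p) simp
  qed
  have 2: "TE (map (\<lambda>p. (\<ominus> fst p \<oplus> fst p, snd p)) xs) []"
  proof (rule TE_pw_zero)
    fix p assume "p \<in> set xs"
    then have "fst p \<in> carrier R" "snd p \<in> carrier R" using c by (auto simp: carr_def)
    then show "TE [(\<ominus> fst p \<oplus> fst p, snd p)] []" using tens_eq.zerol[of "snd p" R S] by (simp add: l_neg)
  qed
  show ?thesis using TE_trans[OF 1 2] by simp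
qed

end

locale bcs =
  fixes K :: "'k ring" and R :: "('k,'a) module" (structure) and S :: "'a set" and ES :: "'a \<Rightarrow> 'a"
    and r s :: "nat \<Rightarrow> 'a" and n :: nat and lam :: 'k
  assumes fK: "field K" and kR: "k_algebra K R" and kS: "k_subalgebra K S R"
    and irr: "centralizer R S = scalars K R" and bmE: "bimodule_map R S ES"
    and qb: "quasi_basis R ES r s n" and E1: "ES \<one> = \<one>" and lamK: "lam \<in> carrier K"
    and lam0: "lam \<noteq> \<zero>\<^bsub>K\<^esub>"
    and sumrs: "(\<Oplus>i\<in>{..<n}. r i \<otimes> s i) = inv\<^bsub>K\<^esub> lam \<odot> \<one>"
begin

lemma ringR: "ring R" using kR unfolding k_algebra_def by auto
lemma moduleR: "module K R" using kR unfolding k_algebra_def by auto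
lemma subS: "subring S R" using kS unfolding k_subalgebra_def by auto
lemma S_sub: "S \<subseteq> carrier R" using subringE(1)[OF subS] .

sublocale tns R S by (rule tns.intro[OF ringR]) (rule tns_axioms.intro[OF S_sub])
sublocale RM: module K R by (rule moduleR)
sublocale KF: field K by (rule fK)

lemma kalg1: "c \<in> carrier K \<Longrightarrow> x \<in> carrier R \<Longrightarrow> y \<in> carrier R \<Longrightarrow> c \<odot> (x \<otimes> y) = (c \<odot> x) \<otimes> y"
  using kR unfolding k_algebra_def by blast
lemma kalg2: "c \<in> carrier K \<Longrightarrow> x \<in> carrier R \<Longrightarrow> y \<in> carrier R \<Longrightarrow> c \<odot> (x \<otimes> y) = x \<otimes> (c \<odot> y)"
  using kR unfolding k_algebra_def by blast

lemma S_one: "\<one> \<in> S" using subringE(3)[OF subS] .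
lemma S_mult: "a \<in> S \<Longrightarrow> b \<in> S \<Longrightarrow> a \<otimes> b \<in> S" using subringE(6)[OF subS] .
lemma S_add: "a \<in> S \<Longrightarrow> b \<in> S \<Longrightarrow> a \<oplus> b \<in> S" using subringE(7)[OF subS] .
lemma S_smult: "c \<in> carrier K \<Longrightarrow> a \<in> S \<Longrightarrow> c \<odot> a \<in> S" using kS unfolding k_subalgebra_def by auto
lemma S_carr: "a \<in> S \<Longrightarrow> a \<in> carrier R" using S_sub by auto

lemma E_S: "m \<in> carrier R \<Longrightarrow> ES m \<in> S" using bmE unfolding bimodule_map_def by auto
lemma E_carr: "m \<in> carrier R \<Longrightarrow> ES m \<in> carrier R" using E_S S_carr by auto
lemma E_add: "m \<in> carrier R \<Longrightarrow> m' \<in> carrier R \<Longrightarrow> ES (m \<oplus> m') = ES m \<oplus> ES m'"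
  using bmE unfolding bimodule_map_def by auto
lemma E_lmult: "t \<in> S \<Longrightarrow> m \<in> carrier R \<Longrightarrow> ES (t \<otimes> m) = t \<otimes> ES m"
  using bmE unfolding bimodule_map_def by auto
lemma E_rmult: "t \<in> S \<Longrightarrow> m \<in> carrier R \<Longrightarrow> ES (m \<otimes> t) = ES m \<otimes> t"
  using bmE unfolding bimodule_map_def by auto
lemma S_zero: "\<zero> \<in> S" using subringE(2)[OF subS] .
lemma E_zero: "ES \<zero> = \<zero>"
  using E_lmult[OF S_zero, of \<zero>] E_carr[of \<zero>] by simp
lemma scal_S: "c \<in> carrier K \<Longrightarrow> c \<odot> \<one> \<in> S" using S_smult S_one by auto
lemma smult_as_mult_l: "c \<in> carrier K \<Longrightarrow> x \<in> carrier R \<Longrightarrow> c \<odot> x = (c \<odot> \<one>) \<otimes> x"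
  using kalg1[of c \<one> x] by simp
lemma smult_as_mult_r: "c \<in> carrier K \<Longrightarrow> x \<in> carrier R \<Longrightarrow> c \<odot> x = x \<otimes> (c \<odot> \<one>)"
  using kalg2[of c x \<one>] by simp
lemma E_smult: "c \<in> carrier K \<Longrightarrow> m \<in> carrier R \<Longrightarrow> ES (c \<odot> m) = c \<odot> ES m"
  using smult_as_mult_l E_lmult scal_S E_carr by metis

lemma r_carr: "i < n \<Longrightarrow> r i \<in> carrier R" using qb unfolding quasi_basis_def by auto
lemma s_carr: "i < n \<Longrightarrow> s i \<in> carrier R" using qb unfolding quasi_basis_def by auto
lemma qb1: "m \<in> carrier R \<Longrightarrow> (\<Oplus>i\<in>{..<n}. ES (m \<otimes> r i) \<otimes> s i) = m"
  using qb unfolding quasi_basis_def by auto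
lemma qb2: "m \<in> carrier R \<Longrightarrow> (\<Oplus>i\<in>{..<n}. r i \<otimes> ES (s i \<otimes> m)) = m"
  using qb unfolding quasi_basis_def by auto

lemma lam_unit: "lam \<in> Units K" using KF.field_Units lamK lam0 by auto
lemma ilamK: "inv\<^bsub>K\<^esub> lam \<in> carrier K" using lam_unit by simp
lemma lam_ilam: "lam \<otimes>\<^bsub>K\<^esub> inv\<^bsub>K\<^esub> lam = \<one>\<^bsub>K\<^esub>" using lam_unit by simp
lemma ilam_lam: "inv\<^bsub>K\<^esub> lam \<otimes>\<^bsub>K\<^esub> lam = \<one>\<^bsub>K\<^esub>" using lam_unit by simp
lemma lam_cancel: "x \<in> carrier R \<Longrightarrow> lam \<odot> (inv\<^bsub>K\<^esub> lam \<odot> x) = x"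
  using RM.smult_assoc1[OF lamK ilamK, of x] lam_ilam by simp
lemma lam_cancel2: "x \<in> carrier R \<Longrightarrow> inv\<^bsub>K\<^esub> lam \<odot> (lam \<odot> x) = x"
  using RM.smult_assoc1[OF ilamK lamK, of x] ilam_lam by simp

lemma TE_scal: "c \<in> carrier K \<Longrightarrow> x \<in> carrier R \<Longrightarrow> y \<in> carrier R \<Longrightarrow> TE [(c \<odot> x, y)] [(x, c \<odot> y)]"
proof -
  assume h: "c \<in> carrier K" "x \<in> carrier R" "y \<in> carrier R"
  have "TE [(x \<otimes> (c \<odot> \<one>), y)] [(x, (c \<odot> \<one>) \<otimes> y)]"
    by (rule tens_eq.bal) (use h scal_S in auto)
  moreover have "x \<otimes> (c \<odot> \<one>) = c \<odot> x" by (rule smult_as_mult_r[OF h(1,2), symmetric])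
  moreover have "(c \<odot> \<one>) \<otimes> y = c \<odot> y" by (rule smult_as_mult_l[OF h(1,3), symmetric])
  ultimately show ?thesis by simp
qed

abbreviation "R1 \<equiv> bc R S ES r s n"
abbreviation "bcml \<equiv> bc_mult_list R ES"
definition "il a = map (\<lambda>i. (a \<otimes> r i, s i)) [0..<n]"
abbreviation "onel \<equiv> map (\<lambda>i. (r i, s i)) [0..<n]"
abbreviation "incl \<equiv> bc_incl R S r s n"
abbreviation "ER \<equiv> bc_E R lam"
abbreviation "x1 \<equiv> bc_x K R S r lam"
abbreviation "y1 \<equiv> bc_y R S s"
abbreviation "smap c xs \<equiv> map (\<lambda>(a, b). (c \<odot> a, b)) xs"

lemma carrD: "carr xs \<Longrightarrow> (a, b) \<in> set xs \<Longrightarrow> a \<in> carrier R \<and> b \<in> carrier R"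
  by (auto simp: carr_def)

lemma carr_iff: "carr xs \<longleftrightarrow> (\<forall>a b. (a, b) \<in> set xs \<longrightarrow> a \<in> carrier R \<and> b \<in> carrier R)"
  by (auto simp: carr_def)

lemma bcml_Nil[simp]: "bcml [] ys = []" by (simp add: bc_mult_list_def)
lemma bcml_Cons[simp]: "bcml ((a, b) # xs) ys = map (\<lambda>(c, d). (a \<otimes> ES (b \<otimes> c), d)) ys @ bcml xs ys"
  by (simp add: bc_mult_list_def)
lemma bcml_append[simp]: "bcml (xs @ xs') ys = bcml xs ys @ bcml xs' ys"
  by (simp add: bc_mult_list_def)
lemma bcml_single: "bcml xs [(c, d)] = map (\<lambda>(a, b). (a \<otimes> ES (b \<otimes> c), d)) xs"
  by (induction xs) auto

lemma carr_map_pair: "(\<And>c d. (c, d) \<in> set ys \<Longrightarrow> f c d \<in> carrier R \<and> g c d \<in> carrier R) \<Longrightarrow>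
  carr (map (\<lambda>(c, d). (f c d, g c d)) ys)"
proof (induction ys)
  case Nil then show ?case by simp
next
  case (Cons p ys) then show ?case by (cases p) simp
qed

lemma carr_bcml: "carr xs \<Longrightarrow> carr ys \<Longrightarrow> carr (bcml xs ys)"
proof (induction xs)
  case Nil then show ?case by simp
next
  case (Cons p xs)
  obtain a b where p: "p = (a, b)" by (cases p)
  have ab: "a \<in> carrier R" "b \<in> carrier R" using Cons.prems p by auto
  have "carr (map (\<lambda>(c, d). (a \<otimes> ES (b \<otimes> c), d)) ys)"
    by (rule carr_map_pair) (use ab Cons.prems(2) in \<open>auto simp: E_carr dest: carrD\<close>)
  then show ?case using Cons p by simp
qed

lemma carr_il: "a \<in> carrier R \<Longrightarrow> carr (il a)" by (auto simp: il_def r_carr s_carr)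
lemma carr_onel: "carr onel" by (auto simp: r_carr s_carr)
lemma il_one: "il \<one> = onel" by (auto simp: il_def r_carr)

lemma R1_carrier: "carrier R1 = tens_carrier R S" by (simp add: bc_def)
lemma R1_mult: "X \<otimes>\<^bsub>R1\<^esub> Y = cls (bcml (trep X) (trep Y))" by (simp add: bc_def)
lemma R1_add: "X \<oplus>\<^bsub>R1\<^esub> Y = tadd R S X Y" by (simp add: bc_def)
lemma R1_zero: "\<zero>\<^bsub>R1\<^esub> = cls []" by (simp add: bc_def)
lemma R1_one: "\<one>\<^bsub>R1\<^esub> = cls onel" by (simp add: bc_def)
lemma R1_smult: "c \<odot>\<^bsub>R1\<^esub> X = cls (smap c (trep X))" by (simp add: bc_def)

lemma R1_carrierE: "X \<in> carrier R1 \<Longrightarrow> (\<And>xs. carr xs \<Longrightarrow> X = cls xs \<Longrightarrow> P) \<Longrightarrow> P"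
  unfolding R1_carrier tens_carrier_iff by blast
lemma R1_cls_in: "carr xs \<Longrightarrow> cls xs \<in> carrier R1"
  unfolding R1_carrier by (rule cls_in)

lemma BL: assumes "TE xs xs'" "carr ys" shows "TE (bcml xs ys) (bcml xs' ys)"
proof -
  let ?F = "\<lambda>(a, b). map (\<lambda>(c, d). (a \<otimes> ES (b \<otimes> c), d)) ys"
  have e: "\<And>zs. bcml zs ys = concat (map ?F zs)" by (simp add: bc_mult_list_def)
  have "TE (concat (map ?F xs)) (concat (map ?F xs'))"
  proof (rule TE_concat_map[OF assms(1)])
    fix a b assume "a \<in> carrier R" "b \<in> carrier R"
    then show "carr (?F (a, b))" using assms(2) by (auto simp: E_carr carr_iff)
  next
    fix a a' b assume h: "a \<in> carrier R" "a' \<in> carrier R" "b \<in> carrier R"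
    have "TE (map (\<lambda>(c, d). ((a \<oplus> a') \<otimes> ES (b \<otimes> c), d)) ys)
             (map (\<lambda>(c, d). (a \<otimes> ES (b \<otimes> c), d)) ys @ map (\<lambda>(c, d). (a' \<otimes> ES (b \<otimes> c), d)) ys)"
    proof (rule TE_pw_split)
      fix p assume "p \<in> set ys"
      then obtain c d where p: "p = (c, d)" "c \<in> carrier R" "d \<in> carrier R" using assms(2) by (cases p) (auto simp: carr_def)
      show "TE [case p of (c, d) \<Rightarrow> ((a \<oplus> a') \<otimes> ES (b \<otimes> c), d)]
              [case p of (c, d) \<Rightarrow> (a \<otimes> ES (b \<otimes> c), d), case p of (c, d) \<Rightarrow> (a' \<otimes> ES (b \<otimes> c), d)]"
        using tens_eq.addl[of "a \<otimes> ES (b \<otimes> c)" R "a' \<otimes> ES (b \<otimes> c)" d S] p h by (simp add: E_carr l_distr)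
    qed
    then show "TE (?F (a \<oplus> a', b)) (?F (a, b) @ ?F (a', b))" by simp
  next
    fix a b b' assume h: "a \<in> carrier R" "b \<in> carrier R" "b' \<in> carrier R"
    have "TE (map (\<lambda>(c, d). (a \<otimes> ES ((b \<oplus> b') \<otimes> c), d)) ys)
             (map (\<lambda>(c, d). (a \<otimes> ES (b \<otimes> c), d)) ys @ map (\<lambda>(c, d). (a \<otimes> ES (b' \<otimes> c), d)) ys)"
    proof (rule TE_pw_split)
      fix p assume "p \<in> set ys"
      then obtain c d where p: "p = (c, d)" "c \<in> carrier R" "d \<in> carrier R" using assms(2) by (cases p) (auto simp: carr_def)
      have "a \<otimes> ES ((b \<oplus> b') \<otimes> c) = a \<otimes> ES (b \<otimes> c) \<oplus> a \<otimes> ES (b' \<otimes> c)"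
        using p h by (simp add: l_distr E_add r_distr E_carr)
      then show "TE [case p of (c, d) \<Rightarrow> (a \<otimes> ES ((b \<oplus> b') \<otimes> c), d)]
              [case p of (c, d) \<Rightarrow> (a \<otimes> ES (b \<otimes> c), d), case p of (c, d) \<Rightarrow> (a \<otimes> ES (b' \<otimes> c), d)]"
        using tens_eq.addl[of "a \<otimes> ES (b \<otimes> c)" R "a \<otimes> ES (b' \<otimes> c)" d S] p h by (simp add: E_carr)
    qed
    then show "TE (?F (a, b \<oplus> b')) (?F (a, b) @ ?F (a, b'))" by simp
  next
    fix b assume h: "b \<in> carrier R"
    have "TE (map (\<lambda>(c, d). (\<zero> \<otimes> ES (b \<otimes> c), d)) ys) []"
    proof (rule TE_pw_zero)
      fix p assume "p \<in> set ys"
      then obtain c d where p: "p = (c, d)" "c \<in> carrier R" "d \<in> carrier R" using assms(2) by (cases p) (auto simp: carr_def)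
      show "TE [case p of (c, d) \<Rightarrow> (\<zero> \<otimes> ES (b \<otimes> c), d)] []"
        using tens_eq.zerol[of d R S] p h by (simp add: E_carr)
    qed
    then show "TE (?F (\<zero>, b)) []" by simp
  next
    fix a assume h: "a \<in> carrier R"
    have "TE (map (\<lambda>(c, d). (a \<otimes> ES (\<zero> \<otimes> c), d)) ys) []"
    proof (rule TE_pw_zero)
      fix p assume "p \<in> set ys"
      then obtain c d where p: "p = (c, d)" "c \<in> carrier R" "d \<in> carrier R" using assms(2) by (cases p) (auto simp: carr_def)
      show "TE [case p of (c, d) \<Rightarrow> (a \<otimes> ES (\<zero> \<otimes> c), d)] []"
        using tens_eq.zerol[of d R S] p h by (simp add: E_zero)
    qed
    then show "TE (?F (a, \<zero>)) []" by simp
  next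
    fix a b t assume h: "a \<in> carrier R" "b \<in> carrier R" "t \<in> S"
    have eq: "map (\<lambda>(c, d). ((a \<otimes> t) \<otimes> ES (b \<otimes> c), d)) ys = map (\<lambda>(c, d). (a \<otimes> ES ((t \<otimes> b) \<otimes> c), d)) ys"
    proof (rule map_cong[OF HOL.refl])
      fix p assume "p \<in> set ys"
      then obtain c d where p: "p = (c, d)" "c \<in> carrier R" "d \<in> carrier R" using assms(2) by (cases p) (auto simp: carr_def)
      show "(case p of (c, d) \<Rightarrow> ((a \<otimes> t) \<otimes> ES (b \<otimes> c), d)) = (case p of (c, d) \<Rightarrow> (a \<otimes> ES ((t \<otimes> b) \<otimes> c), d))"
        using p h S_carr[OF h(3)] by (simp add: m_assoc E_lmult E_carr)
    qed
    have cc: "carr (map (\<lambda>(c, d). (a \<otimes> ES ((t \<otimes> b) \<otimes> c), d)) ys)"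
      using assms(2) h S_carr[OF h(3)] by (auto simp: carr_iff E_carr)
    have "TE (map (\<lambda>(c, d). ((a \<otimes> t) \<otimes> ES (b \<otimes> c), d)) ys) (map (\<lambda>(c, d). (a \<otimes> ES ((t \<otimes> b) \<otimes> c), d)) ys)"
      unfolding eq by (rule TE_refl[OF cc])
    then show "TE (?F (a \<otimes> t, b)) (?F (a, t \<otimes> b))" by simp
  qed
  then show ?thesis by (simp add: e)
qed

lemma BR1: assumes "TE ys ys'" "a \<in> carrier R" "b \<in> carrier R"
  shows "TE (map (\<lambda>(c, d). (a \<otimes> ES (b \<otimes> c), d)) ys) (map (\<lambda>(c, d). (a \<otimes> ES (b \<otimes> c), d)) ys')"
proof (rule TE_map_gen[OF assms(1)])
  fix c c' d assume h: "c \<in> carrier R" "c' \<in> carrier R" "d \<in> carrier R"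
  show "TE [case (c \<oplus> c', d) of (c, d) \<Rightarrow> (a \<otimes> ES (b \<otimes> c), d)]
     [case (c, d) of (c, d) \<Rightarrow> (a \<otimes> ES (b \<otimes> c), d), case (c', d) of (c, d) \<Rightarrow> (a \<otimes> ES (b \<otimes> c), d)]"
    using tens_eq.addl[of "a \<otimes> ES (b \<otimes> c)" R "a \<otimes> ES (b \<otimes> c')" d S] h assms(2,3)
    by (simp add: r_distr E_add E_carr)
next
  fix c d d' assume h: "c \<in> carrier R" "d \<in> carrier R" "d' \<in> carrier R"
  show "TE [case (c, d \<oplus> d') of (c, d) \<Rightarrow> (a \<otimes> ES (b \<otimes> c), d)]
     [case (c, d) of (c, d) \<Rightarrow> (a \<otimes> ES (b \<otimes> c), d), case (c, d') of (c, d) \<Rightarrow> (a \<otimes> ES (b \<otimes> c), d)]"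
    using tens_eq.addr[of "a \<otimes> ES (b \<otimes> c)" R d d' S] h assms(2,3) by (simp add: E_carr)
next
  fix d assume h: "d \<in> carrier R"
  show "TE [case (\<zero>, d) of (c, d) \<Rightarrow> (a \<otimes> ES (b \<otimes> c), d)] []"
    using tens_eq.zerol[of d R S] h assms(2,3) by (simp add: E_zero)
next
  fix c assume h: "c \<in> carrier R"
  show "TE [case (c, \<zero>) of (c, d) \<Rightarrow> (a \<otimes> ES (b \<otimes> c), d)] []"
    using tens_eq.zeror[of "a \<otimes> ES (b \<otimes> c)" R S] h assms(2,3) by (simp add: E_carr)
next
  fix c d t assume h: "c \<in> carrier R" "d \<in> carrier R" "t \<in> S"
  have "a \<otimes> ES (b \<otimes> (c \<otimes> t)) = (a \<otimes> ES (b \<otimes> c)) \<otimes> t"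
    using h assms(2,3) S_carr[OF h(3)] by (simp add: m_assoc[symmetric] E_rmult E_carr)
  then show "TE [case (c \<otimes> t, d) of (c, d) \<Rightarrow> (a \<otimes> ES (b \<otimes> c), d)] [case (c, t \<otimes> d) of (c, d) \<Rightarrow> (a \<otimes> ES (b \<otimes> c), d)]"
    using tens_eq.bal[of "a \<otimes> ES (b \<otimes> c)" R d t S] h assms(2,3) by (simp add: E_carr)
qed (use assms(2,3) in \<open>auto simp: E_carr carr_iff\<close>)

lemma BR: assumes "TE ys ys'" "carr xs" shows "TE (bcml xs ys) (bcml xs ys')"
proof -
  let ?F = "\<lambda>ys. \<lambda>(a, b). map (\<lambda>(c, d). (a \<otimes> ES (b \<otimes> c), d)) ys"
  have e: "\<And>zs. bcml xs zs = concat (map (?F zs) xs)" by (simp add: bc_mult_list_def)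
  have "TE (concat (map (?F ys) xs)) (concat (map (?F ys') xs))"
  proof (rule TE_concat_pw)
    fix p assume "p \<in> set xs"
    then obtain a b where p: "p = (a, b)" "a \<in> carrier R" "b \<in> carrier R" using assms(2) by (cases p) (auto simp: carr_def)
    show "TE (?F ys p) (?F ys' p)" using BR1[OF assms(1) p(2,3)] p(1) by simp
  qed
  then show ?thesis by (simp add: e)
qed

lemma R1_mult_cls: "carr xs \<Longrightarrow> carr ys \<Longrightarrow> cls xs \<otimes>\<^bsub>R1\<^esub> cls ys = cls (bcml xs ys)"
proof -
  assume c: "carr xs" "carr ys"
  have 1: "TE (bcml (trep (cls xs)) (trep (cls ys))) (bcml xs (trep (cls ys)))"
    by (rule BL[OF TE_sym[OF trep_TE[OF c(1)]] carr_trep[OF c(2)]])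
  have 2: "TE (bcml xs (trep (cls ys))) (bcml xs ys)"
    by (rule BR[OF TE_sym[OF trep_TE[OF c(2)]] c(1)])
  show ?thesis unfolding R1_mult by (rule cls_eq[OF TE_trans[OF 1 2]])
qed

lemma R1_add_cls: "carr xs \<Longrightarrow> carr ys \<Longrightarrow> cls xs \<oplus>\<^bsub>R1\<^esub> cls ys = cls (xs @ ys)"
  unfolding R1_add by (rule tadd_cls)

end

context bcs begin

lemma carr_mem: "carr xs \<Longrightarrow> p \<in> set xs \<Longrightarrow> (\<And>a b. p = (a, b) \<Longrightarrow> a \<in> carrier R \<Longrightarrow> b \<in> carrier R \<Longrightarrow> P) \<Longrightarrow> P"
  by (cases p) (auto dest: carrD)

lemma map_lone: "carr ys \<Longrightarrow> map (\<lambda>(c, d). (\<one> \<otimes> c, d)) ys = ys"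
  by (induction ys) (auto simp: carr_def)

lemma map_rone: "carr ys \<Longrightarrow> map (\<lambda>(c, d). (c, d \<otimes> \<one>)) ys = ys"
  by (induction ys) (auto simp: carr_def)

lemma bcml_map_left: "a \<in> carrier R \<Longrightarrow> b \<in> carrier R \<Longrightarrow> carr ys \<Longrightarrow> carr zs \<Longrightarrow>
  bcml (map (\<lambda>(c, d). (a \<otimes> ES (b \<otimes> c), d)) ys) zs = map (\<lambda>(c, d). (a \<otimes> ES (b \<otimes> c), d)) (bcml ys zs)"
proof (induction ys)
  case Nil then show ?case by simp
next
  case (Cons p ys)
  obtain c d where p: "p = (c, d)" by (cases p)
  have cd: "c \<in> carrier R" "d \<in> carrier R" using Cons.prems p by auto
  have "map (\<lambda>(e, f). ((a \<otimes> ES (b \<otimes> c)) \<otimes> ES (d \<otimes> e), f)) zs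
      = map (\<lambda>(c, d). (a \<otimes> ES (b \<otimes> c), d)) (map (\<lambda>(e, f). (c \<otimes> ES (d \<otimes> e), f)) zs)"
  proof -
    have "\<And>q. q \<in> set zs \<Longrightarrow> (case q of (e, f) \<Rightarrow> ((a \<otimes> ES (b \<otimes> c)) \<otimes> ES (d \<otimes> e), f))
           = (case (case q of (e, f) \<Rightarrow> (c \<otimes> ES (d \<otimes> e), f)) of (c, d) \<Rightarrow> (a \<otimes> ES (b \<otimes> c), d))"
    proof -
      fix q assume qin: "q \<in> set zs"
      obtain e f where q: "q = (e, f)" "e \<in> carrier R" "f \<in> carrier R" by (rule carr_mem[OF Cons.prems(4) qin])
      have t: "ES (d \<otimes> e) \<in> S" using E_S q cd by simp
      have "ES (b \<otimes> (c \<otimes> ES (d \<otimes> e))) = ES (b \<otimes> c) \<otimes> ES (d \<otimes> e)"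
        using E_rmult[OF t, of "b \<otimes> c"] Cons.prems(2) cd q S_carr[OF t] by (simp add: m_assoc)
      then show "?thesis q" using q Cons.prems(1,2) cd S_carr[OF t] by (simp add: m_assoc E_carr)
    qed
    then show ?thesis by simp
  qed
  then show ?case using Cons p cd by simp
qed

lemma bcml_assoc: "carr xs \<Longrightarrow> carr ys \<Longrightarrow> carr zs \<Longrightarrow> bcml (bcml xs ys) zs = bcml xs (bcml ys zs)"
proof (induction xs)
  case Nil then show ?case by simp
next
  case (Cons p xs)
  obtain a b where p: "p = (a, b)" by (cases p)
  have ab: "a \<in> carrier R" "b \<in> carrier R" using Cons.prems p by auto
  show ?case using Cons p bcml_map_left[OF ab Cons.prems(2,3)] by simp
qed

lemma bcml_il_left: "bcml (il a) ys = concat (map (\<lambda>i. map (\<lambda>(c, d). ((a \<otimes> r i) \<otimes> ES (s i \<otimes> c), d)) ys) [0..<n])"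
  by (simp add: il_def bc_mult_list_def comp_def)

lemma bcml_il_right: "bcml ys (il a) = concat (map (\<lambda>(c, d). map (\<lambda>i. (c \<otimes> ES (d \<otimes> (a \<otimes> r i)), s i)) [0..<n]) ys)"
  by (simp add: il_def bc_mult_list_def comp_def case_prod_beta)

lemma LM: assumes a: "a \<in> carrier R" and c: "carr ys"
  shows "TE (bcml (il a) ys) (map (\<lambda>(c, d). (a \<otimes> c, d)) ys)"
proof -
  let ?g = "\<lambda>i p. case p of (c, d) \<Rightarrow> ((a \<otimes> r i) \<otimes> ES (s i \<otimes> c), d)"
  have e: "bcml (il a) ys = concat (map (\<lambda>i. map (?g i) ys) [0..<n])"
    unfolding bcml_il_left by simp
  have c1: "carr (bcml (il a) ys)" by (rule carr_bcml[OF carr_il[OF a] c])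
  have 1: "TE (concat (map (\<lambda>i. map (?g i) ys) [0..<n])) (concat (map (\<lambda>p. map (\<lambda>i. ?g i p) [0..<n]) ys))"
    by (rule TE_dconcat) (use c1 e in simp)
  have 2: "TE (concat (map (\<lambda>p. map (\<lambda>i. ?g i p) [0..<n]) ys)) (concat (map (\<lambda>p. [case p of (c, d) \<Rightarrow> (a \<otimes> c, d)]) ys))"
  proof (rule TE_concat_pw)
    fix p assume pin: "p \<in> set ys"
    obtain c d where p: "p = (c, d)" "c \<in> carrier R" "d \<in> carrier R" by (rule carr_mem[OF c pin])
    have f: "\<And>i. i < n \<Longrightarrow> (a \<otimes> r i) \<otimes> ES (s i \<otimes> c) \<in> carrier R" using p a by (simp add: r_carr s_carr E_carr)
    have "(\<Oplus>i\<in>{..<n}. (a \<otimes> r i) \<otimes> ES (s i \<otimes> c)) = (\<Oplus>i\<in>{..<n}. a \<otimes> (r i \<otimes> ES (s i \<otimes> c)))"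
      by (rule finsum_cong) (use p a in \<open>auto simp: r_carr s_carr E_carr m_assoc Pi_def\<close>)
    also have "\<dots> = a \<otimes> (\<Oplus>i\<in>{..<n}. r i \<otimes> ES (s i \<otimes> c))"
      by (rule finsum_rdistr[symmetric]) (use p a in \<open>auto simp: r_carr s_carr E_carr Pi_def\<close>)
    also have "\<dots> = a \<otimes> c" using qb2 p by simp
    finally have s: "(\<Oplus>i\<in>{..<n}. (a \<otimes> r i) \<otimes> ES (s i \<otimes> c)) = a \<otimes> c" .
    have "TE [(\<Oplus>i\<in>{..<n}. (a \<otimes> r i) \<otimes> ES (s i \<otimes> c), d)] (map (\<lambda>i. ((a \<otimes> r i) \<otimes> ES (s i \<otimes> c), d)) [0..<n])"
      by (rule TE_sum_left_n) (use f p in auto)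
    then have "TE (map (\<lambda>i. ((a \<otimes> r i) \<otimes> ES (s i \<otimes> c), d)) [0..<n]) [(a \<otimes> c, d)]"
      using s by (simp add: TE_sym)
    then show "TE (map (\<lambda>i. ?g i p) [0..<n]) [case p of (c, d) \<Rightarrow> (a \<otimes> c, d)]" using p by simp
  qed
  have 3: "concat (map (\<lambda>p. [case p of (c, d) \<Rightarrow> (a \<otimes> c, d)]) ys) = map (\<lambda>(c, d). (a \<otimes> c, d)) ys"
    by (rule map_as_concat[symmetric])
  show ?thesis using TE_trans[OF 1 2] e 3 by simp
qed

lemma RM: assumes a: "a \<in> carrier R" and c: "carr ys"
  shows "TE (bcml ys (il a)) (map (\<lambda>(c, d). (c, d \<otimes> a)) ys)"
proof -
  have e: "bcml ys (il a) = concat (map (\<lambda>p. case p of (c, d) \<Rightarrow> map (\<lambda>i. (c \<otimes> ES (d \<otimes> (a \<otimes> r i)), s i)) [0..<n]) ys)"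
    unfolding bcml_il_right by simp
  have 2: "TE (concat (map (\<lambda>p. case p of (c, d) \<Rightarrow> map (\<lambda>i. (c \<otimes> ES (d \<otimes> (a \<otimes> r i)), s i)) [0..<n]) ys))
              (concat (map (\<lambda>p. [case p of (c, d) \<Rightarrow> (c, d \<otimes> a)]) ys))"
  proof (rule TE_concat_pw)
    fix p assume pin: "p \<in> set ys"
    obtain c d where p: "p = (c, d)" "c \<in> carrier R" "d \<in> carrier R" by (rule carr_mem[OF c pin])
    have f: "\<And>i. i < n \<Longrightarrow> ES ((d \<otimes> a) \<otimes> r i) \<otimes> s i \<in> carrier R" using p a by (simp add: r_carr s_carr E_carr)
    have 1: "TE (map (\<lambda>i. (c \<otimes> ES (d \<otimes> (a \<otimes> r i)), s i)) [0..<n]) (map (\<lambda>i. (c, ES ((d \<otimes> a) \<otimes> r i) \<otimes> s i)) [0..<n])"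
    proof (rule TE_map_pw)
      fix i assume "i \<in> set [0..<n]"
      then have i: "i < n" by simp
      have t: "ES ((d \<otimes> a) \<otimes> r i) \<in> S" using E_S p a r_carr[OF i] by simp
      have "TE [(c \<otimes> ES ((d \<otimes> a) \<otimes> r i), s i)] [(c, ES ((d \<otimes> a) \<otimes> r i) \<otimes> s i)]"
        by (rule tens_eq.bal) (use p t s_carr[OF i] in auto)
      then show "TE [(c \<otimes> ES (d \<otimes> (a \<otimes> r i)), s i)] [(c, ES ((d \<otimes> a) \<otimes> r i) \<otimes> s i)]"
        using p a r_carr[OF i] by (simp add: m_assoc)
    qed
    have "TE [(c, \<Oplus>i\<in>{..<n}. ES ((d \<otimes> a) \<otimes> r i) \<otimes> s i)] (map (\<lambda>i. (c, ES ((d \<otimes> a) \<otimes> r i) \<otimes> s i)) [0..<n])"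
      by (rule TE_sum_right_n) (use f p in auto)
    then have "TE (map (\<lambda>i. (c, ES ((d \<otimes> a) \<otimes> r i) \<otimes> s i)) [0..<n]) [(c, d \<otimes> a)]"
      using qb1[of "d \<otimes> a"] p a by (simp add: TE_sym)
    then show "TE (case p of (c, d) \<Rightarrow> map (\<lambda>i. (c \<otimes> ES (d \<otimes> (a \<otimes> r i)), s i)) [0..<n]) [case p of (c, d) \<Rightarrow> (c, d \<otimes> a)]"
      using TE_trans[OF 1] p by simp
  qed
  have 3: "concat (map (\<lambda>p. [case p of (c, d) \<Rightarrow> (c, d \<otimes> a)]) ys) = map (\<lambda>(c, d). (c, d \<otimes> a)) ys"
    by (rule map_as_concat[symmetric])
  show ?thesis using 2 e 3 by simp
qed

lemma LU: "carr ys \<Longrightarrow> TE (bcml onel ys) ys"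
  using LM[OF one_closed, of ys] il_one map_lone by simp

lemma RU: "carr ys \<Longrightarrow> TE (bcml ys onel) ys"
  using RM[OF one_closed, of ys] il_one map_rone by simp


lemma count_bcml_append: "count_list (bcml zs (xs @ ys)) q = count_list (bcml zs xs @ bcml zs ys) q"
proof (induction zs)
  case Nil then show ?case by simp
next
  case (Cons p zs) then show ?case by (cases p) simp
qed

lemma R1_smap_TE: assumes "TE xs ys" "c \<in> carrier K" shows "TE (smap c xs) (smap c ys)"
proof (rule TE_map_gen[OF assms(1)])
  fix a a' b assume h: "a \<in> carrier R" "a' \<in> carrier R" "b \<in> carrier R"
  show "TE [case (a \<oplus> a', b) of (a, b) \<Rightarrow> (c \<odot> a, b)] [case (a, b) of (a, b) \<Rightarrow> (c \<odot> a, b), case (a', b) of (a, b) \<Rightarrow> (c \<odot> a, b)]"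
    using tens_eq.addl[of "c \<odot> a" R "c \<odot> a'" b S] h assms(2) by (simp add: RM.smult_r_distr)
next
  fix a b b' assume h: "a \<in> carrier R" "b \<in> carrier R" "b' \<in> carrier R"
  show "TE [case (a, b \<oplus> b') of (a, b) \<Rightarrow> (c \<odot> a, b)] [case (a, b) of (a, b) \<Rightarrow> (c \<odot> a, b), case (a, b') of (a, b) \<Rightarrow> (c \<odot> a, b)]"
    using tens_eq.addr[of "c \<odot> a" R b b' S] h assms(2) by simp
next
  fix b assume "b \<in> carrier R" then show "TE [case (\<zero>, b) of (a, b) \<Rightarrow> (c \<odot> a, b)] []"
    using tens_eq.zerol[of b R S] assms(2) by simp
next
  fix a assume "a \<in> carrier R" then show "TE [case (a, \<zero>) of (a, b) \<Rightarrow> (c \<odot> a, b)] []"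
    using tens_eq.zeror[of "c \<odot> a" R S] assms(2) by simp
next
  fix a b t assume h: "a \<in> carrier R" "b \<in> carrier R" "t \<in> S"
  have "c \<odot> (a \<otimes> t) = (c \<odot> a) \<otimes> t" using kalg1 h S_carr assms(2) by blast
  then show "TE [case (a \<otimes> t, b) of (a, b) \<Rightarrow> (c \<odot> a, b)] [case (a, t \<otimes> b) of (a, b) \<Rightarrow> (c \<odot> a, b)]"
    using tens_eq.bal[of "c \<odot> a" R b t S] h assms(2) by simp
qed (use assms(2) in auto)

lemma carr_smap: "carr xs \<Longrightarrow> c \<in> carrier K \<Longrightarrow> carr (smap c xs)"
  by (induction xs) auto

lemma R1_smult_cls: "c \<in> carrier K \<Longrightarrow> carr xs \<Longrightarrow> c \<odot>\<^bsub>R1\<^esub> cls xs = cls (smap c xs)"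
  unfolding R1_smult by (rule cls_eq[OF R1_smap_TE[OF TE_sym[OF trep_TE]]])

lemma R1_ring: "ring R1"
proof (rule ringI)
  show "abelian_group R1"
  proof (rule abelian_groupI)
    fix x y assume x: "x \<in> carrier R1" and y: "y \<in> carrier R1"
    obtain xs where xs: "carr xs" "x = cls xs" by (rule R1_carrierE[OF x])
    obtain ys where ys: "carr ys" "y = cls ys" by (rule R1_carrierE[OF y])
    show "x \<oplus>\<^bsub>R1\<^esub> y \<in> carrier R1" using xs ys R1_add_cls R1_cls_in by simp
    have "TE (xs @ ys) (ys @ xs)" by (rule TE_perm) (use xs ys in auto)
    then show "x \<oplus>\<^bsub>R1\<^esub> y = y \<oplus>\<^bsub>R1\<^esub> x" using xs ys R1_add_cls cls_eq by simp
  next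
    show "\<zero>\<^bsub>R1\<^esub> \<in> carrier R1" using R1_zero R1_cls_in by simp
  next
    fix x y z assume x: "x \<in> carrier R1" and y: "y \<in> carrier R1" and z: "z \<in> carrier R1"
    obtain xs where xs: "carr xs" "x = cls xs" by (rule R1_carrierE[OF x])
    obtain ys where ys: "carr ys" "y = cls ys" by (rule R1_carrierE[OF y])
    obtain zs where zs: "carr zs" "z = cls zs" by (rule R1_carrierE[OF z])
    show "x \<oplus>\<^bsub>R1\<^esub> y \<oplus>\<^bsub>R1\<^esub> z = x \<oplus>\<^bsub>R1\<^esub> (y \<oplus>\<^bsub>R1\<^esub> z)"
      using xs ys zs R1_add_cls by simp
  next
    fix x assume x: "x \<in> carrier R1"
    obtain xs where xs: "carr xs" "x = cls xs" by (rule R1_carrierE[OF x])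
    show "\<zero>\<^bsub>R1\<^esub> \<oplus>\<^bsub>R1\<^esub> x = x" using xs R1_add_cls R1_zero by simp
    let ?y = "cls (map (\<lambda>(a, b). (\<ominus> a, b)) xs)"
    have cy: "carr (map (\<lambda>(a, b). (\<ominus> a, b)) xs)" using xs(1) by (induction xs) auto
    have "?y \<oplus>\<^bsub>R1\<^esub> x = \<zero>\<^bsub>R1\<^esub>"
      using R1_add_cls[OF cy xs(1)] xs(2) R1_zero cls_eq[OF TE_neg[OF xs(1)]] by simp
    then show "\<exists>y\<in>carrier R1. y \<oplus>\<^bsub>R1\<^esub> x = \<zero>\<^bsub>R1\<^esub>" using R1_cls_in[OF cy] by blast
  qed
next
  show "monoid R1"
  proof (rule monoidI)
    fix x y assume x: "x \<in> carrier R1" and y: "y \<in> carrier R1"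
    obtain xs where xs: "carr xs" "x = cls xs" by (rule R1_carrierE[OF x])
    obtain ys where ys: "carr ys" "y = cls ys" by (rule R1_carrierE[OF y])
    show "x \<otimes>\<^bsub>R1\<^esub> y \<in> carrier R1" using xs ys R1_mult_cls R1_cls_in carr_bcml by simp
  next
    show "\<one>\<^bsub>R1\<^esub> \<in> carrier R1" using R1_one R1_cls_in carr_onel by simp
  next
    fix x y z assume x: "x \<in> carrier R1" and y: "y \<in> carrier R1" and z: "z \<in> carrier R1"
    obtain xs where xs: "carr xs" "x = cls xs" by (rule R1_carrierE[OF x])
    obtain ys where ys: "carr ys" "y = cls ys" by (rule R1_carrierE[OF y])
    obtain zs where zs: "carr zs" "z = cls zs" by (rule R1_carrierE[OF z])
    show "x \<otimes>\<^bsub>R1\<^esub> y \<otimes>\<^bsub>R1\<^esub> z = x \<otimes>\<^bsub>R1\<^esub> (y \<otimes>\<^bsub>R1\<^esub> z)"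
      using xs ys zs R1_mult_cls carr_bcml bcml_assoc by simp
  next
    fix x assume x: "x \<in> carrier R1"
    obtain xs where xs: "carr xs" "x = cls xs" by (rule R1_carrierE[OF x])
    show "\<one>\<^bsub>R1\<^esub> \<otimes>\<^bsub>R1\<^esub> x = x" using xs R1_mult_cls[OF carr_onel xs(1)] R1_one cls_eq[OF LU[OF xs(1)]] by simp
    show "x \<otimes>\<^bsub>R1\<^esub> \<one>\<^bsub>R1\<^esub> = x" using xs R1_mult_cls[OF xs(1) carr_onel] R1_one cls_eq[OF RU[OF xs(1)]] by simp
  qed
next
  fix x y z assume x: "x \<in> carrier R1" and y: "y \<in> carrier R1" and z: "z \<in> carrier R1"
  obtain xs where xs: "carr xs" "x = cls xs" by (rule R1_carrierE[OF x])
  obtain ys where ys: "carr ys" "y = cls ys" by (rule R1_carrierE[OF y])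
  obtain zs where zs: "carr zs" "z = cls zs" by (rule R1_carrierE[OF z])
  show "(x \<oplus>\<^bsub>R1\<^esub> y) \<otimes>\<^bsub>R1\<^esub> z = x \<otimes>\<^bsub>R1\<^esub> z \<oplus>\<^bsub>R1\<^esub> y \<otimes>\<^bsub>R1\<^esub> z"
    using xs ys zs R1_mult_cls R1_add_cls carr_bcml by simp
  have "TE (bcml zs (xs @ ys)) (bcml zs xs @ bcml zs ys)"
    by (rule TE_perm) (use xs ys zs carr_bcml count_bcml_append in simp_all)
  then show "z \<otimes>\<^bsub>R1\<^esub> (x \<oplus>\<^bsub>R1\<^esub> y) = z \<otimes>\<^bsub>R1\<^esub> x \<oplus>\<^bsub>R1\<^esub> z \<otimes>\<^bsub>R1\<^esub> y"
    using xs ys zs R1_mult_cls R1_add_cls carr_bcml cls_eq by simp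
qed

sublocale R1: ring R1 by (rule R1_ring)

lemma R1_module: "module K R1"
proof (rule moduleI)
  show "cring K" by (rule domain.axioms(1)[OF field.axioms(1)[OF fK]])
  show "abelian_group R1" by (rule R1.abelian_group_axioms)
next
  fix a x assume a: "a \<in> carrier K" and x: "x \<in> carrier R1"
  obtain xs where xs: "carr xs" "x = cls xs" by (rule R1_carrierE[OF x])
  show "a \<odot>\<^bsub>R1\<^esub> x \<in> carrier R1" using R1_smult_cls[OF a xs(1)] xs R1_cls_in[OF carr_smap[OF xs(1) a]] by simp
next
  fix a b x assume a: "a \<in> carrier K" and b: "b \<in> carrier K" and x: "x \<in> carrier R1"
  obtain xs where xs: "carr xs" "x = cls xs" by (rule R1_carrierE[OF x])
  have "TE (smap (a \<oplus>\<^bsub>K\<^esub> b) xs) (smap a xs @ smap b xs)"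
  proof (rule TE_pw_split)
    fix p assume pin: "p \<in> set xs"
    obtain c d where p: "p = (c, d)" "c \<in> carrier R" "d \<in> carrier R" by (rule carr_mem[OF xs(1) pin])
    show "TE [case p of (c, d) \<Rightarrow> ((a \<oplus>\<^bsub>K\<^esub> b) \<odot> c, d)] [case p of (c, d) \<Rightarrow> (a \<odot> c, d), case p of (c, d) \<Rightarrow> (b \<odot> c, d)]"
      using tens_eq.addl[of "a \<odot> c" R "b \<odot> c" d S] p a b by (simp add: RM.smult_l_distr)
  qed
  then show "(a \<oplus>\<^bsub>K\<^esub> b) \<odot>\<^bsub>R1\<^esub> x = a \<odot>\<^bsub>R1\<^esub> x \<oplus>\<^bsub>R1\<^esub> b \<odot>\<^bsub>R1\<^esub> x"
    using xs a b R1_smult_cls R1_add_cls carr_smap cls_eq by simp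
  have eq: "smap (a \<otimes>\<^bsub>K\<^esub> b) xs = smap a (smap b xs)"
    using xs(1) a b by (induction xs) (auto simp: RM.smult_assoc1)
  have "(a \<otimes>\<^bsub>K\<^esub> b) \<odot>\<^bsub>R1\<^esub> x = cls (smap (a \<otimes>\<^bsub>K\<^esub> b) xs)"
    unfolding xs(2) by (rule R1_smult_cls[OF _ xs(1)]) (use a b in simp)
  also have "\<dots> = cls (smap a (smap b xs))" by (simp only: eq)
  also have "\<dots> = a \<odot>\<^bsub>R1\<^esub> cls (smap b xs)" by (rule R1_smult_cls[symmetric, OF a carr_smap[OF xs(1) b]])
  also have "\<dots> = a \<odot>\<^bsub>R1\<^esub> (b \<odot>\<^bsub>R1\<^esub> x)" unfolding xs(2) R1_smult_cls[OF b xs(1)] ..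
  finally show "(a \<otimes>\<^bsub>K\<^esub> b) \<odot>\<^bsub>R1\<^esub> x = a \<odot>\<^bsub>R1\<^esub> (b \<odot>\<^bsub>R1\<^esub> x)" .
next
  fix a x y assume a: "a \<in> carrier K" and x: "x \<in> carrier R1" and y: "y \<in> carrier R1"
  obtain xs where xs: "carr xs" "x = cls xs" by (rule R1_carrierE[OF x])
  obtain ys where ys: "carr ys" "y = cls ys" by (rule R1_carrierE[OF y])
  show "a \<odot>\<^bsub>R1\<^esub> (x \<oplus>\<^bsub>R1\<^esub> y) = a \<odot>\<^bsub>R1\<^esub> x \<oplus>\<^bsub>R1\<^esub> a \<odot>\<^bsub>R1\<^esub> y"
    using xs ys a R1_smult_cls R1_add_cls carr_smap by simp
next
  fix x assume x: "x \<in> carrier R1"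
  obtain xs where xs: "carr xs" "x = cls xs" by (rule R1_carrierE[OF x])
  have "smap \<one>\<^bsub>K\<^esub> xs = xs" using xs(1) by (induction xs) auto
  then show "\<one>\<^bsub>K\<^esub> \<odot>\<^bsub>R1\<^esub> x = x" using xs R1_smult_cls by simp
qed

lemma smap_bcml1: "carr xs \<Longrightarrow> carr ys \<Longrightarrow> c \<in> carrier K \<Longrightarrow> smap c (bcml xs ys) = bcml (smap c xs) ys"
proof (induction xs)
  case Nil then show ?case by simp
next
  case (Cons p xs)
  obtain a b where p: "p = (a, b)" "a \<in> carrier R" "b \<in> carrier R" using Cons.prems by (cases p) auto
  have "smap c (map (\<lambda>(e, f). (a \<otimes> ES (b \<otimes> e), f)) ys) = map (\<lambda>(e, f). ((c \<odot> a) \<otimes> ES (b \<otimes> e), f)) ys"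
  proof -
    have "\<And>q. q \<in> set ys \<Longrightarrow> (case (case q of (e, f) \<Rightarrow> (a \<otimes> ES (b \<otimes> e), f)) of (a, b) \<Rightarrow> (c \<odot> a, b))
            = (case q of (e, f) \<Rightarrow> ((c \<odot> a) \<otimes> ES (b \<otimes> e), f))"
    proof -
      fix q assume qin: "q \<in> set ys"
      obtain e f where q: "q = (e, f)" "e \<in> carrier R" "f \<in> carrier R" by (rule carr_mem[OF Cons.prems(2) qin])
      show "?thesis q" using q p Cons.prems(3) kalg1 E_carr by simp
    qed
    then show ?thesis by simp
  qed
  then show ?case using Cons p by simp
qed

lemma smap_bcml2: "carr xs \<Longrightarrow> carr ys \<Longrightarrow> c \<in> carrier K \<Longrightarrow> smap c (bcml xs ys) = bcml xs (smap c ys)"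
proof (induction xs)
  case Nil then show ?case by simp
next
  case (Cons p xs)
  obtain a b where p: "p = (a, b)" "a \<in> carrier R" "b \<in> carrier R" using Cons.prems by (cases p) auto
  have "smap c (map (\<lambda>(e, f). (a \<otimes> ES (b \<otimes> e), f)) ys) = map (\<lambda>(e, f). (a \<otimes> ES (b \<otimes> e), f)) (smap c ys)"
  proof -
    have "\<And>q. q \<in> set ys \<Longrightarrow> (case (case q of (e, f) \<Rightarrow> (a \<otimes> ES (b \<otimes> e), f)) of (a, b) \<Rightarrow> (c \<odot> a, b))
            = (case (case q of (a, b) \<Rightarrow> (c \<odot> a, b)) of (e, f) \<Rightarrow> (a \<otimes> ES (b \<otimes> e), f))"
    proof -
      fix q assume qin: "q \<in> set ys"
      obtain e f where q: "q = (e, f)" "e \<in> carrier R" "f \<in> carrier R" by (rule carr_mem[OF Cons.prems(2) qin])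
      have "b \<otimes> (c \<odot> e) = c \<odot> (b \<otimes> e)" using kalg2[OF Cons.prems(3) p(3) q(2)] by simp
      then have "a \<otimes> ES (b \<otimes> (c \<odot> e)) = c \<odot> (a \<otimes> ES (b \<otimes> e))"
        using E_smult[OF Cons.prems(3), of "b \<otimes> e"] kalg2[OF Cons.prems(3) p(2), of "ES (b \<otimes> e)"] q p E_carr by simp
      then show "?thesis q" using q by simp
    qed
    then show ?thesis by simp
  qed
  then show ?case using Cons p by simp
qed

lemma R1_kalg: "k_algebra K R1"
  unfolding k_algebra_def
proof (intro conjI ballI)
  show "field K" by (rule fK)
  show "ring R1" by (rule R1_ring)
  show "module K R1" by (rule R1_module)
next
  fix c x y assume c: "c \<in> carrier K" and x: "x \<in> carrier R1" and y: "y \<in> carrier R1"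
  obtain xs where xs: "carr xs" "x = cls xs" by (rule R1_carrierE[OF x])
  obtain ys where ys: "carr ys" "y = cls ys" by (rule R1_carrierE[OF y])
  show "c \<odot>\<^bsub>R1\<^esub> (x \<otimes>\<^bsub>R1\<^esub> y) = c \<odot>\<^bsub>R1\<^esub> x \<otimes>\<^bsub>R1\<^esub> y"
    using xs ys c R1_smult_cls R1_mult_cls carr_smap carr_bcml smap_bcml1 by simp
  show "c \<odot>\<^bsub>R1\<^esub> (x \<otimes>\<^bsub>R1\<^esub> y) = x \<otimes>\<^bsub>R1\<^esub> (c \<odot>\<^bsub>R1\<^esub> y)"
    using xs ys c R1_smult_cls R1_mult_cls carr_smap carr_bcml smap_bcml2 by simp
qed

end

context bcs begin

lemma incl_cls: "incl a = cls (il a)" by (simp add: bc_incl_def il_def)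

lemma incl_carr: "a \<in> carrier R \<Longrightarrow> incl a \<in> carrier R1"
  unfolding incl_cls by (rule R1_cls_in[OF carr_il])

lemma il_lmult: "a \<in> carrier R \<Longrightarrow> b \<in> carrier R \<Longrightarrow> map (\<lambda>(c, d). (a \<otimes> c, d)) (il b) = il (a \<otimes> b)"
  by (auto simp: il_def m_assoc r_carr)

lemma incl_mult: "a \<in> carrier R \<Longrightarrow> b \<in> carrier R \<Longrightarrow> incl a \<otimes>\<^bsub>R1\<^esub> incl b = incl (a \<otimes> b)"
  unfolding incl_cls R1_mult_cls[OF carr_il carr_il] using cls_eq[OF LM[OF _ carr_il]] il_lmult by metis

lemma incl_add: "a \<in> carrier R \<Longrightarrow> b \<in> carrier R \<Longrightarrow> incl (a \<oplus> b) = incl a \<oplus>\<^bsub>R1\<^esub> incl b"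
proof -
  assume a: "a \<in> carrier R" and b: "b \<in> carrier R"
  have "TE (il (a \<oplus> b)) (il a @ il b)"
    unfolding il_def
  proof (rule TE_pw_split)
    fix i assume "i \<in> set [0..<n]"
    then have i: "i < n" by simp
    show "TE [((a \<oplus> b) \<otimes> r i, s i)] [(a \<otimes> r i, s i), (b \<otimes> r i, s i)]"
      using tens_eq.addl[of "a \<otimes> r i" R "b \<otimes> r i" "s i" S] a b r_carr[OF i] s_carr[OF i] by (simp add: l_distr)
  qed
  then show ?thesis unfolding incl_cls R1_add_cls[OF carr_il[OF a] carr_il[OF b]] by (rule cls_eq)
qed

lemma incl_one: "incl \<one> = \<one>\<^bsub>R1\<^esub>" unfolding incl_cls il_one R1_one ..

lemma incl_zero: "incl \<zero> = \<zero>\<^bsub>R1\<^esub>"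
proof -
  have "TE (il \<zero>) []" unfolding il_def
  proof (rule TE_pw_zero)
    fix i assume "i \<in> set [0..<n]"
    then have i: "i < n" by simp
    show "TE [(\<zero> \<otimes> r i, s i)] []" using tens_eq.zerol[of "s i" R S] r_carr[OF i] s_carr[OF i] by simp
  qed
  then show ?thesis unfolding incl_cls R1_zero by (rule cls_eq)
qed

lemma incl_neg: "a \<in> carrier R \<Longrightarrow> incl (\<ominus> a) = \<ominus>\<^bsub>R1\<^esub> incl a"
proof -
  assume a: "a \<in> carrier R"
  have "incl (\<ominus> a) \<oplus>\<^bsub>R1\<^esub> incl a = \<zero>\<^bsub>R1\<^esub>"
    using incl_add[of "\<ominus> a" a] a incl_zero by (simp add: l_neg)
  then show ?thesis using R1.minus_equality incl_carr a by (metis a_inv_closed)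
qed

lemma incl_smult: "c \<in> carrier K \<Longrightarrow> a \<in> carrier R \<Longrightarrow> incl (c \<odot> a) = c \<odot>\<^bsub>R1\<^esub> incl a"
proof -
  assume c: "c \<in> carrier K" and a: "a \<in> carrier R"
  have "smap c (il a) = il (c \<odot> a)" using c a by (auto simp: il_def kalg1 r_carr)
  then show ?thesis unfolding incl_cls R1_smult_cls[OF c carr_il[OF a]] by simp
qed

lemma lms_il: "a \<in> carrier R \<Longrightarrow> lmultsum R (il a) = inv\<^bsub>K\<^esub> lam \<odot> a"
proof -
  assume a: "a \<in> carrier R"
  have "lmultsum R (il a) = (\<Oplus>i\<in>set [0..<n]. (a \<otimes> r i) \<otimes> s i)"
    unfolding il_def by (rule lms_map_finsum) (use a r_carr s_carr in auto)
  also have "\<dots> = (\<Oplus>i\<in>{..<n}. a \<otimes> (r i \<otimes> s i))"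
    by (rule finsum_cong) (use a r_carr s_carr in \<open>auto simp: m_assoc atLeast0LessThan\<close>)
  also have "\<dots> = a \<otimes> (\<Oplus>i\<in>{..<n}. r i \<otimes> s i)"
    by (rule finsum_rdistr[symmetric]) (use a r_carr s_carr in auto)
  also have "\<dots> = inv\<^bsub>K\<^esub> lam \<odot> a" unfolding sumrs using kalg2[OF ilamK a one_closed] a by simp
  finally show ?thesis .
qed

lemma incl_inj: "a \<in> carrier R \<Longrightarrow> b \<in> carrier R \<Longrightarrow> incl a = incl b \<Longrightarrow> a = b"
proof -
  assume a: "a \<in> carrier R" and b: "b \<in> carrier R" and e: "incl a = incl b"
  have "TE (il a) (il b)" using e unfolding incl_cls using cls_eq_iff[OF carr_il[OF a]] by simp
  then have "lmultsum R (il a) = lmultsum R (il b)" by (rule lms_TE)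
  then have "inv\<^bsub>K\<^esub> lam \<odot> a = inv\<^bsub>K\<^esub> lam \<odot> b" using lms_il a b by simp
  then show "a = b" using lam_cancel[OF a] lam_cancel[OF b] by metis
qed

lemma ER_cls: "carr xs \<Longrightarrow> ER (cls xs) = lam \<odot> lmultsum R xs"
  unfolding bc_E_def using lms_TE[OF trep_TE] by metis

lemma ER_carr: "X \<in> carrier R1 \<Longrightarrow> ER X \<in> carrier R"
  by (erule R1_carrierE) (simp add: ER_cls lms_closed lamK)

lemma ER_add: "X \<in> carrier R1 \<Longrightarrow> Y \<in> carrier R1 \<Longrightarrow> ER (X \<oplus>\<^bsub>R1\<^esub> Y) = ER X \<oplus> ER Y"
proof -
  assume x: "X \<in> carrier R1" and y: "Y \<in> carrier R1"
  obtain xs where xs: "carr xs" "X = cls xs" by (rule R1_carrierE[OF x])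
  obtain ys where ys: "carr ys" "Y = cls ys" by (rule R1_carrierE[OF y])
  show ?thesis using xs ys by (simp add: R1_add_cls ER_cls lms_append RM.smult_r_distr lamK lms_closed)
qed

lemma ER_lmult: "a \<in> carrier R \<Longrightarrow> X \<in> carrier R1 \<Longrightarrow> ER (incl a \<otimes>\<^bsub>R1\<^esub> X) = a \<otimes> ER X"
proof -
  assume a: "a \<in> carrier R" and x: "X \<in> carrier R1"
  obtain xs where xs: "carr xs" "X = cls xs" by (rule R1_carrierE[OF x])
  have c: "carr (map (\<lambda>(c, d). (a \<otimes> c, d)) xs)" using xs(1) a by (induction xs) auto
  have "incl a \<otimes>\<^bsub>R1\<^esub> X = cls (map (\<lambda>(c, d). (a \<otimes> c, d)) xs)"
    unfolding xs(2) incl_cls R1_mult_cls[OF carr_il[OF a] xs(1)] by (rule cls_eq[OF LM[OF a xs(1)]])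
  then have "ER (incl a \<otimes>\<^bsub>R1\<^esub> X) = lam \<odot> (a \<otimes> lmultsum R xs)"
    using ER_cls[OF c] lms_lmult[OF xs(1) a] by simp
  also have "\<dots> = a \<otimes> (lam \<odot> lmultsum R xs)" using kalg2[OF lamK a lms_closed[OF xs(1)]] .
  finally show ?thesis using ER_cls[OF xs(1)] xs(2) by simp
qed

lemma ER_rmult: "a \<in> carrier R \<Longrightarrow> X \<in> carrier R1 \<Longrightarrow> ER (X \<otimes>\<^bsub>R1\<^esub> incl a) = ER X \<otimes> a"
proof -
  assume a: "a \<in> carrier R" and x: "X \<in> carrier R1"
  obtain xs where xs: "carr xs" "X = cls xs" by (rule R1_carrierE[OF x])
  have c: "carr (map (\<lambda>(c, d). (c, d \<otimes> a)) xs)" using xs(1) a by (induction xs) auto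
  have "X \<otimes>\<^bsub>R1\<^esub> incl a = cls (map (\<lambda>(c, d). (c, d \<otimes> a)) xs)"
    unfolding xs(2) incl_cls R1_mult_cls[OF xs(1) carr_il[OF a]] by (rule cls_eq[OF RM[OF a xs(1)]])
  then have "ER (X \<otimes>\<^bsub>R1\<^esub> incl a) = lam \<odot> (lmultsum R xs \<otimes> a)"
    using ER_cls[OF c] lms_rmult[OF xs(1) a] by simp
  also have "\<dots> = (lam \<odot> lmultsum R xs) \<otimes> a" using kalg1[OF lamK lms_closed[OF xs(1)] a] .
  finally show ?thesis using ER_cls[OF xs(1)] xs(2) by simp
qed

abbreviation "E1 \<equiv> \<lambda>X. incl (ER X)"

lemma E1_bimod: "bimodule_map R1 (incl ` carrier R) E1"
  unfolding bimodule_map_def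
proof (intro conjI ballI)
  fix m assume "m \<in> carrier R1" then show "E1 m \<in> incl ` carrier R" using ER_carr by blast
next
  fix m m' assume "m \<in> carrier R1" "m' \<in> carrier R1"
  then show "E1 (m \<oplus>\<^bsub>R1\<^esub> m') = E1 m \<oplus>\<^bsub>R1\<^esub> E1 m'" by (simp add: ER_add incl_add ER_carr)
next
  fix t m assume t: "t \<in> incl ` carrier R" and m: "m \<in> carrier R1"
  obtain a where a: "a \<in> carrier R" "t = incl a" using t by blast
  show "E1 (t \<otimes>\<^bsub>R1\<^esub> m) = t \<otimes>\<^bsub>R1\<^esub> E1 m" using a m by (simp add: ER_lmult incl_mult ER_carr)
  show "E1 (m \<otimes>\<^bsub>R1\<^esub> t) = E1 m \<otimes>\<^bsub>R1\<^esub> t" using a m by (simp add: ER_rmult incl_mult ER_carr)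
qed

end

context bcs begin

lemma FSC_list: "distinct l \<Longrightarrow> (\<And>i. i \<in> set l \<Longrightarrow> carr (L i)) \<Longrightarrow>
   finsum R1 (\<lambda>i. cls (L i)) (set l) = cls (concat (map L l))"
proof (induction l)
  case Nil then show ?case by (simp add: R1_zero)
next
  case (Cons a l)
  have c: "carr (concat (map L l))" using Cons.prems by simp
  have "finsum R1 (\<lambda>i. cls (L i)) (set (a # l)) = cls (L a) \<oplus>\<^bsub>R1\<^esub> finsum R1 (\<lambda>i. cls (L i)) (set l)"
    by (simp, rule R1.finsum_insert) (use Cons.prems R1_cls_in in auto)
  also have "\<dots> = cls (L a @ concat (map L l))"
    using Cons R1_add_cls[OF _ c, of "L a"] by simp
  finally show ?case by simp
qed

lemma FSC: "(\<And>i. i < n \<Longrightarrow> carr (L i)) \<Longrightarrow> finsum R1 (\<lambda>i. cls (L i)) {..<n} = cls (concat (map L [0..<n]))"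
  using FSC_list[of "[0..<n]" L] by (simp add: atLeast0LessThan)

lemma LU1: "c \<in> carrier R \<Longrightarrow> d \<in> carrier R \<Longrightarrow> TE (map (\<lambda>i. (r i \<otimes> ES (s i \<otimes> c), d)) [0..<n]) [(c, d)]"
proof -
  assume c: "c \<in> carrier R" and d: "d \<in> carrier R"
  have "TE [(\<Oplus>i\<in>{..<n}. r i \<otimes> ES (s i \<otimes> c), d)] (map (\<lambda>i. (r i \<otimes> ES (s i \<otimes> c), d)) [0..<n])"
    by (rule TE_sum_left_n) (use c d r_carr s_carr E_carr in auto)
  then show ?thesis using qb2[OF c] TE_sym by simp
qed

lemma RU1: "c \<in> carrier R \<Longrightarrow> d \<in> carrier R \<Longrightarrow> TE (map (\<lambda>i. (c \<otimes> ES (d \<otimes> r i), s i)) [0..<n]) [(c, d)]"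
proof -
  assume c: "c \<in> carrier R" and d: "d \<in> carrier R"
  have 1: "TE (map (\<lambda>i. (c \<otimes> ES (d \<otimes> r i), s i)) [0..<n]) (map (\<lambda>i. (c, ES (d \<otimes> r i) \<otimes> s i)) [0..<n])"
  proof (rule TE_map_pw)
    fix i assume "i \<in> set [0..<n]"
    then have i: "i < n" by simp
    show "TE [(c \<otimes> ES (d \<otimes> r i), s i)] [(c, ES (d \<otimes> r i) \<otimes> s i)]"
      by (rule tens_eq.bal) (use c d r_carr[OF i] s_carr[OF i] E_S in auto)
  qed
  have "TE [(c, \<Oplus>i\<in>{..<n}. ES (d \<otimes> r i) \<otimes> s i)] (map (\<lambda>i. (c, ES (d \<otimes> r i) \<otimes> s i)) [0..<n])"
    by (rule TE_sum_right_n) (use c d r_carr s_carr E_carr in auto)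
  then have "TE (map (\<lambda>i. (c, ES (d \<otimes> r i) \<otimes> s i)) [0..<n]) [(c, d)]" using qb1[OF d] TE_sym by simp
  then show ?thesis using TE_trans[OF 1] by simp
qed

lemma x1_cls: "x1 i = cls [(inv\<^bsub>K\<^esub> lam \<odot> r i, \<one>)]" by (simp add: bc_x_def)
lemma y1_cls: "y1 i = cls [(\<one>, s i)]" by (simp add: bc_y_def)
lemma carr_x1: "i < n \<Longrightarrow> carr [(inv\<^bsub>K\<^esub> lam \<odot> r i, \<one>)]" using ilamK r_carr by simp
lemma carr_y1: "i < n \<Longrightarrow> carr [(\<one>, s i)]" using s_carr by simp
lemma x1_carr: "i < n \<Longrightarrow> x1 i \<in> carrier R1" unfolding x1_cls by (rule R1_cls_in[OF carr_x1])
lemma y1_carr: "i < n \<Longrightarrow> y1 i \<in> carrier R1" unfolding y1_cls by (rule R1_cls_in[OF carr_y1])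

lemma lms_Q1_aux: "carr xs \<Longrightarrow> i < n \<Longrightarrow>
  lmultsum R (map (\<lambda>(a, b). (a \<otimes> ES (b \<otimes> (inv\<^bsub>K\<^esub> lam \<odot> r i)), \<one>)) xs)
   = inv\<^bsub>K\<^esub> lam \<odot> foldr (\<lambda>p acc. fst p \<otimes> ES (snd p \<otimes> r i) \<oplus> acc) xs \<zero>"
proof (induction xs)
  case Nil then show ?case using ilamK by simp
next
  case (Cons p xs)
  obtain a b where p: "p = (a, b)" "a \<in> carrier R" "b \<in> carrier R" using Cons.prems by (cases p) auto
  have ri: "r i \<in> carrier R" using r_carr Cons.prems by simp
  have f: "foldr (\<lambda>p acc. fst p \<otimes> ES (snd p \<otimes> r i) \<oplus> acc) xs \<zero> \<in> carrier R"
    by (rule foldr_sum_closed) (use Cons.prems ri E_carr in \<open>auto dest: carrD\<close>)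
  have "a \<otimes> ES (b \<otimes> (inv\<^bsub>K\<^esub> lam \<odot> r i)) = inv\<^bsub>K\<^esub> lam \<odot> (a \<otimes> ES (b \<otimes> r i))"
  proof -
    have "b \<otimes> (inv\<^bsub>K\<^esub> lam \<odot> r i) = inv\<^bsub>K\<^esub> lam \<odot> (b \<otimes> r i)" using kalg2[OF ilamK p(3) ri] by simp
    then have "ES (b \<otimes> (inv\<^bsub>K\<^esub> lam \<odot> r i)) = inv\<^bsub>K\<^esub> lam \<odot> ES (b \<otimes> r i)" using E_smult[OF ilamK] p ri by simp
    then show ?thesis using kalg2[OF ilamK p(2), of "ES (b \<otimes> r i)"] p ri E_carr by simp
  qed
  moreover have "a \<otimes> ES (b \<otimes> r i) \<in> carrier R" using p ri E_carr by simp
  ultimately show ?case using Cons p ri f ilamK by (simp add: RM.smult_r_distr)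
qed

lemma Q1: "X \<in> carrier R1 \<Longrightarrow> (\<Oplus>\<^bsub>R1\<^esub>i\<in>{..<n}. E1 (X \<otimes>\<^bsub>R1\<^esub> x1 i) \<otimes>\<^bsub>R1\<^esub> y1 i) = X"
proof -
  assume x: "X \<in> carrier R1"
  obtain xs where xs: "carr xs" "X = cls xs" by (rule R1_carrierE[OF x])
  define m where "m i = foldr (\<lambda>p acc. fst p \<otimes> ES (snd p \<otimes> r i) \<oplus> acc) xs \<zero>" for i
  have mc: "i < n \<Longrightarrow> m i \<in> carrier R" for i
    unfolding m_def by (rule foldr_sum_closed) (use xs r_carr E_carr in \<open>auto dest: carrD\<close>)
  have step: "E1 (X \<otimes>\<^bsub>R1\<^esub> x1 i) \<otimes>\<^bsub>R1\<^esub> y1 i = cls [(m i, s i)]" if i: "i < n" for i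
  proof -
    have c1: "carr (map (\<lambda>(a, b). (a \<otimes> ES (b \<otimes> (inv\<^bsub>K\<^esub> lam \<odot> r i)), \<one>)) xs)"
      using carr_bcml[OF xs(1) carr_x1[OF i]] by (simp add: bcml_single)
    have "X \<otimes>\<^bsub>R1\<^esub> x1 i = cls (map (\<lambda>(a, b). (a \<otimes> ES (b \<otimes> (inv\<^bsub>K\<^esub> lam \<odot> r i)), \<one>)) xs)"
      unfolding xs(2) x1_cls R1_mult_cls[OF xs(1) carr_x1[OF i]] bcml_single ..
    then have "ER (X \<otimes>\<^bsub>R1\<^esub> x1 i) = m i"
      using ER_cls[OF c1] lms_Q1_aux[OF xs(1) i] lam_cancel mc[OF i] unfolding m_def by simp
    then have "E1 (X \<otimes>\<^bsub>R1\<^esub> x1 i) \<otimes>\<^bsub>R1\<^esub> y1 i = cls (bcml (il (m i)) [(\<one>, s i)])"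
      unfolding y1_cls incl_cls using R1_mult_cls[OF carr_il[OF mc[OF i]] carr_y1[OF i]] by simp
    also have "\<dots> = cls [(m i, s i)]"
      using cls_eq[OF LM[OF mc[OF i] carr_y1[OF i]]] mc[OF i] by simp
    finally show ?thesis .
  qed
  have "(\<Oplus>\<^bsub>R1\<^esub>i\<in>{..<n}. E1 (X \<otimes>\<^bsub>R1\<^esub> x1 i) \<otimes>\<^bsub>R1\<^esub> y1 i) = (\<Oplus>\<^bsub>R1\<^esub>i\<in>{..<n}. cls [(m i, s i)])"
    by (rule R1.finsum_cong) (use step mc s_carr R1_cls_in in auto)
  also have "\<dots> = cls (concat (map (\<lambda>i. [(m i, s i)]) [0..<n]))"
    by (rule FSC) (use mc s_carr in auto)
  also have "\<dots> = cls xs"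
  proof (rule cls_eq)
    let ?g = "\<lambda>i p. (fst p \<otimes> ES (snd p \<otimes> r i), s i)"
    have 1: "TE (concat (map (\<lambda>i. [(m i, s i)]) [0..<n])) (concat (map (\<lambda>i. map (?g i) xs) [0..<n]))"
    proof (rule TE_concat_pw)
      fix i assume "i \<in> set [0..<n]"
      then have i: "i < n" by simp
      show "TE [(m i, s i)] (map (?g i) xs)" unfolding m_def
        by (rule TE_foldr_left) (use xs r_carr[OF i] s_carr[OF i] E_carr in \<open>auto dest: carrD\<close>)
    qed
    have 2: "TE (concat (map (\<lambda>i. map (?g i) xs) [0..<n])) (concat (map (\<lambda>p. map (\<lambda>i. ?g i p) [0..<n]) xs))"
      by (rule TE_dconcat) (use 1 TE_carr in blast)
    have 3: "TE (concat (map (\<lambda>p. map (\<lambda>i. ?g i p) [0..<n]) xs)) (concat (map (\<lambda>p. [p]) xs))"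
    proof (rule TE_concat_pw)
      fix p assume pin: "p \<in> set xs"
      obtain a b where p: "p = (a, b)" "a \<in> carrier R" "b \<in> carrier R" by (rule carr_mem[OF xs(1) pin])
      show "TE (map (\<lambda>i. ?g i p) [0..<n]) [p]" using RU1[OF p(2,3)] p(1) by simp
    qed
    show "TE (concat (map (\<lambda>i. [(m i, s i)]) [0..<n])) xs" using TE_trans[OF TE_trans[OF 1 2] 3] by simp
  qed
  finally show ?thesis using xs(2) by simp
qed

lemma lms_Q2_aux: "carr xs \<Longrightarrow> i < n \<Longrightarrow>
  lmultsum R (map (\<lambda>(c, d). (\<one> \<otimes> ES (s i \<otimes> c), d)) xs) = foldr (\<lambda>p acc. ES (s i \<otimes> fst p) \<otimes> snd p \<oplus> acc) xs \<zero>"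
proof (induction xs)
  case Nil then show ?case by simp
next
  case (Cons p xs)
  obtain a b where p: "p = (a, b)" "a \<in> carrier R" "b \<in> carrier R" using Cons.prems by (cases p) auto
  then show ?case using Cons s_carr E_carr by simp
qed

lemma Q2: "X \<in> carrier R1 \<Longrightarrow> (\<Oplus>\<^bsub>R1\<^esub>i\<in>{..<n}. x1 i \<otimes>\<^bsub>R1\<^esub> E1 (y1 i \<otimes>\<^bsub>R1\<^esub> X)) = X"
proof -
  assume x: "X \<in> carrier R1"
  obtain xs where xs: "carr xs" "X = cls xs" by (rule R1_carrierE[OF x])
  define w where "w i = foldr (\<lambda>p acc. ES (s i \<otimes> fst p) \<otimes> snd p \<oplus> acc) xs \<zero>" for i
  have wc: "i < n \<Longrightarrow> w i \<in> carrier R" for i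
    unfolding w_def by (rule foldr_sum_closed) (use xs s_carr E_carr in \<open>auto dest: carrD\<close>)
  have step: "x1 i \<otimes>\<^bsub>R1\<^esub> E1 (y1 i \<otimes>\<^bsub>R1\<^esub> X) = cls [(r i, w i)]" if i: "i < n" for i
  proof -
    have c1: "carr (map (\<lambda>(c, d). (\<one> \<otimes> ES (s i \<otimes> c), d)) xs)"
      using carr_bcml[OF carr_y1[OF i] xs(1)] by simp
    have "y1 i \<otimes>\<^bsub>R1\<^esub> X = cls (map (\<lambda>(c, d). (\<one> \<otimes> ES (s i \<otimes> c), d)) xs)"
      unfolding xs(2) y1_cls R1_mult_cls[OF carr_y1[OF i] xs(1)] by simp
    then have "ER (y1 i \<otimes>\<^bsub>R1\<^esub> X) = lam \<odot> w i"
      using ER_cls[OF c1] lms_Q2_aux[OF xs(1) i] unfolding w_def by simp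
    then have "x1 i \<otimes>\<^bsub>R1\<^esub> E1 (y1 i \<otimes>\<^bsub>R1\<^esub> X) = cls (bcml [(inv\<^bsub>K\<^esub> lam \<odot> r i, \<one>)] (il (lam \<odot> w i)))"
      unfolding x1_cls incl_cls using R1_mult_cls[OF carr_x1[OF i] carr_il] wc[OF i] lamK by simp
    also have "\<dots> = cls [(inv\<^bsub>K\<^esub> lam \<odot> r i, lam \<odot> w i)]"
      using cls_eq[OF RM[OF _ carr_x1[OF i], of "lam \<odot> w i"]] wc[OF i] lamK by simp
    also have "\<dots> = cls [(r i, w i)]"
    proof -
      have "TE [(lam \<odot> (inv\<^bsub>K\<^esub> lam \<odot> r i), w i)] [(inv\<^bsub>K\<^esub> lam \<odot> r i, lam \<odot> w i)]"
        by (rule TE_scal) (use lamK ilamK r_carr[OF i] wc[OF i] in auto)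
      then show ?thesis using lam_cancel[OF r_carr[OF i]] cls_eq TE_sym by metis
    qed
    finally show ?thesis .
  qed
  have "(\<Oplus>\<^bsub>R1\<^esub>i\<in>{..<n}. x1 i \<otimes>\<^bsub>R1\<^esub> E1 (y1 i \<otimes>\<^bsub>R1\<^esub> X)) = (\<Oplus>\<^bsub>R1\<^esub>i\<in>{..<n}. cls [(r i, w i)])"
    by (rule R1.finsum_cong) (use step wc r_carr R1_cls_in in auto)
  also have "\<dots> = cls (concat (map (\<lambda>i. [(r i, w i)]) [0..<n]))"
    by (rule FSC) (use wc r_carr in auto)
  also have "\<dots> = cls xs"
  proof (rule cls_eq)
    let ?g = "\<lambda>i p. (r i, ES (s i \<otimes> fst p) \<otimes> snd p)"
    let ?h = "\<lambda>i p. (r i \<otimes> ES (s i \<otimes> fst p), snd p)"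
    have 1: "TE (concat (map (\<lambda>i. [(r i, w i)]) [0..<n])) (concat (map (\<lambda>i. map (?h i) xs) [0..<n]))"
    proof (rule TE_concat_pw)
      fix i assume "i \<in> set [0..<n]"
      then have i: "i < n" by simp
      have a: "TE [(r i, w i)] (map (?g i) xs)" unfolding w_def
        by (rule TE_foldr_right) (use xs r_carr[OF i] s_carr[OF i] E_carr in \<open>auto dest: carrD\<close>)
      have b: "TE (map (?h i) xs) (map (?g i) xs)"
      proof (rule TE_map_pw)
        fix p assume pin: "p \<in> set xs"
        obtain c d where p: "p = (c, d)" "c \<in> carrier R" "d \<in> carrier R" by (rule carr_mem[OF xs(1) pin])
        show "TE [?h i p] [?g i p]" using p
          by (simp, intro tens_eq.bal) (use r_carr[OF i] s_carr[OF i] E_S in auto)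
      qed
      show "TE [(r i, w i)] (map (?h i) xs)" by (rule TE_trans[OF a TE_sym[OF b]])
    qed
    have 2: "TE (concat (map (\<lambda>i. map (?h i) xs) [0..<n])) (concat (map (\<lambda>p. map (\<lambda>i. ?h i p) [0..<n]) xs))"
      by (rule TE_dconcat) (use 1 TE_carr in blast)
    have 3: "TE (concat (map (\<lambda>p. map (\<lambda>i. ?h i p) [0..<n]) xs)) (concat (map (\<lambda>p. [p]) xs))"
    proof (rule TE_concat_pw)
      fix p assume pin: "p \<in> set xs"
      obtain a b where p: "p = (a, b)" "a \<in> carrier R" "b \<in> carrier R" by (rule carr_mem[OF xs(1) pin])
      show "TE (map (\<lambda>i. ?h i p) [0..<n]) [p]" using LU1[OF p(2,3)] p(1) by simp
    qed
    show "TE (concat (map (\<lambda>i. [(r i, w i)]) [0..<n])) xs" using TE_trans[OF TE_trans[OF 1 2] 3] by simp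
  qed
  finally show ?thesis using xs(2) by simp
qed

lemma R1_qb: "quasi_basis R1 E1 x1 y1 n"
  unfolding quasi_basis_def using x1_carr y1_carr Q1 Q2 by blast

lemma E1_one: "E1 \<one>\<^bsub>R1\<^esub> = \<one>\<^bsub>R1\<^esub>"
proof -
  have "lmultsum R onel = (\<Oplus>i\<in>set [0..<n]. r i \<otimes> s i)"
    by (rule lms_map_finsum) (use r_carr s_carr in auto)
  then have "lmultsum R onel = inv\<^bsub>K\<^esub> lam \<odot> \<one>" using sumrs by (simp add: atLeast0LessThan)
  then have "ER \<one>\<^bsub>R1\<^esub> = \<one>" unfolding R1_one using ER_cls[OF carr_onel] lam_cancel by simp
  then show ?thesis using incl_one by simp
qed

lemma R1_sum_xy: "(\<Oplus>\<^bsub>R1\<^esub>i\<in>{..<n}. x1 i \<otimes>\<^bsub>R1\<^esub> y1 i) = inv\<^bsub>K\<^esub> lam \<odot>\<^bsub>R1\<^esub> \<one>\<^bsub>R1\<^esub>"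
proof -
  have st: "x1 i \<otimes>\<^bsub>R1\<^esub> y1 i = cls [(inv\<^bsub>K\<^esub> lam \<odot> r i, s i)]" if i: "i < n" for i
    unfolding x1_cls y1_cls R1_mult_cls[OF carr_x1[OF i] carr_y1[OF i]] using E1 ilamK r_carr[OF i] by simp
  have "(\<Oplus>\<^bsub>R1\<^esub>i\<in>{..<n}. x1 i \<otimes>\<^bsub>R1\<^esub> y1 i) = (\<Oplus>\<^bsub>R1\<^esub>i\<in>{..<n}. cls [(inv\<^bsub>K\<^esub> lam \<odot> r i, s i)])"
    by (rule R1.finsum_cong) (use st ilamK r_carr s_carr R1_cls_in in auto)
  also have "\<dots> = cls (concat (map (\<lambda>i. [(inv\<^bsub>K\<^esub> lam \<odot> r i, s i)]) [0..<n]))"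
    by (rule FSC) (use ilamK r_carr s_carr in auto)
  also have "\<dots> = cls (smap (inv\<^bsub>K\<^esub> lam) onel)" by (simp add: map_as_concat[symmetric] comp_def)
  also have "\<dots> = inv\<^bsub>K\<^esub> lam \<odot>\<^bsub>R1\<^esub> \<one>\<^bsub>R1\<^esub>" unfolding R1_one by (rule R1_smult_cls[symmetric, OF ilamK carr_onel])
  finally show ?thesis .
qed

lemma R1_subalg: "k_subalgebra K (incl ` carrier R) R1"
  unfolding k_subalgebra_def
proof (intro conjI ballI)
  show "subring (incl ` carrier R) R1"
  proof (rule R1.subringI)
    show "incl ` carrier R \<subseteq> carrier R1" using incl_carr by auto
    show "\<one>\<^bsub>R1\<^esub> \<in> incl ` carrier R" using incl_one by (metis image_eqI one_closed)
  next
    fix h assume "h \<in> incl ` carrier R" then show "\<ominus>\<^bsub>R1\<^esub> h \<in> incl ` carrier R" using incl_neg by auto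
  next
    fix h1 h2 assume h: "h1 \<in> incl ` carrier R" "h2 \<in> incl ` carrier R"
    then obtain a b where ab: "a \<in> carrier R" "b \<in> carrier R" "h1 = incl a" "h2 = incl b" by blast
    have "h1 \<otimes>\<^bsub>R1\<^esub> h2 = incl (a \<otimes> b)" using ab incl_mult by simp
    then show "h1 \<otimes>\<^bsub>R1\<^esub> h2 \<in> incl ` carrier R" using ab by auto
    have "h1 \<oplus>\<^bsub>R1\<^esub> h2 = incl (a \<oplus> b)" using ab incl_add by simp
    then show "h1 \<oplus>\<^bsub>R1\<^esub> h2 \<in> incl ` carrier R" using ab by auto
  qed
next
  fix c x assume "c \<in> carrier K" "x \<in> incl ` carrier R"
  then show "c \<odot>\<^bsub>R1\<^esub> x \<in> incl ` carrier R" using incl_smult by auto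
qed

end

lemma kalg_scal_comm:
  assumes "k_algebra K D" "c \<in> carrier K" "y \<in> carrier D"
  shows "(c \<odot>\<^bsub>D\<^esub> \<one>\<^bsub>D\<^esub>) \<otimes>\<^bsub>D\<^esub> y = y \<otimes>\<^bsub>D\<^esub> (c \<odot>\<^bsub>D\<^esub> \<one>\<^bsub>D\<^esub>)"
proof -
  have r: "ring D" using assms(1) unfolding k_algebra_def by auto
  interpret D: ring D by (rule r)
  have o: "\<one>\<^bsub>D\<^esub> \<in> carrier D" by simp
  have 1: "c \<odot>\<^bsub>D\<^esub> (\<one>\<^bsub>D\<^esub> \<otimes>\<^bsub>D\<^esub> y) = (c \<odot>\<^bsub>D\<^esub> \<one>\<^bsub>D\<^esub>) \<otimes>\<^bsub>D\<^esub> y"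
    using assms o unfolding k_algebra_def by blast
  have 2: "c \<odot>\<^bsub>D\<^esub> (y \<otimes>\<^bsub>D\<^esub> \<one>\<^bsub>D\<^esub>) = y \<otimes>\<^bsub>D\<^esub> (c \<odot>\<^bsub>D\<^esub> \<one>\<^bsub>D\<^esub>)"
    using assms o unfolding k_algebra_def by blast
  show ?thesis using 1 2 assms(3) by simp
qed

context bcs begin

abbreviation "e1 \<equiv> cls [(\<one>, \<one>)]"

lemma carr_u1: "u \<in> carrier R \<Longrightarrow> carr [(u, \<one>)]" by simp

lemma incl_e1: "u \<in> carrier R \<Longrightarrow> incl u \<otimes>\<^bsub>R1\<^esub> e1 = cls [(u, \<one>)]"
  unfolding incl_cls using R1_mult_cls[OF carr_il carr_u1[OF one_closed]] cls_eq[OF LM[OF _ carr_u1[OF one_closed]]]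
  by simp

lemma incl_u1: "u \<in> carrier R \<Longrightarrow> v \<in> carrier R \<Longrightarrow> incl u \<otimes>\<^bsub>R1\<^esub> cls [(v, \<one>)] = cls [(u \<otimes> v, \<one>)]"
  unfolding incl_cls using R1_mult_cls[OF carr_il carr_u1] cls_eq[OF LM[OF _ carr_u1]]
  by simp

lemma u1_incl: "t \<in> S \<Longrightarrow> v \<in> carrier R \<Longrightarrow> cls [(v, \<one>)] \<otimes>\<^bsub>R1\<^esub> incl t = cls [(v \<otimes> t, \<one>)]"
proof -
  assume t: "t \<in> S" and v: "v \<in> carrier R"
  have tc: "t \<in> carrier R" using S_carr t by simp
  have "cls [(v, \<one>)] \<otimes>\<^bsub>R1\<^esub> incl t = cls [(v, t)]"
    unfolding incl_cls using R1_mult_cls[OF carr_u1[OF v] carr_il[OF tc]] cls_eq[OF RM[OF tc carr_u1[OF v]]] tc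
    by simp
  also have "\<dots> = cls [(v \<otimes> t, \<one>)]"
    using cls_eq[OF tens_eq.bal[of v R \<one> t S]] t v tc by simp
  finally show ?thesis .
qed

lemma x1_e1: "i < n \<Longrightarrow> x1 i = incl (inv\<^bsub>K\<^esub> lam \<odot> r i) \<otimes>\<^bsub>R1\<^esub> e1"
  unfolding x1_cls using incl_e1 ilamK r_carr by simp

lemma R1_irr: "centralizer R1 (incl ` carrier R) = scalars K R1"
proof
  show "scalars K R1 \<subseteq> centralizer R1 (incl ` carrier R)"
  proof
    fix x assume "x \<in> scalars K R1"
    then obtain c where c: "c \<in> carrier K" "x = c \<odot>\<^bsub>R1\<^esub> \<one>\<^bsub>R1\<^esub>" unfolding scalars_def by blast
    have xc: "x \<in> carrier R1" using c module.smult_closed[OF R1_module] R1.one_closed by simp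
    show "x \<in> centralizer R1 (incl ` carrier R)"
      unfolding centralizer_def using xc c kalg_scal_comm[OF R1_kalg c(1)] incl_carr by auto
  qed
next
  show "centralizer R1 (incl ` carrier R) \<subseteq> scalars K R1"
  proof
    fix X assume X: "X \<in> centralizer R1 (incl ` carrier R)"
    then have x: "X \<in> carrier R1" and com: "\<And>a. a \<in> carrier R \<Longrightarrow> X \<otimes>\<^bsub>R1\<^esub> incl a = incl a \<otimes>\<^bsub>R1\<^esub> X"
      unfolding centralizer_def by auto
    obtain xs where xs: "carr xs" "X = cls xs" by (rule R1_carrierE[OF x])
    define w where "w = foldr (\<lambda>p acc. fst p \<otimes> ES (snd p) \<oplus> acc) xs \<zero>"
    have wc: "w \<in> carrier R" unfolding w_def
      by (rule foldr_sum_closed) (use xs E_carr in \<open>auto dest: carrD\<close>)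
    have e1c: "e1 \<in> carrier R1" using R1_cls_in[OF carr_u1[OF one_closed]] .
    have Xe: "X \<otimes>\<^bsub>R1\<^esub> e1 = cls [(w, \<one>)]"
    proof -
      have "X \<otimes>\<^bsub>R1\<^esub> e1 = cls (map (\<lambda>(a, b). (a \<otimes> ES (b \<otimes> \<one>), \<one>)) xs)"
        unfolding xs(2) R1_mult_cls[OF xs(1) carr_u1[OF one_closed]] bcml_single ..
      also have "map (\<lambda>(a, b). (a \<otimes> ES (b \<otimes> \<one>), \<one>)) xs = map (\<lambda>p. (fst p \<otimes> ES (snd p), \<one>)) xs"
        using xs(1) by (induction xs) auto
      also have "cls (map (\<lambda>p. (fst p \<otimes> ES (snd p), \<one>)) xs) = cls [(w, \<one>)]"
        unfolding w_def
        by (rule cls_eq[OF TE_sym[OF TE_foldr_left]]) (use xs E_carr in \<open>auto dest: carrD\<close>)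
      finally show ?thesis .
    qed
    have wcent: "w \<in> centralizer R S"
      unfolding centralizer_def
    proof (intro CollectI conjI ballI wc)
      fix t assume t: "t \<in> S"
      have tc: "t \<in> carrier R" using S_carr t by simp
      have "incl t \<otimes>\<^bsub>R1\<^esub> e1 = e1 \<otimes>\<^bsub>R1\<^esub> incl t"
        using incl_e1[OF tc] u1_incl[OF t one_closed] tc by simp
      note ic = incl_carr[OF tc]
      have "incl t \<otimes>\<^bsub>R1\<^esub> (X \<otimes>\<^bsub>R1\<^esub> e1) = (incl t \<otimes>\<^bsub>R1\<^esub> X) \<otimes>\<^bsub>R1\<^esub> e1"
        using x e1c ic by (simp add: R1.m_assoc)
      also have "\<dots> = (X \<otimes>\<^bsub>R1\<^esub> incl t) \<otimes>\<^bsub>R1\<^esub> e1" using com[OF tc] by simp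
      also have "\<dots> = X \<otimes>\<^bsub>R1\<^esub> (incl t \<otimes>\<^bsub>R1\<^esub> e1)" using x e1c ic by (simp add: R1.m_assoc)
      also have "\<dots> = X \<otimes>\<^bsub>R1\<^esub> (e1 \<otimes>\<^bsub>R1\<^esub> incl t)" using \<open>incl t \<otimes>\<^bsub>R1\<^esub> e1 = e1 \<otimes>\<^bsub>R1\<^esub> incl t\<close> by simp
      also have "\<dots> = (X \<otimes>\<^bsub>R1\<^esub> e1) \<otimes>\<^bsub>R1\<^esub> incl t" using x e1c ic by (simp add: R1.m_assoc)
      finally have "incl t \<otimes>\<^bsub>R1\<^esub> (X \<otimes>\<^bsub>R1\<^esub> e1) = (X \<otimes>\<^bsub>R1\<^esub> e1) \<otimes>\<^bsub>R1\<^esub> incl t" .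
      then have "cls [(t \<otimes> w, \<one>)] = cls [(w \<otimes> t, \<one>)]"
        unfolding Xe using incl_u1[OF tc wc] u1_incl[OF t wc] by simp
      then have "TE [(t \<otimes> w, \<one>)] [(w \<otimes> t, \<one>)]" using cls_eq_iff tc wc by simp
      then have "lmultsum R [(t \<otimes> w, \<one>)] = lmultsum R [(w \<otimes> t, \<one>)]" by (rule lms_TE)
      then show "w \<otimes> t = t \<otimes> w" using tc wc by simp
    qed
    then obtain c where c: "c \<in> carrier K" "w = c \<odot> \<one>" using irr unfolding scalars_def by auto
    have step: "E1 (X \<otimes>\<^bsub>R1\<^esub> x1 i) \<otimes>\<^bsub>R1\<^esub> y1 i = cls [(c \<odot> r i, s i)]" if i: "i < n" for i
    proof -
      let ?u = "inv\<^bsub>K\<^esub> lam \<odot> r i"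
      have uc: "?u \<in> carrier R" using ilamK r_carr[OF i] by simp
      have "X \<otimes>\<^bsub>R1\<^esub> x1 i = incl ?u \<otimes>\<^bsub>R1\<^esub> (X \<otimes>\<^bsub>R1\<^esub> e1)"
        unfolding x1_e1[OF i] using com[OF uc] x e1c incl_carr[OF uc]
        by (simp add: R1.m_assoc[symmetric])
      also have "\<dots> = cls [(?u \<otimes> w, \<one>)]" unfolding Xe by (rule incl_u1[OF uc wc])
      finally have "ER (X \<otimes>\<^bsub>R1\<^esub> x1 i) = lam \<odot> (?u \<otimes> w)"
        using ER_cls[OF carr_u1, of "?u \<otimes> w"] uc wc by simp
      also have "\<dots> = r i \<otimes> w"
        using kalg1[OF ilamK r_carr[OF i] wc, symmetric] lam_cancel[of "r i \<otimes> w"] r_carr[OF i] wc by simp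
      also have "\<dots> = c \<odot> r i" using c kalg2[OF c(1) r_carr[OF i] one_closed] r_carr[OF i] by simp
      finally have "E1 (X \<otimes>\<^bsub>R1\<^esub> x1 i) \<otimes>\<^bsub>R1\<^esub> y1 i = incl (c \<odot> r i) \<otimes>\<^bsub>R1\<^esub> cls [(\<one>, s i)]"
        unfolding y1_cls by simp
      also have "\<dots> = cls [(c \<odot> r i, s i)]"
        unfolding incl_cls using R1_mult_cls[OF carr_il carr_y1[OF i]] cls_eq[OF LM[OF _ carr_y1[OF i]]] c r_carr[OF i]
        by simp
      finally show ?thesis .
    qed
    have "X = (\<Oplus>\<^bsub>R1\<^esub>i\<in>{..<n}. E1 (X \<otimes>\<^bsub>R1\<^esub> x1 i) \<otimes>\<^bsub>R1\<^esub> y1 i)" using Q1[OF x] by simp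
    also have "\<dots> = (\<Oplus>\<^bsub>R1\<^esub>i\<in>{..<n}. cls [(c \<odot> r i, s i)])"
      by (rule R1.finsum_cong) (use step c r_carr s_carr R1_cls_in in auto)
    also have "\<dots> = cls (concat (map (\<lambda>i. [(c \<odot> r i, s i)]) [0..<n]))"
      by (rule FSC) (use c r_carr s_carr in auto)
    also have "\<dots> = cls (smap c onel)" by (simp add: map_as_concat[symmetric] comp_def)
    also have "\<dots> = c \<odot>\<^bsub>R1\<^esub> \<one>\<^bsub>R1\<^esub>" unfolding R1_one by (rule R1_smult_cls[symmetric, OF c(1) carr_onel])
    finally show "X \<in> scalars K R1" unfolding scalars_def using c by blast
  qed
qed

lemma bcs_R1: "bcs K R1 (incl ` carrier R) E1 x1 y1 n lam"
  by (rule bcs.intro[OF fK R1_kalg R1_subalg R1_irr E1_bimod R1_qb E1_one lamK lam0 R1_sum_xy])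

lemma E1_cent: "a \<in> centralizer R1 (incl ` S) \<Longrightarrow> E1 a \<in> scalars K R1"
proof -
  assume a: "a \<in> centralizer R1 (incl ` S)"
  then have ac: "a \<in> carrier R1" and com: "\<And>t. t \<in> S \<Longrightarrow> a \<otimes>\<^bsub>R1\<^esub> incl t = incl t \<otimes>\<^bsub>R1\<^esub> a"
    unfolding centralizer_def by auto
  let ?w = "ER a"
  have wc: "?w \<in> carrier R" using ER_carr[OF ac] .
  have "?w \<in> centralizer R S"
    unfolding centralizer_def
  proof (intro CollectI conjI ballI wc)
    fix t assume t: "t \<in> S"
    have tc: "t \<in> carrier R" using S_carr t by simp
    have "t \<otimes> ?w = ER (incl t \<otimes>\<^bsub>R1\<^esub> a)" using ER_lmult[OF tc ac] by simp
    also have "\<dots> = ER (a \<otimes>\<^bsub>R1\<^esub> incl t)" using com[OF t] by simp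
    also have "\<dots> = ?w \<otimes> t" using ER_rmult[OF tc ac] by simp
    finally show "?w \<otimes> t = t \<otimes> ?w" by simp
  qed
  then obtain c where c: "c \<in> carrier K" "?w = c \<odot> \<one>" using irr unfolding scalars_def by auto
  have "E1 a = c \<odot>\<^bsub>R1\<^esub> \<one>\<^bsub>R1\<^esub>" using c incl_smult[OF c(1) one_closed] incl_one by simp
  then show ?thesis unfolding scalars_def using c by blast
qed

end

lemma (in abelian_monoid) finsum_swap:
  assumes "finite A" "finite B" "\<And>i j. i \<in> A \<Longrightarrow> j \<in> B \<Longrightarrow> g i j \<in> carrier G"
  shows "(\<Oplus>i\<in>A. \<Oplus>j\<in>B. g i j) = (\<Oplus>j\<in>B. \<Oplus>i\<in>A. g i j)"
  using assms
proof (induction A rule: finite_induct)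
  case empty then show ?case by (simp add: finsum_zero)
next
  case (insert a A)
  have "(\<Oplus>i\<in>insert a A. \<Oplus>j\<in>B. g i j) = (\<Oplus>j\<in>B. g a j) \<oplus> (\<Oplus>i\<in>A. \<Oplus>j\<in>B. g i j)"
    by (rule finsum_insert) (use insert in \<open>auto simp: Pi_def intro: finsum_closed\<close>)
  also have "\<dots> = (\<Oplus>j\<in>B. g a j) \<oplus> (\<Oplus>j\<in>B. \<Oplus>i\<in>A. g i j)" using insert by simp
  also have "\<dots> = (\<Oplus>j\<in>B. g a j \<oplus> (\<Oplus>i\<in>A. g i j))"
    by (rule finsum_addf[symmetric]) (use insert in \<open>auto simp: Pi_def intro: finsum_closed\<close>)
  also have "\<dots> = (\<Oplus>j\<in>B. \<Oplus>i\<in>insert a A. g i j)"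
    by (rule finsum_cong') (use insert in \<open>auto simp: Pi_def intro!: finsum_closed finsum_insert[symmetric]\<close>)
  finally show ?case .
qed

locale sepctx =
  fixes K :: "'k ring" and T :: "('k,'b) module" (structure) and R' S' :: "'b set" and E' :: "'b \<Rightarrow> 'b"
    and x1 y1 :: "nat \<Rightarrow> 'b" and n :: nat and lam :: 'k
  assumes fK: "field K" and kT: "k_algebra K T" and subR: "subring R' T" and SR: "S' \<subseteq> R'"
    and bm: "bimodule_map T R' E'" and qb: "quasi_basis T E' x1 y1 n"
    and lamK: "lam \<in> carrier K" and lam0: "lam \<noteq> \<zero>\<^bsub>K\<^esub>"
    and sumxy: "(\<Oplus>i\<in>{..<n}. x1 i \<otimes> y1 i) = inv\<^bsub>K\<^esub> lam \<odot> \<one>"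
    and irrE: "\<And>a. a \<in> centralizer T S' \<Longrightarrow> E' a \<in> scalars K T"
    and fr: "free_right_with_basis_in T R' (centralizer T S')"
begin

lemma ringT: "ring T" using kT unfolding k_algebra_def by auto
sublocale ring T by (rule ringT)
sublocale RM: module K T using kT unfolding k_algebra_def by auto
sublocale KF: field K by (rule fK)

abbreviation "A \<equiv> centralizer T S'"

lemma R'_carr: "x \<in> R' \<Longrightarrow> x \<in> carrier T" using subringE(1)[OF subR] by auto
lemma R'_mult: "x \<in> R' \<Longrightarrow> y \<in> R' \<Longrightarrow> x \<otimes> y \<in> R'" using subringE(6)[OF subR] by auto
lemma R'_add: "x \<in> R' \<Longrightarrow> y \<in> R' \<Longrightarrow> x \<oplus> y \<in> R'" using subringE(7)[OF subR] by auto
lemma R'_zero: "\<zero> \<in> R'" using subringE(2)[OF subR] by auto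
lemma R'_finsum: "finite I \<Longrightarrow> (\<And>i. i \<in> I \<Longrightarrow> f i \<in> R') \<Longrightarrow> finsum T f I \<in> R'"
proof (induction I rule: finite_induct)
  case empty then show ?case using R'_zero by simp
next
  case (insert a I)
  then show ?case using R'_add R'_carr by (simp add: finsum_insert Pi_def)
qed

lemma E_R: "m \<in> carrier T \<Longrightarrow> E' m \<in> R'" using bm unfolding bimodule_map_def by auto
lemma E_carr: "m \<in> carrier T \<Longrightarrow> E' m \<in> carrier T" using E_R R'_carr by auto
lemma E_add: "m \<in> carrier T \<Longrightarrow> m' \<in> carrier T \<Longrightarrow> E' (m \<oplus> m') = E' m \<oplus> E' m'"
  using bm unfolding bimodule_map_def by auto
lemma E_lmult: "t \<in> R' \<Longrightarrow> m \<in> carrier T \<Longrightarrow> E' (t \<otimes> m) = t \<otimes> E' m"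
  using bm unfolding bimodule_map_def by auto
lemma E_rmult: "t \<in> R' \<Longrightarrow> m \<in> carrier T \<Longrightarrow> E' (m \<otimes> t) = E' m \<otimes> t"
  using bm unfolding bimodule_map_def by auto
lemma E_zero: "E' \<zero> = \<zero>" using E_lmult[OF R'_zero, of \<zero>] E_carr[of \<zero>] by simp
lemma E_finsum: "finite I \<Longrightarrow> (\<And>i. i \<in> I \<Longrightarrow> f i \<in> carrier T) \<Longrightarrow> E' (finsum T f I) = (\<Oplus>i\<in>I. E' (f i))"
proof (induction I rule: finite_induct)
  case empty then show ?case using E_zero by simp
next
  case (insert a I)
  then show ?case by (simp add: finsum_insert Pi_def E_add E_carr)
qed

lemma x1_carr: "i < n \<Longrightarrow> x1 i \<in> carrier T" using qb unfolding quasi_basis_def by auto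
lemma y1_carr: "i < n \<Longrightarrow> y1 i \<in> carrier T" using qb unfolding quasi_basis_def by auto
lemma Q1: "m \<in> carrier T \<Longrightarrow> (\<Oplus>i\<in>{..<n}. E' (m \<otimes> x1 i) \<otimes> y1 i) = m"
  using qb unfolding quasi_basis_def by auto
lemma Q2: "m \<in> carrier T \<Longrightarrow> (\<Oplus>i\<in>{..<n}. x1 i \<otimes> E' (y1 i \<otimes> m)) = m"
  using qb unfolding quasi_basis_def by auto

lemma A_carr: "a \<in> A \<Longrightarrow> a \<in> carrier T" unfolding centralizer_def by auto
lemma A_comm: "a \<in> A \<Longrightarrow> t \<in> S' \<Longrightarrow> a \<otimes> t = t \<otimes> a" unfolding centralizer_def by auto

definition "Bs = (SOME Bs. Bs \<subseteq> A \<and> (\<forall>X\<in>carrier T. \<exists>!f. f \<in> Bs \<rightarrow>\<^sub>E R' \<and> finite {b\<in>Bs. f b \<noteq> \<zero>} \<and>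
            X = (\<Oplus>b\<in>{b\<in>Bs. f b \<noteq> \<zero>}. b \<otimes> f b)))"

lemma Bs_props: "Bs \<subseteq> A" "\<And>X. X \<in> carrier T \<Longrightarrow> \<exists>!f. f \<in> Bs \<rightarrow>\<^sub>E R' \<and> finite {b\<in>Bs. f b \<noteq> \<zero>} \<and>
            X = (\<Oplus>b\<in>{b\<in>Bs. f b \<noteq> \<zero>}. b \<otimes> f b)"
proof -
  have "\<exists>Bs. Bs \<subseteq> A \<and> (\<forall>X\<in>carrier T. \<exists>!f. f \<in> Bs \<rightarrow>\<^sub>E R' \<and> finite {b\<in>Bs. f b \<noteq> \<zero>} \<and>
            X = (\<Oplus>b\<in>{b\<in>Bs. f b \<noteq> \<zero>}. b \<otimes> f b))"
    using fr unfolding free_right_with_basis_in_def by simp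
  then have "Bs \<subseteq> A \<and> (\<forall>X\<in>carrier T. \<exists>!f. f \<in> Bs \<rightarrow>\<^sub>E R' \<and> finite {b\<in>Bs. f b \<noteq> \<zero>} \<and>
            X = (\<Oplus>b\<in>{b\<in>Bs. f b \<noteq> \<zero>}. b \<otimes> f b))"
    unfolding Bs_def by (rule someI_ex)
  then show "Bs \<subseteq> A" "\<And>X. X \<in> carrier T \<Longrightarrow> \<exists>!f. f \<in> Bs \<rightarrow>\<^sub>E R' \<and> finite {b\<in>Bs. f b \<noteq> \<zero>} \<and>
            X = (\<Oplus>b\<in>{b\<in>Bs. f b \<noteq> \<zero>}. b \<otimes> f b)" by auto
qed

lemma Bs_carr: "b \<in> Bs \<Longrightarrow> b \<in> carrier T" using Bs_props(1) A_carr by auto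

definition "cf i = (THE f. f \<in> Bs \<rightarrow>\<^sub>E R' \<and> finite {b\<in>Bs. f b \<noteq> \<zero>} \<and>
            x1 i = (\<Oplus>b\<in>{b\<in>Bs. f b \<noteq> \<zero>}. b \<otimes> f b))"

lemma cf_props: assumes i: "i < n" shows "cf i \<in> Bs \<rightarrow>\<^sub>E R' \<and> finite {b\<in>Bs. cf i b \<noteq> \<zero>} \<and>
            x1 i = (\<Oplus>b\<in>{b\<in>Bs. cf i b \<noteq> \<zero>}. b \<otimes> cf i b)"
proof -
  have ex: "\<exists>!f. f \<in> Bs \<rightarrow>\<^sub>E R' \<and> finite {b\<in>Bs. f b \<noteq> \<zero>} \<and> x1 i = (\<Oplus>b\<in>{b\<in>Bs. f b \<noteq> \<zero>}. b \<otimes> f b)"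
    by (rule Bs_props(2)[OF x1_carr[OF i]])
  show ?thesis unfolding cf_def by (rule theI'[OF ex])
qed

definition "F = (\<Union>i<n. {b\<in>Bs. cf i b \<noteq> \<zero>})"

lemma F_fin: "finite F" unfolding F_def using cf_props by auto
lemma F_Bs: "F \<subseteq> Bs" unfolding F_def by auto
lemma F_A: "b \<in> F \<Longrightarrow> b \<in> A" using F_Bs Bs_props(1) by auto
lemma F_carr: "b \<in> F \<Longrightarrow> b \<in> carrier T" using F_A A_carr by auto
lemma cf_R: "i < n \<Longrightarrow> b \<in> Bs \<Longrightarrow> cf i b \<in> R'" using cf_props by auto
lemma cf_carr: "i < n \<Longrightarrow> b \<in> F \<Longrightarrow> cf i b \<in> carrier T" using cf_R F_Bs R'_carr by auto
lemma cf_RF: "i < n \<Longrightarrow> b \<in> F \<Longrightarrow> cf i b \<in> R'" using cf_R F_Bs by auto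
lemma cf_zero: "i < n \<Longrightarrow> b \<in> Bs \<Longrightarrow> b \<notin> F \<Longrightarrow> cf i b = \<zero>" unfolding F_def by auto

lemma x1_F: "i < n \<Longrightarrow> x1 i = (\<Oplus>b\<in>F. b \<otimes> cf i b)"
proof -
  assume i: "i < n"
  have "x1 i = (\<Oplus>b\<in>{b\<in>Bs. cf i b \<noteq> \<zero>}. b \<otimes> cf i b)" using cf_props[OF i] by simp
  also have "\<dots> = (\<Oplus>b\<in>F. b \<otimes> cf i b)"
    by (rule add.finprod_mono_neutral_cong_left[OF F_fin]) (use i F_carr F_Bs cf_carr in \<open>auto simp: F_def\<close>)
  finally show ?thesis .
qed

definition "gam b = (\<Oplus>i\<in>{..<n}. cf i b \<otimes> y1 i)"

lemma gam_carr: "b \<in> F \<Longrightarrow> gam b \<in> carrier T"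
  unfolding gam_def by (rule finsum_closed) (auto simp: cf_carr y1_carr)

lemma expand0: "X \<in> carrier T \<Longrightarrow> X = (\<Oplus>b\<in>F. b \<otimes> (\<Oplus>i\<in>{..<n}. cf i b \<otimes> E' (y1 i \<otimes> X)))"
proof -
  assume X: "X \<in> carrier T"
  have c: "\<And>i. i < n \<Longrightarrow> E' (y1 i \<otimes> X) \<in> carrier T" using E_carr y1_carr X by simp
  have "X = (\<Oplus>i\<in>{..<n}. x1 i \<otimes> E' (y1 i \<otimes> X))" using Q2[OF X] by simp
  also have "\<dots> = (\<Oplus>i\<in>{..<n}. \<Oplus>b\<in>F. b \<otimes> (cf i b \<otimes> E' (y1 i \<otimes> X)))"
  proof (rule finsum_cong')
    fix i assume "i \<in> {..<n}"
    then have i: "i < n" by simp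
    have "x1 i \<otimes> E' (y1 i \<otimes> X) = (\<Oplus>b\<in>F. b \<otimes> cf i b) \<otimes> E' (y1 i \<otimes> X)" using x1_F[OF i] by simp
    also have "\<dots> = (\<Oplus>b\<in>F. b \<otimes> cf i b \<otimes> E' (y1 i \<otimes> X))"
      by (rule finsum_ldistr) (use F_fin c i F_carr cf_carr in auto)
    also have "\<dots> = (\<Oplus>b\<in>F. b \<otimes> (cf i b \<otimes> E' (y1 i \<otimes> X)))"
      by (rule finsum_cong') (use F_fin c i F_carr cf_carr in \<open>auto simp: m_assoc\<close>)
    finally show "x1 i \<otimes> E' (y1 i \<otimes> X) = (\<Oplus>b\<in>F. b \<otimes> (cf i b \<otimes> E' (y1 i \<otimes> X)))" .
  qed (use F_fin c F_carr cf_carr in \<open>auto simp: Pi_def intro: finsum_closed\<close>)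
  also have "\<dots> = (\<Oplus>b\<in>F. \<Oplus>i\<in>{..<n}. b \<otimes> (cf i b \<otimes> E' (y1 i \<otimes> X)))"
    by (rule finsum_swap) (use F_fin c F_carr cf_carr in auto)
  also have "\<dots> = (\<Oplus>b\<in>F. b \<otimes> (\<Oplus>i\<in>{..<n}. cf i b \<otimes> E' (y1 i \<otimes> X)))"
    by (rule finsum_cong') (use F_fin c F_carr cf_carr in \<open>auto simp: Pi_def finsum_rdistr intro: finsum_closed\<close>)
  finally show ?thesis .
qed

lemma expand: "X \<in> carrier T \<Longrightarrow> X = (\<Oplus>b\<in>F. b \<otimes> E' (gam b \<otimes> X))"
proof -
  assume X: "X \<in> carrier T"
  have "\<And>b. b \<in> F \<Longrightarrow> E' (gam b \<otimes> X) = (\<Oplus>i\<in>{..<n}. cf i b \<otimes> E' (y1 i \<otimes> X))"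
  proof -
    fix b assume b: "b \<in> F"
    have "gam b \<otimes> X = (\<Oplus>i\<in>{..<n}. cf i b \<otimes> y1 i \<otimes> X)"
      unfolding gam_def by (rule finsum_ldistr) (use b X cf_carr y1_carr in auto)
    then have "E' (gam b \<otimes> X) = (\<Oplus>i\<in>{..<n}. E' (cf i b \<otimes> y1 i \<otimes> X))"
      using E_finsum[of "{..<n}" "\<lambda>i. cf i b \<otimes> y1 i \<otimes> X"] b X cf_carr y1_carr by simp
    also have "\<dots> = (\<Oplus>i\<in>{..<n}. cf i b \<otimes> E' (y1 i \<otimes> X))"
      by (rule finsum_cong') (use b X cf_carr y1_carr cf_R F_Bs E_carr in \<open>auto simp: m_assoc E_lmult cf_RF\<close>)
    finally show "E' (gam b \<otimes> X) = (\<Oplus>i\<in>{..<n}. cf i b \<otimes> E' (y1 i \<otimes> X))" .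
  qed
  note eqb = this
  have cl: "\<And>b. b \<in> F \<Longrightarrow> b \<otimes> (\<Oplus>i\<in>{..<n}. cf i b \<otimes> E' (y1 i \<otimes> X)) \<in> carrier T"
  proof -
    fix b assume b: "b \<in> F"
    have "(\<Oplus>i\<in>{..<n}. cf i b \<otimes> E' (y1 i \<otimes> X)) \<in> carrier T"
      by (rule finsum_closed) (use b X cf_carr y1_carr E_carr in auto)
    then show "b \<otimes> (\<Oplus>i\<in>{..<n}. cf i b \<otimes> E' (y1 i \<otimes> X)) \<in> carrier T" using b F_carr by simp
  qed
  have "(\<Oplus>b\<in>F. b \<otimes> E' (gam b \<otimes> X)) = (\<Oplus>b\<in>F. b \<otimes> (\<Oplus>i\<in>{..<n}. cf i b \<otimes> E' (y1 i \<otimes> X)))"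
    by (rule finsum_cong') (use cl eqb in auto)
  then show ?thesis using expand0[OF X] by simp
qed

lemma expand2: "c \<in> carrier T \<Longrightarrow> (\<Oplus>b\<in>F. E' (c \<otimes> b) \<otimes> gam b) = c"
proof -
  assume c: "c \<in> carrier T"
  have "(\<Oplus>b\<in>F. E' (c \<otimes> b) \<otimes> gam b) = (\<Oplus>b\<in>F. \<Oplus>i\<in>{..<n}. E' (c \<otimes> b) \<otimes> (cf i b \<otimes> y1 i))"
    unfolding gam_def
    by (rule finsum_cong') (use c F_carr cf_carr y1_carr E_carr in \<open>auto simp: finsum_rdistr Pi_def\<close>)
  also have "\<dots> = (\<Oplus>i\<in>{..<n}. \<Oplus>b\<in>F. E' (c \<otimes> b) \<otimes> (cf i b \<otimes> y1 i))"
    by (rule finsum_swap) (use F_fin c F_carr cf_carr y1_carr E_carr in auto)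
  also have "\<dots> = (\<Oplus>i\<in>{..<n}. E' (c \<otimes> x1 i) \<otimes> y1 i)"
  proof (rule finsum_cong')
    fix i assume "i \<in> {..<n}"
    then have i: "i < n" by simp
    have "(\<Oplus>b\<in>F. E' (c \<otimes> b) \<otimes> (cf i b \<otimes> y1 i)) = (\<Oplus>b\<in>F. E' (c \<otimes> (b \<otimes> cf i b))) \<otimes> y1 i"
    proof -
      have "(\<Oplus>b\<in>F. E' (c \<otimes> b) \<otimes> (cf i b \<otimes> y1 i)) = (\<Oplus>b\<in>F. E' (c \<otimes> (b \<otimes> cf i b)) \<otimes> y1 i)"
        by (rule finsum_cong') (use c i F_carr cf_carr cf_R F_Bs y1_carr E_carr in \<open>auto simp: m_assoc[symmetric] E_rmult cf_RF\<close>)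
      also have "\<dots> = (\<Oplus>b\<in>F. E' (c \<otimes> (b \<otimes> cf i b))) \<otimes> y1 i"
        by (rule finsum_ldistr[symmetric]) (use F_fin c i F_carr cf_carr y1_carr E_carr in auto)
      finally show ?thesis .
    qed
    also have "(\<Oplus>b\<in>F. E' (c \<otimes> (b \<otimes> cf i b))) = E' (c \<otimes> x1 i)"
    proof -
      have "c \<otimes> x1 i = (\<Oplus>b\<in>F. c \<otimes> (b \<otimes> cf i b))"
        unfolding x1_F[OF i] by (rule finsum_rdistr) (use F_fin c i F_carr cf_carr in auto)
      then show ?thesis using E_finsum[OF F_fin, of "\<lambda>b. c \<otimes> (b \<otimes> cf i b)"] c i F_carr cf_carr by simp
    qed
    finally show "(\<Oplus>b\<in>F. E' (c \<otimes> b) \<otimes> (cf i b \<otimes> y1 i)) = E' (c \<otimes> x1 i) \<otimes> y1 i" .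
  qed (use c x1_carr y1_carr E_carr in auto)
  also have "\<dots> = c" by (rule Q1[OF c])
  finally show ?thesis .
qed

lemma sum_bgam: "(\<Oplus>b\<in>F. b \<otimes> gam b) = inv\<^bsub>K\<^esub> lam \<odot> \<one>"
proof -
  have "(\<Oplus>b\<in>F. b \<otimes> gam b) = (\<Oplus>b\<in>F. \<Oplus>i\<in>{..<n}. b \<otimes> (cf i b \<otimes> y1 i))"
    unfolding gam_def
    by (rule finsum_cong') (use F_carr cf_carr y1_carr in \<open>auto simp: finsum_rdistr Pi_def\<close>)
  also have "\<dots> = (\<Oplus>i\<in>{..<n}. \<Oplus>b\<in>F. b \<otimes> (cf i b \<otimes> y1 i))"
    by (rule finsum_swap) (use F_fin F_carr cf_carr y1_carr in auto)
  also have "\<dots> = (\<Oplus>i\<in>{..<n}. x1 i \<otimes> y1 i)"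
  proof (rule finsum_cong')
    fix i assume "i \<in> {..<n}"
    then have i: "i < n" by simp
    have "(\<Oplus>b\<in>F. b \<otimes> (cf i b \<otimes> y1 i)) = (\<Oplus>b\<in>F. b \<otimes> cf i b \<otimes> y1 i)"
      by (rule finsum_cong') (use i F_carr cf_carr y1_carr in \<open>auto simp: m_assoc\<close>)
    also have "\<dots> = x1 i \<otimes> y1 i"
      unfolding x1_F[OF i] by (rule finsum_ldistr[symmetric]) (use F_fin i F_carr cf_carr y1_carr in auto)
    finally show "(\<Oplus>b\<in>F. b \<otimes> (cf i b \<otimes> y1 i)) = x1 i \<otimes> y1 i" .
  qed (use x1_carr y1_carr in auto)
  finally show ?thesis using sumxy by simp
qed

end

context sepctx begin

lemma SR_carr: "t \<in> S' \<Longrightarrow> t \<in> carrier T" using SR R'_carr by auto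

lemma repr_F: assumes g: "g \<in> Bs \<rightarrow>\<^sub>E R'" and z: "\<And>b. b \<in> Bs \<Longrightarrow> b \<notin> F \<Longrightarrow> g b = \<zero>"
  shows "finite {b\<in>Bs. g b \<noteq> \<zero>}" "(\<Oplus>b\<in>{b\<in>Bs. g b \<noteq> \<zero>}. b \<otimes> g b) = (\<Oplus>b\<in>F. b \<otimes> g b)"
proof -
  have sub: "{b\<in>Bs. g b \<noteq> \<zero>} \<subseteq> F" using z by auto
  then show "finite {b\<in>Bs. g b \<noteq> \<zero>}" using F_fin finite_subset by auto
  have gc: "\<And>b. b \<in> F \<Longrightarrow> g b \<in> carrier T" using g F_Bs R'_carr by auto
  show "(\<Oplus>b\<in>{b\<in>Bs. g b \<noteq> \<zero>}. b \<otimes> g b) = (\<Oplus>b\<in>F. b \<otimes> g b)"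
    by (rule add.finprod_mono_neutral_cong_left[OF F_fin sub]) (use F_carr gc F_Bs in auto)
qed

lemma uniq_step: assumes t: "t \<in> S'" and j: "j < n" and b: "b \<in> F"
  shows "t \<otimes> cf j b = (\<Oplus>i\<in>{..<n}. cf i b \<otimes> E' (y1 i \<otimes> (t \<otimes> x1 j)))"
proof -
  let ?Y = "t \<otimes> x1 j"
  have tc: "t \<in> carrier T" using SR_carr t .
  have tR: "t \<in> R'" using SR t by auto
  have Yc: "?Y \<in> carrier T" using tc x1_carr[OF j] by simp
  define g1 where "g1 = restrict (\<lambda>b. t \<otimes> cf j b) Bs"
  define g2 where "g2 = restrict (\<lambda>b. \<Oplus>i\<in>{..<n}. cf i b \<otimes> E' (y1 i \<otimes> ?Y)) Bs"
  have g1P: "g1 \<in> Bs \<rightarrow>\<^sub>E R'" unfolding g1_def using tR cf_R j R'_mult by auto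
  have g1z: "\<And>b. b \<in> Bs \<Longrightarrow> b \<notin> F \<Longrightarrow> g1 b = \<zero>" unfolding g1_def using cf_zero j tc by simp
  have g2P: "g2 \<in> Bs \<rightarrow>\<^sub>E R'" unfolding g2_def
    using cf_R R'_mult R'_finsum E_R y1_carr Yc by (auto intro!: R'_finsum R'_mult)
  have g2z: "\<And>b. b \<in> Bs \<Longrightarrow> b \<notin> F \<Longrightarrow> g2 b = \<zero>"
  proof -
    fix b assume b: "b \<in> Bs" "b \<notin> F"
    have "(\<Oplus>i\<in>{..<n}. cf i b \<otimes> E' (y1 i \<otimes> ?Y)) = (\<Oplus>i\<in>{..<n}. \<zero>)"
      by (rule finsum_cong') (use b cf_zero Yc y1_carr E_carr in auto)
    then show "g2 b = \<zero>" unfolding g2_def using b finsum_zero by simp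
  qed
  have s1: "?Y = (\<Oplus>b\<in>F. b \<otimes> g1 b)"
  proof -
    have "(\<Oplus>b\<in>F. b \<otimes> g1 b) = (\<Oplus>b\<in>F. t \<otimes> (b \<otimes> cf j b))"
    proof (rule finsum_cong')
      fix b assume b: "b \<in> F"
      have "b \<otimes> t = t \<otimes> b" using A_comm[OF F_A[OF b] t] .
      have bB: "b \<in> Bs" using b F_Bs by auto
      have "b \<otimes> (t \<otimes> cf j b) = t \<otimes> (b \<otimes> cf j b)"
        using \<open>b \<otimes> t = t \<otimes> b\<close> b F_carr tc cf_carr j by (simp add: m_assoc[symmetric])
      then show "b \<otimes> g1 b = t \<otimes> (b \<otimes> cf j b)"
        unfolding g1_def using bB by simp
    qed (use tc F_carr cf_carr j in auto)
    also have "\<dots> = t \<otimes> x1 j" unfolding x1_F[OF j]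
      by (rule finsum_rdistr[symmetric]) (use F_fin tc F_carr cf_carr j in auto)
    finally show ?thesis by simp
  qed
  have s2: "?Y = (\<Oplus>b\<in>F. b \<otimes> g2 b)"
  proof -
    have "(\<Oplus>b\<in>F. b \<otimes> g2 b) = (\<Oplus>b\<in>F. b \<otimes> (\<Oplus>i\<in>{..<n}. cf i b \<otimes> E' (y1 i \<otimes> ?Y)))"
    proof (rule finsum_cong')
      fix b assume b: "b \<in> F"
      show "b \<otimes> g2 b = b \<otimes> (\<Oplus>i\<in>{..<n}. cf i b \<otimes> E' (y1 i \<otimes> ?Y))" unfolding g2_def using b F_Bs by auto
    next
      show "(\<lambda>b. b \<otimes> (\<Oplus>i\<in>{..<n}. cf i b \<otimes> E' (y1 i \<otimes> ?Y))) \<in> F \<rightarrow> carrier T"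
        using F_carr cf_carr y1_carr E_carr Yc by (auto intro!: finsum_closed)
    qed simp
    then show ?thesis using expand0[OF Yc] by simp
  qed
  have P1: "g1 \<in> Bs \<rightarrow>\<^sub>E R' \<and> finite {b\<in>Bs. g1 b \<noteq> \<zero>} \<and> ?Y = (\<Oplus>b\<in>{b\<in>Bs. g1 b \<noteq> \<zero>}. b \<otimes> g1 b)"
    using g1P repr_F[OF g1P g1z] s1 by simp
  have P2: "g2 \<in> Bs \<rightarrow>\<^sub>E R' \<and> finite {b\<in>Bs. g2 b \<noteq> \<zero>} \<and> ?Y = (\<Oplus>b\<in>{b\<in>Bs. g2 b \<noteq> \<zero>}. b \<otimes> g2 b)"
    using g2P repr_F[OF g2P g2z] s2 by simp
  have "g1 = g2" using Bs_props(2)[OF Yc] P1 P2 by blast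
  then have "g1 b = g2 b" by simp
  then show ?thesis unfolding g1_def g2_def using b F_Bs by auto
qed

lemma gam_A: assumes b: "b \<in> F" shows "gam b \<in> A"
  unfolding centralizer_def
proof (intro CollectI conjI ballI)
  show gc: "gam b \<in> carrier T" by (rule gam_carr[OF b])
  fix t assume t: "t \<in> S'"
  have tc: "t \<in> carrier T" using SR_carr t .
  have "gam b \<otimes> t = (\<Oplus>i\<in>{..<n}. cf i b \<otimes> (y1 i \<otimes> t))"
    unfolding gam_def
  proof -
    have "(\<Oplus>i\<in>{..<n}. cf i b \<otimes> y1 i) \<otimes> t = (\<Oplus>i\<in>{..<n}. cf i b \<otimes> y1 i \<otimes> t)"
      by (rule finsum_ldistr) (use b tc cf_carr y1_carr in auto)
    also have "\<dots> = (\<Oplus>i\<in>{..<n}. cf i b \<otimes> (y1 i \<otimes> t))"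
      by (rule finsum_cong') (use b tc cf_carr y1_carr in \<open>auto simp: m_assoc\<close>)
    finally show "(\<Oplus>i\<in>{..<n}. cf i b \<otimes> y1 i) \<otimes> t = (\<Oplus>i\<in>{..<n}. cf i b \<otimes> (y1 i \<otimes> t))" .
  qed
  also have "\<dots> = (\<Oplus>i\<in>{..<n}. \<Oplus>j\<in>{..<n}. (cf i b \<otimes> E' (y1 i \<otimes> (t \<otimes> x1 j))) \<otimes> y1 j)"
  proof (rule finsum_cong')
    fix i assume "i \<in> {..<n}"
    then have i: "i < n" by simp
    have yt: "y1 i \<otimes> t \<in> carrier T" using i tc y1_carr by simp
    have "cf i b \<otimes> (y1 i \<otimes> t) = cf i b \<otimes> (\<Oplus>j\<in>{..<n}. E' (y1 i \<otimes> t \<otimes> x1 j) \<otimes> y1 j)"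
      using Q1[OF yt] by simp
    also have "\<dots> = (\<Oplus>j\<in>{..<n}. cf i b \<otimes> (E' (y1 i \<otimes> t \<otimes> x1 j) \<otimes> y1 j))"
      by (rule finsum_rdistr) (use i b yt cf_carr x1_carr y1_carr E_carr in auto)
    also have "\<dots> = (\<Oplus>j\<in>{..<n}. (cf i b \<otimes> E' (y1 i \<otimes> (t \<otimes> x1 j))) \<otimes> y1 j)"
      by (rule finsum_cong') (use i b tc cf_carr x1_carr y1_carr E_carr in \<open>auto simp: m_assoc\<close>)
    finally show "cf i b \<otimes> (y1 i \<otimes> t) = (\<Oplus>j\<in>{..<n}. (cf i b \<otimes> E' (y1 i \<otimes> (t \<otimes> x1 j))) \<otimes> y1 j)" .
  qed (use b tc cf_carr x1_carr y1_carr E_carr in \<open>auto intro!: finsum_closed\<close>)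
  also have "\<dots> = (\<Oplus>j\<in>{..<n}. \<Oplus>i\<in>{..<n}. (cf i b \<otimes> E' (y1 i \<otimes> (t \<otimes> x1 j))) \<otimes> y1 j)"
    by (rule finsum_swap) (use b tc cf_carr x1_carr y1_carr E_carr in auto)
  also have "\<dots> = (\<Oplus>j\<in>{..<n}. (t \<otimes> cf j b) \<otimes> y1 j)"
  proof (rule finsum_cong')
    fix j assume "j \<in> {..<n}"
    then have j: "j < n" by simp
    have "(\<Oplus>i\<in>{..<n}. (cf i b \<otimes> E' (y1 i \<otimes> (t \<otimes> x1 j))) \<otimes> y1 j)
        = (\<Oplus>i\<in>{..<n}. cf i b \<otimes> E' (y1 i \<otimes> (t \<otimes> x1 j))) \<otimes> y1 j"
      by (rule finsum_ldistr[symmetric]) (use j b tc cf_carr x1_carr y1_carr E_carr in auto)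
    also have "\<dots> = (t \<otimes> cf j b) \<otimes> y1 j" using uniq_step[OF t j b] by simp
    finally show "(\<Oplus>i\<in>{..<n}. (cf i b \<otimes> E' (y1 i \<otimes> (t \<otimes> x1 j))) \<otimes> y1 j) = (t \<otimes> cf j b) \<otimes> y1 j" .
  qed (use b tc cf_carr y1_carr in auto)
  also have "\<dots> = t \<otimes> gam b" unfolding gam_def
  proof -
    have "(\<Oplus>j\<in>{..<n}. (t \<otimes> cf j b) \<otimes> y1 j) = (\<Oplus>j\<in>{..<n}. t \<otimes> (cf j b \<otimes> y1 j))"
      by (rule finsum_cong') (use b tc cf_carr y1_carr in \<open>auto simp: m_assoc\<close>)
    also have "\<dots> = t \<otimes> (\<Oplus>j\<in>{..<n}. cf j b \<otimes> y1 j)"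
      by (rule finsum_rdistr[symmetric]) (use b tc cf_carr y1_carr in auto)
    finally show "(\<Oplus>j\<in>{..<n}. (t \<otimes> cf j b) \<otimes> y1 j) = t \<otimes> (\<Oplus>j\<in>{..<n}. cf j b \<otimes> y1 j)" .
  qed
  finally show "gam b \<otimes> t = t \<otimes> gam b" .
qed

end

context sepctx begin

abbreviation "D \<equiv> T\<lparr>carrier := A\<rparr>"
abbreviation "SD \<equiv> scalars K D"

lemma SD_eq: "SD = scalars K T" by (simp add: scalars_def)

lemma A_subring: "subring A T"
proof (rule subringI)
  show "A \<subseteq> carrier T" using A_carr by auto
  show "\<one> \<in> A" unfolding centralizer_def using SR_carr by auto
next
  fix h assume h: "h \<in> A"
  then show "\<ominus> h \<in> A" unfolding centralizer_def using SR_carr by (auto simp: l_minus r_minus)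
next
  fix h1 h2 assume h: "h1 \<in> A" "h2 \<in> A"
  have c: "h1 \<in> carrier T" "h2 \<in> carrier T" using h A_carr by auto
  show "h1 \<otimes> h2 \<in> A" unfolding centralizer_def
  proof (intro CollectI conjI ballI)
    show "h1 \<otimes> h2 \<in> carrier T" using c by simp
    fix t assume t: "t \<in> S'"
    have tc: "t \<in> carrier T" using SR_carr t .
    have "h1 \<otimes> h2 \<otimes> t = h1 \<otimes> (t \<otimes> h2)" using A_comm[OF h(2) t] c tc by (simp add: m_assoc)
    also have "\<dots> = (t \<otimes> h1) \<otimes> h2" using A_comm[OF h(1) t] c tc by (simp add: m_assoc[symmetric])
    finally show "h1 \<otimes> h2 \<otimes> t = t \<otimes> (h1 \<otimes> h2)" using c tc by (simp add: m_assoc)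
  qed
  show "h1 \<oplus> h2 \<in> A" unfolding centralizer_def
  proof (intro CollectI conjI ballI)
    show "h1 \<oplus> h2 \<in> carrier T" using c by simp
    fix t assume t: "t \<in> S'"
    have tc: "t \<in> carrier T" using SR_carr t .
    show "(h1 \<oplus> h2) \<otimes> t = t \<otimes> (h1 \<oplus> h2)" using A_comm[OF h(1) t] A_comm[OF h(2) t] c tc by (simp add: l_distr r_distr)
  qed
qed

lemma ringD: "ring D" by (rule subring_is_ring[OF A_subring])

lemma scal_A: "c \<in> carrier K \<Longrightarrow> c \<odot> \<one> \<in> A"
  unfolding centralizer_def using kalg_scal_comm[OF kT] SR_carr by auto

lemma SD_A: "SD \<subseteq> A" unfolding SD_eq scalars_def using scal_A by auto

lemma smult_A: "c \<in> carrier K \<Longrightarrow> a \<in> A \<Longrightarrow> c \<odot> a \<in> A"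
proof -
  assume c: "c \<in> carrier K" and a: "a \<in> A"
  have ac: "a \<in> carrier T" using A_carr a .
  have "c \<odot> a = (c \<odot> \<one>) \<otimes> a" using kT c ac unfolding k_algebra_def by (metis l_one one_closed)
  then show ?thesis using subringE(6)[OF A_subring scal_A[OF c] a] by simp
qed

lemma moduleD: "module K D"
proof -
  have "submodule A K T"
  proof (rule RM.submoduleI)
    show "A \<subseteq> carrier T" using A_carr by auto
    show "\<zero> \<in> A" using subringE(2)[OF A_subring] .
    show "\<And>a. a \<in> A \<Longrightarrow> \<ominus> a \<in> A" using subringE(5)[OF A_subring] by simp
    show "\<And>a b. a \<in> A \<Longrightarrow> b \<in> A \<Longrightarrow> a \<oplus> b \<in> A" using subringE(7)[OF A_subring] by simp
    show "\<And>a x. a \<in> carrier K \<Longrightarrow> x \<in> A \<Longrightarrow> a \<odot> x \<in> A" using smult_A by simp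
  qed
  then show ?thesis using submodule.submodule_is_module RM.module_axioms by blast
qed

lemma kalg_T: "c \<in> carrier K \<Longrightarrow> x \<in> carrier T \<Longrightarrow> y \<in> carrier T \<Longrightarrow>
    c \<odot> (x \<otimes> y) = (c \<odot> x) \<otimes> y \<and> c \<odot> (x \<otimes> y) = x \<otimes> (c \<odot> y)"
  using kT unfolding k_algebra_def by blast

lemma kalgD: "k_algebra K D"
  unfolding k_algebra_def
proof (intro conjI ballI)
  show "field K" "ring D" "module K D" by (rule fK, rule ringD, rule moduleD)
next
  fix c x y assume h: "c \<in> carrier K" "x \<in> carrier D" "y \<in> carrier D"
  have xc: "x \<in> carrier T" and yc: "y \<in> carrier T" using h A_carr by auto
  note kk = kalg_T[OF h(1) xc yc]
  have k: "c \<odot> (x \<otimes> y) = (c \<odot> x) \<otimes> y" "c \<odot> (x \<otimes> y) = x \<otimes> (c \<odot> y)"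
    using conjunct1[OF kk] conjunct2[OF kk] by blast+
  show "c \<odot>\<^bsub>D\<^esub> (x \<otimes>\<^bsub>D\<^esub> y) = c \<odot>\<^bsub>D\<^esub> x \<otimes>\<^bsub>D\<^esub> y" using k(1) by simp
  show "c \<odot>\<^bsub>D\<^esub> (x \<otimes>\<^bsub>D\<^esub> y) = x \<otimes>\<^bsub>D\<^esub> (c \<odot>\<^bsub>D\<^esub> y)" using k(2) by simp
qed

sublocale DT: tns D SD by (rule tns.intro[OF ringD]) (rule tns_axioms.intro, use SD_A in simp)

definition "Fl = (SOME l. set l = F \<and> distinct l)"
lemma Fl: "set Fl = F" "distinct Fl"
  using someI_ex[OF finite_distinct_list[OF F_fin]] unfolding Fl_def by auto

lemma finsum_DT: "finite I \<Longrightarrow> (\<And>i. i \<in> I \<Longrightarrow> f i \<in> A) \<Longrightarrow> finsum D f I = finsum T f I"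
proof (induction I rule: finite_induct)
  case empty then show ?case by simp
next
  case (insert a I)
  have "finsum D f (insert a I) = f a \<oplus>\<^bsub>D\<^esub> finsum D f I"
    by (rule DT.finsum_insert) (use insert in auto)
  also have "\<dots> = f a \<oplus> finsum T f I" using insert by simp
  also have "\<dots> = finsum T f (insert a I)"
    by (rule finsum_insert[symmetric]) (use insert A_carr in auto)
  finally show ?case .
qed

lemma eps_SD: "a \<in> A \<Longrightarrow> E' a \<in> SD" using irrE SD_eq by simp

lemma casimir: assumes d: "d \<in> A"
  shows "DT.TE (map (\<lambda>b. (d \<otimes> b, gam b)) Fl) (map (\<lambda>b. (b, gam b \<otimes> d)) Fl)"
proof -
  have dc: "d \<in> carrier T" using A_carr d .
  have mA: "\<And>x y. x \<in> A \<Longrightarrow> y \<in> A \<Longrightarrow> x \<otimes> y \<in> A" using subringE(6)[OF A_subring] by simp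
  define e where "e b b' = E' (gam b' \<otimes> (d \<otimes> b))" for b b'
  have eS: "b \<in> F \<Longrightarrow> b' \<in> F \<Longrightarrow> e b b' \<in> SD" for b b'
    unfolding e_def using eps_SD mA gam_A F_A d by simp
  have eA: "b \<in> F \<Longrightarrow> b' \<in> F \<Longrightarrow> e b b' \<in> A" for b b' using eS SD_A by auto
  have 1: "DT.TE (concat (map (\<lambda>b. [(d \<otimes> b, gam b)]) Fl)) (concat (map (\<lambda>b. map (\<lambda>b'. (b', e b b' \<otimes> gam b)) Fl) Fl))"
  proof (rule DT.TE_concat_pw)
    fix b assume "b \<in> set Fl"
    then have b: "b \<in> F" using Fl by simp
    have db: "d \<otimes> b \<in> carrier T" using dc F_carr b by simp
    have "d \<otimes> b = (\<Oplus>b'\<in>F. b' \<otimes> e b b')" unfolding e_def by (rule expand[OF db])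
    also have "\<dots> = finsum D (\<lambda>b'. b' \<otimes> e b b') (set Fl)"
      using finsum_DT[OF F_fin, of "\<lambda>b'. b' \<otimes> e b b'"] mA F_A eA b Fl by simp
    finally have eq: "d \<otimes> b = finsum D (\<lambda>b'. b' \<otimes>\<^bsub>D\<^esub> e b b') (set Fl)" by simp
    have a: "DT.TE [(finsum D (\<lambda>b'. b' \<otimes>\<^bsub>D\<^esub> e b b') (set Fl), gam b)] (map (\<lambda>b'. (b' \<otimes>\<^bsub>D\<^esub> e b b', gam b)) Fl)"
      by (rule DT.TE_sum_left) (use Fl mA F_A eA b gam_A in auto)
    have c: "DT.TE (map (\<lambda>b'. (b' \<otimes>\<^bsub>D\<^esub> e b b', gam b)) Fl) (map (\<lambda>b'. (b', e b b' \<otimes>\<^bsub>D\<^esub> gam b)) Fl)"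
    proof (rule DT.TE_map_pw)
      fix b' assume "b' \<in> set Fl"
      then have b': "b' \<in> F" using Fl by simp
      show "DT.TE [(b' \<otimes>\<^bsub>D\<^esub> e b b', gam b)] [(b', e b b' \<otimes>\<^bsub>D\<^esub> gam b)]"
        by (rule tens_eq.bal) (use F_A b b' gam_A eS in auto)
    qed
    show "DT.TE [(d \<otimes> b, gam b)] (map (\<lambda>b'. (b', e b b' \<otimes> gam b)) Fl)"
      using DT.TE_trans[OF a c] eq by simp
  qed
  have 2: "DT.TE (concat (map (\<lambda>b. map (\<lambda>b'. (b', e b b' \<otimes> gam b)) Fl) Fl)) (concat (map (\<lambda>b'. map (\<lambda>b. (b', e b b' \<otimes> gam b)) Fl) Fl))"
    by (rule DT.TE_dconcat) (use 1 DT.TE_carr in blast)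
  have 3: "DT.TE (concat (map (\<lambda>b'. map (\<lambda>b. (b', e b b' \<otimes> gam b)) Fl) Fl)) (concat (map (\<lambda>b'. [(b', gam b' \<otimes> d)]) Fl))"
  proof (rule DT.TE_concat_pw)
    fix b' assume "b' \<in> set Fl"
    then have b': "b' \<in> F" using Fl by simp
    have gd: "gam b' \<otimes> d \<in> carrier T" using gam_carr[OF b'] dc by simp
    have "gam b' \<otimes> d = (\<Oplus>b\<in>F. E' (gam b' \<otimes> d \<otimes> b) \<otimes> gam b)" using expand2[OF gd] by simp
    also have "\<dots> = (\<Oplus>b\<in>F. e b b' \<otimes> gam b)"
      unfolding e_def by (rule finsum_cong') (use gam_carr dc F_carr b' E_carr in \<open>auto simp: m_assoc\<close>)
    also have "\<dots> = finsum D (\<lambda>b. e b b' \<otimes> gam b) (set Fl)"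
      using finsum_DT[OF F_fin, of "\<lambda>b. e b b' \<otimes> gam b"] mA eA gam_A b' Fl by simp
    finally have eq: "gam b' \<otimes> d = finsum D (\<lambda>b. e b b' \<otimes>\<^bsub>D\<^esub> gam b) (set Fl)" by simp
    have "DT.TE [(b', finsum D (\<lambda>b. e b b' \<otimes>\<^bsub>D\<^esub> gam b) (set Fl))] (map (\<lambda>b. (b', e b b' \<otimes>\<^bsub>D\<^esub> gam b)) Fl)"
      by (rule DT.TE_sum_right) (use Fl mA F_A eA b' gam_A in auto)
    then show "DT.TE (map (\<lambda>b. (b', e b b' \<otimes> gam b)) Fl) [(b', gam b' \<otimes> d)]"
      using eq DT.TE_sym by simp
  qed
  have "DT.TE (concat (map (\<lambda>b. [(d \<otimes> b, gam b)]) Fl)) (concat (map (\<lambda>b'. [(b', gam b' \<otimes> d)]) Fl))"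
    using DT.TE_trans[OF DT.TE_trans[OF 1 2] 3] .
  then show ?thesis by (simp flip: DT.map_as_concat)
qed

end

context sepctx begin

definition "ell = lam \<odot> \<one>"
lemma ell_A: "ell \<in> A" unfolding ell_def using scal_A lamK by simp
lemma ell_carr: "ell \<in> carrier T" using ell_A A_carr by simp
lemma ell_comm: "y \<in> carrier T \<Longrightarrow> ell \<otimes> y = y \<otimes> ell"
  unfolding ell_def using kalg_scal_comm[OF kT lamK] by simp

definition "sig d = tcls D SD (map (\<lambda>b. (d \<otimes> b, gam b \<otimes> ell)) Fl)"

lemma mA: "x \<in> A \<Longrightarrow> y \<in> A \<Longrightarrow> x \<otimes> y \<in> A" using subringE(6)[OF A_subring] by simp
lemma aA: "x \<in> A \<Longrightarrow> y \<in> A \<Longrightarrow> x \<oplus> y \<in> A" using subringE(7)[OF A_subring] by simp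

lemma carr_L: "d \<in> A \<Longrightarrow> DT.carr (map (\<lambda>b. (d \<otimes> b, gam b \<otimes> ell)) Fl)"
  using mA F_A gam_A ell_A Fl by (auto simp: DT.carr_def)

lemma lam_T: "x \<in> carrier T \<Longrightarrow> lam \<odot> (inv\<^bsub>K\<^esub> lam \<odot> x) = x"
proof -
  assume x: "x \<in> carrier T"
  have u: "lam \<in> Units K" using KF.field_Units lamK lam0 by auto
  then have "lam \<otimes>\<^bsub>K\<^esub> inv\<^bsub>K\<^esub> lam = \<one>\<^bsub>K\<^esub>" "inv\<^bsub>K\<^esub> lam \<in> carrier K" by simp_all
  then show ?thesis using RM.smult_assoc1[OF lamK _ x, of "inv\<^bsub>K\<^esub> lam"] x by simp
qed

lemma sig_mult: "d \<in> A \<Longrightarrow> tmultmap D (sig d) = d"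
proof -
  assume d: "d \<in> A"
  have dc: "d \<in> carrier T" using A_carr d .
  have ilK: "inv\<^bsub>K\<^esub> lam \<in> carrier K" using KF.field_Units lamK lam0 by auto
  have "tmultmap D (sig d) = lmultsum D (map (\<lambda>b. (d \<otimes> b, gam b \<otimes> ell)) Fl)"
    unfolding sig_def by (rule DT.tmultmap_cls[OF carr_L[OF d]])
  also have "\<dots> = finsum D (\<lambda>b. (d \<otimes> b) \<otimes> (gam b \<otimes> ell)) (set Fl)"
    using DT.lms_map_finsum[OF Fl(2), of "\<lambda>b. d \<otimes> b" "\<lambda>b. gam b \<otimes> ell"] mA F_A gam_A ell_A d Fl by simp
  also have "\<dots> = (\<Oplus>b\<in>F. (d \<otimes> b) \<otimes> (gam b \<otimes> ell))"
    using finsum_DT[OF F_fin, of "\<lambda>b. (d \<otimes> b) \<otimes> (gam b \<otimes> ell)"] mA F_A gam_A ell_A d Fl by simp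
  also have "\<dots> = (\<Oplus>b\<in>F. d \<otimes> (b \<otimes> gam b) \<otimes> ell)"
    by (rule finsum_cong') (use dc F_carr gam_carr ell_carr in \<open>auto simp: m_assoc\<close>)
  also have "\<dots> = (\<Oplus>b\<in>F. d \<otimes> (b \<otimes> gam b)) \<otimes> ell"
    by (rule finsum_ldistr[symmetric]) (use F_fin dc F_carr gam_carr ell_carr in auto)
  also have "(\<Oplus>b\<in>F. d \<otimes> (b \<otimes> gam b)) = d \<otimes> (\<Oplus>b\<in>F. b \<otimes> gam b)"
    by (rule finsum_rdistr[symmetric]) (use F_fin dc F_carr gam_carr in auto)
  also have "\<dots> = inv\<^bsub>K\<^esub> lam \<odot> d" unfolding sum_bgam using kalg_T[OF ilK dc one_closed] dc by simp
  also have "(inv\<^bsub>K\<^esub> lam \<odot> d) \<otimes> ell = lam \<odot> (inv\<^bsub>K\<^esub> lam \<odot> d)"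
    unfolding ell_def using kalg_T[OF lamK _ one_closed, of "inv\<^bsub>K\<^esub> lam \<odot> d"] ilK dc by simp
  also have "\<dots> = d" by (rule lam_T[OF dc])
  finally show ?thesis .
qed

lemma sig_add: "d \<in> A \<Longrightarrow> x \<in> A \<Longrightarrow> sig (d \<oplus> x) = tadd D SD (sig d) (sig x)"
proof -
  assume d: "d \<in> A" and x: "x \<in> A"
  have "DT.TE (map (\<lambda>b. ((d \<oplus> x) \<otimes> b, gam b \<otimes> ell)) Fl)
           (map (\<lambda>b. (d \<otimes> b, gam b \<otimes> ell)) Fl @ map (\<lambda>b. (x \<otimes> b, gam b \<otimes> ell)) Fl)"
  proof (rule DT.TE_pw_split)
    fix b assume "b \<in> set Fl"
    then have b: "b \<in> F" using Fl by simp
    have "DT.TE [(d \<otimes> b \<oplus>\<^bsub>D\<^esub> x \<otimes> b, gam b \<otimes> ell)] [(d \<otimes> b, gam b \<otimes> ell), (x \<otimes> b, gam b \<otimes> ell)]"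
      by (rule tens_eq.addl) (use d x b mA F_A gam_A ell_A in auto)
    then show "DT.TE [((d \<oplus> x) \<otimes> b, gam b \<otimes> ell)] [(d \<otimes> b, gam b \<otimes> ell), (x \<otimes> b, gam b \<otimes> ell)]"
      using d x b A_carr F_carr by (simp add: l_distr)
  qed
  then show ?thesis unfolding sig_def DT.tadd_cls[OF carr_L[OF d] carr_L[OF x]] by (rule DT.cls_eq)
qed

lemma sig_lmult: "d \<in> A \<Longrightarrow> x \<in> A \<Longrightarrow> sig (d \<otimes> x) = tlact D SD d (sig x)"
proof -
  assume d: "d \<in> A" and x: "x \<in> A"
  have "tlact D SD d (sig x) = DT.cls (map (\<lambda>(a, b). (d \<otimes>\<^bsub>D\<^esub> a, b)) (map (\<lambda>b. (x \<otimes> b, gam b \<otimes> ell)) Fl))"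
    unfolding sig_def by (rule DT.tlact_cls[OF carr_L[OF x]]) (use d in simp)
  also have "map (\<lambda>(a, b). (d \<otimes>\<^bsub>D\<^esub> a, b)) (map (\<lambda>b. (x \<otimes> b, gam b \<otimes> ell)) Fl) = map (\<lambda>b. ((d \<otimes> x) \<otimes> b, gam b \<otimes> ell)) Fl"
    using d x A_carr F_carr Fl by (auto simp: m_assoc)
  finally show ?thesis unfolding sig_def by simp
qed

lemma sig_rmult: "d \<in> A \<Longrightarrow> x \<in> A \<Longrightarrow> sig (x \<otimes> d) = tract D SD (sig x) d"
proof -
  assume d: "d \<in> A" and x: "x \<in> A"
  have dc: "d \<in> carrier T" and xc: "x \<in> carrier T" using d x A_carr by auto
  have "tract D SD (sig x) d = DT.cls (map (\<lambda>(a, b). (a, b \<otimes>\<^bsub>D\<^esub> d)) (map (\<lambda>b. (x \<otimes> b, gam b \<otimes> ell)) Fl))"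
    unfolding sig_def by (rule DT.tract_cls[OF carr_L[OF x]]) (use d in simp)
  also have "map (\<lambda>(a, b). (a, b \<otimes>\<^bsub>D\<^esub> d)) (map (\<lambda>b. (x \<otimes> b, gam b \<otimes> ell)) Fl)
      = map (\<lambda>(a, b). (a, b \<otimes>\<^bsub>D\<^esub> ell)) (map (\<lambda>(a, b). (x \<otimes>\<^bsub>D\<^esub> a, b)) (map (\<lambda>b. (b, gam b \<otimes> d)) Fl))"
  proof -
    have "\<And>b. b \<in> F \<Longrightarrow> gam b \<otimes> ell \<otimes> d = gam b \<otimes> d \<otimes> ell"
      using gam_carr ell_carr dc ell_comm[OF dc] by (simp add: m_assoc)
    then show ?thesis using Fl by auto
  qed
  also have "DT.cls \<dots> = DT.cls (map (\<lambda>(a, b). (a, b \<otimes>\<^bsub>D\<^esub> ell)) (map (\<lambda>(a, b). (x \<otimes>\<^bsub>D\<^esub> a, b)) (map (\<lambda>b. (d \<otimes> b, gam b)) Fl)))"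
    by (rule DT.cls_eq[OF DT.TE_sym[OF DT.TE_rmult[OF DT.TE_lmult[OF casimir[OF d]]]]]) (use x ell_A in simp_all)
  also have "map (\<lambda>(a, b). (a, b \<otimes>\<^bsub>D\<^esub> ell)) (map (\<lambda>(a, b). (x \<otimes>\<^bsub>D\<^esub> a, b)) (map (\<lambda>b. (d \<otimes> b, gam b)) Fl))
      = map (\<lambda>b. ((x \<otimes> d) \<otimes> b, gam b \<otimes> ell)) Fl"
    using xc dc F_carr Fl by (auto simp: m_assoc)
  finally show ?thesis unfolding sig_def by simp
qed

theorem separable: "separable_algebra K D"
  unfolding separable_algebra_def
proof (intro conjI exI[of _ sig] ballI)
  show "k_algebra K D" by (rule kalgD)
next
  fix d assume d: "d \<in> carrier D"
  then show "sig d \<in> tens_carrier D SD" unfolding sig_def using DT.cls_in carr_L by simp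
  show "tmultmap D (sig d) = d" using sig_mult d by simp
next
  fix d x assume d: "d \<in> carrier D" and x: "x \<in> carrier D"
  show "sig (d \<oplus>\<^bsub>D\<^esub> x) = tadd D SD (sig d) (sig x)" using sig_add d x by simp
  show "sig (d \<otimes>\<^bsub>D\<^esub> x) = tlact D SD d (sig x)" using sig_lmult d x by simp
  show "sig (x \<otimes>\<^bsub>D\<^esub> d) = tract D SD (sig x) d" using sig_rmult d x by simp
qed

end

lemma (in bcs) sep_level:
  assumes fr: "free_right_with_basis_in R1 (incl ` carrier R) (centralizer R1 (incl ` S))"
  shows "separable_algebra K (R1\<lparr>carrier := centralizer R1 (incl ` S)\<rparr>)"
proof -
  have sub: "subring (incl ` carrier R) R1" using R1_subalg unfolding k_subalgebra_def by auto
  have SR: "incl ` S \<subseteq> incl ` carrier R" using S_sub by auto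
  interpret sepctx K R1 "incl ` carrier R" "incl ` S" E1 x1 y1 n lam
    by (rule sepctx.intro[OF fK R1_kalg sub SR E1_bimod R1_qb lamK lam0 R1_sum_xy E1_cent fr])
  show ?thesis by (rule separable)
qed

theorem proposition3p2:
  fixes K :: "'k ring" and M :: "('k,'a) module" and N :: "'a set"
    and E :: "'a \<Rightarrow> 'a" and x y :: "nat \<Rightarrow> 'a" and n :: nat and lam :: 'k
  assumes "field K"
    and "k_algebra K M"
    and "k_subalgebra K N M"
    and irreducible: "centralizer M N = scalars K M"
    and "bimodule_map M N E"
    and "quasi_basis M E x y n"
    and "E \<one>\<^bsub>M\<^esub> = \<one>\<^bsub>M\<^esub>"
    and "lam \<in> carrier K" and "lam \<noteq> \<zero>\<^bsub>K\<^esub>"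
    and "(\<Oplus>\<^bsub>M\<^esub>i\<in>{..<n}. x i \<otimes>\<^bsub>M\<^esub> y i) = (inv\<^bsub>K\<^esub> lam) \<odot>\<^bsub>M\<^esub> \<one>\<^bsub>M\<^esub>"
  defines "M1 \<equiv> bc M N E x y n"
    and "iM \<equiv> bc_incl M N x y n"
    and "EM \<equiv> bc_E M lam"
    and "x1 \<equiv> bc_x K M N x lam"
    and "y1 \<equiv> bc_y M N y"
  defines "M2 \<equiv> bc M1 (iM ` carrier M) (\<lambda>X. iM (EM X)) x1 y1 n"
    and "iM1 \<equiv> bc_incl M1 (iM ` carrier M) x1 y1 n"
  defines "A \<equiv> centralizer M1 (iM ` N)"
    and "B \<equiv> centralizer M2 (iM1 ` iM ` carrier M)"
  assumes depth2_1: "free_right_with_basis_in M1 (iM ` carrier M) A"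
    and depth2_2: "free_right_with_basis_in M2 (iM1 ` carrier M1) B"
  shows "separable_algebra K (M1\<lparr>carrier := A\<rparr>) \<and> separable_algebra K (M2\<lparr>carrier := B\<rparr>)"
proof -
  have b0: "bcs K M N E x y n lam"
    by (rule bcs.intro) (use assms in auto)
  have b1: "bcs K M1 (iM ` carrier M) (\<lambda>X. iM (EM X)) x1 y1 n lam"
    unfolding M1_def iM_def EM_def x1_def y1_def by (rule bcs.bcs_R1[OF b0])
  have sA: "separable_algebra K (M1\<lparr>carrier := A\<rparr>)"
    using bcs.sep_level[OF b0] depth2_1 unfolding A_def M1_def iM_def by simp
  have sB: "separable_algebra K (M2\<lparr>carrier := B\<rparr>)"
    using bcs.sep_level[OF b1] depth2_2 unfolding B_def M2_def iM1_def by simp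
  show ?thesis using sA sB by simp
qed


end
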